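(* Consider the multi-sender unicast index-coding instance with $N=5$ messages, $K=3$ senders with $\mathcal S_1=\{1,2,3\}$, $\mathcal S_2=\{2,3,4\}$, $\mathcal S_3=\{1,2,4,5\}$, each with link capacity $C_k=1$, and receiver side information $\mathcal A_1=\{4,5\}$, $\mathcal A_2=\{1,3,5\}$, $\mathcal A_3=\{1,2\}$, $\mathcal A_4=\{2,3,5\}$, $\mathcal A_5=\{3\}$. Its capacity region is $$\mathcal C=\left\{(R_1,\dots,R_5)\in\mathbb R_+^5:\begin{array}{l}R_3\le2,\ R_5\le1,\ R_1+R_3\le3,\ R_1+R_5\le2,\ R_4+R_5\le2,\\ R_1+R_2+R_5\le3,\ R_1+R_4+R_5\le3,\ R_2+R_4+R_5\le3,\ R_3+R_4+R_5\le3\end{array}\right\}.$$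
   Context: Model. $N$ independent messages $M_1,\dots,M_N$, $M_j$ uniform on $[1:2^{nR_j}]$ ($n$ the block length). Sender $k$ knows the messages $M_i$, $i\in\mathcal S_k$, and sends an index $L_k=f_k((M_i)_{i\in\mathcal S_k})\in[1:2^{nC_k})=\{1,\dots,2^{\lfloor nC_k\rfloor}\}$ over a noiseless broadcast link reaching all receivers. Receiver $j$ knows $M_i$, $i\in\mathcal A_j$, and must output an estimate $\hat M_j=g_j(L_1,\dots,L_K,(M_i)_{i\in\mathcal A_j})$ of $M_j$. A rate tuple is achievable if there exist such codes with $\Pr[(\hat M_1,\dots,\hat M_N)\ne(M_1,\dots,M_N)]\to0$ as $n\to\infty$; the capacity region $\mathcal C$ is the closure of the set of achievable rate tuples. *)

theory Defs
  imports "HOL-Analysis.Analysis"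
begin

text \<open>Messages are indexed by 1..N, senders by 1..K.  A rate tuple is a function
  nat => real; only the coordinates 1..N are relevant.
  The index set [1:2^{nR}) is {1, ..., 2^{floor(n R)}}.\<close>

definition idx_set :: "nat \<Rightarrow> real \<Rightarrow> nat set" where
  "idx_set n r = {1..2 ^ nat \<lfloor>real n * r\<rfloor>}"

definition msg_tuples :: "nat \<Rightarrow> nat \<Rightarrow> (nat \<Rightarrow> real) \<Rightarrow> (nat \<Rightarrow> nat) set" where
  "msg_tuples N n R = PiE {1..N} (\<lambda>j. idx_set n (R j))"

text \<open>Encoder of sender k: f k applied to the messages restricted to S k,
  so it depends only on (M_i)_{i in S k}.  Decoder of receiver j: g j applied
  to the vector of broadcast indices (L_1,...,L_K) and to the messages
  restricted to A j.\<close>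
definition broadcast ::
  "nat \<Rightarrow> (nat \<Rightarrow> nat set) \<Rightarrow> (nat \<Rightarrow> (nat \<Rightarrow> nat) \<Rightarrow> nat) \<Rightarrow> (nat \<Rightarrow> nat) \<Rightarrow> (nat \<Rightarrow> nat)" where
  "broadcast K S f m = restrict (\<lambda>k. f k (restrict m (S k))) {1..K}"

definition valid_code ::
  "nat \<Rightarrow> nat \<Rightarrow> (nat \<Rightarrow> nat set) \<Rightarrow> (nat \<Rightarrow> real) \<Rightarrow> (nat \<Rightarrow> real) \<Rightarrow> nat
   \<Rightarrow> (nat \<Rightarrow> (nat \<Rightarrow> nat) \<Rightarrow> nat) \<Rightarrow> bool" where
  "valid_code N K S C R n f \<longleftrightarrow>
     (\<forall>k\<in>{1..K}. \<forall>m\<in>msg_tuples N n R. f k (restrict m (S k)) \<in> idx_set n (C k))"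

definition error_prob ::
  "nat \<Rightarrow> nat \<Rightarrow> (nat \<Rightarrow> nat set) \<Rightarrow> (nat \<Rightarrow> nat set) \<Rightarrow> (nat \<Rightarrow> real) \<Rightarrow> nat
   \<Rightarrow> (nat \<Rightarrow> (nat \<Rightarrow> nat) \<Rightarrow> nat)
   \<Rightarrow> (nat \<Rightarrow> (nat \<Rightarrow> nat) \<Rightarrow> (nat \<Rightarrow> nat) \<Rightarrow> nat) \<Rightarrow> real" where
  "error_prob N K S A R n f g =
     real (card {m \<in> msg_tuples N n R.
                  \<exists>j\<in>{1..N}. g j (broadcast K S f m) (restrict m (A j)) \<noteq> m j})
     / real (card (msg_tuples N n R))"

definition achievable ::
  "nat \<Rightarrow> nat \<Rightarrow> (nat \<Rightarrow> nat set) \<Rightarrow> (nat \<Rightarrow> nat set) \<Rightarrow> (nat \<Rightarrow> real) \<Rightarrow> (nat \<Rightarrow> real) \<Rightarrow> bool" where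
  "achievable N K S A C R \<longleftrightarrow>
     (\<forall>j\<in>{1..N}. R j \<ge> 0) \<and>
     (\<exists>(f :: nat \<Rightarrow> nat \<Rightarrow> (nat \<Rightarrow> nat) \<Rightarrow> nat)
        (g :: nat \<Rightarrow> nat \<Rightarrow> (nat \<Rightarrow> nat) \<Rightarrow> (nat \<Rightarrow> nat) \<Rightarrow> nat).
        (\<forall>n. valid_code N K S C R n (f n)) \<and>
        (\<lambda>n. error_prob N K S A R n (f n) (g n)) \<longlonglongrightarrow> 0)"

text \<open>Capacity region: closure (product topology on nat => real) of the achievable tuples.\<close>
definition capacity_region ::
  "nat \<Rightarrow> nat \<Rightarrow> (nat \<Rightarrow> nat set) \<Rightarrow> (nat \<Rightarrow> nat set) \<Rightarrow> (nat \<Rightarrow> real) \<Rightarrow> (nat \<Rightarrow> real) set" where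
  "capacity_region N K S A C = closure {R. achievable N K S A C R}"

end

theory Submission
  imports Defs
begin

definition BV :: "nat \<Rightarrow> (nat \<Rightarrow> bool) set" where
  "BV r = {x. \<forall>i\<ge>r. \<not> x i}"

definition enc :: "nat \<Rightarrow> nat \<Rightarrow> bool" where
  "enc x = (\<lambda>i. bit (x - 1) i)"

lemma BV_mono: "r \<le> r' \<Longrightarrow> BV r \<subseteq> BV r'"
  unfolding BV_def by auto

lemma card_BV: "card (BV r) = 2 ^ r" and finite_BV: "finite (BV r)"
proof -
  have b: "bij_betw (\<lambda>x. {i. x i}) (BV r) (Pow {..<r})"
  proof (rule bij_betwI[where g="\<lambda>A i. i \<in> A"])
    show "(\<lambda>x. {i. x i}) \<in> BV r \<rightarrow> Pow {..<r}" unfolding BV_def by (auto simp: not_le[symmetric])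
    show "(\<lambda>A i. i \<in> A) \<in> Pow {..<r} \<rightarrow> BV r" unfolding BV_def by auto
  qed auto
  from bij_betw_same_card[OF b] show "card (BV r) = 2 ^ r" by (simp add: card_Pow)
  from bij_betw_finite[OF b] show "finite (BV r)" by simp
qed

lemma enc_inj: "inj_on enc {1..m}"
proof (rule inj_onI)
  fix x y assume x: "x \<in> {1..m}" and y: "y \<in> {1..m}" and e: "enc x = enc y"
  have "x - 1 = y - 1" using e unfolding enc_def by (metis bit_eq_iff)
  thus "x = y" using x y by auto
qed

lemma enc_BV: "x \<in> {1..2^r} \<Longrightarrow> enc x \<in> BV r"
proof -
  assume x: "x \<in> {1..2^r}"
  hence "x - 1 < 2 ^ r" by auto
  hence t: "take_bit r (x - 1) = x - 1" by (simp add: take_bit_nat_eq_self_iff)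
  show ?thesis unfolding BV_def enc_def
  proof (intro CollectI allI impI)
    fix i assume "r \<le> i"
    thus "\<not> bit (x - 1) i" by (metis t bit_take_bit_iff not_le)
  qed
qed

lemma enc_image: "enc ` {1..2^r} = BV r"
proof (rule card_subset_eq)
  show "finite (BV r)" by (rule finite_BV)
  show "enc ` {1..2^r} \<subseteq> BV r" using enc_BV by auto
  show "card (enc ` {1..2^r}) = card (BV r)"
    using card_image[OF enc_inj, of "2^r"] by (simp add: card_BV)
qed

lemma enc_bij: "bij_betw enc {1..2^r} (BV r)"
  using enc_inj enc_image unfolding bij_betw_def by auto

definition zcode :: "(nat \<Rightarrow> nat set) \<Rightarrow> (nat \<Rightarrow> nat set) \<Rightarrow> (nat \<Rightarrow> nat) \<Rightarrow> (nat \<Rightarrow> nat) \<Rightarrow> bool" where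
  "zcode S A r u \<longleftrightarrow> (\<exists>(F :: nat \<Rightarrow> (nat \<Rightarrow> nat \<Rightarrow> bool) \<Rightarrow> nat \<Rightarrow> bool)
      (G :: nat \<Rightarrow> (nat \<Rightarrow> nat \<Rightarrow> bool) \<Rightarrow> (nat \<Rightarrow> nat \<Rightarrow> bool) \<Rightarrow> nat \<Rightarrow> bool).
     \<forall>m \<in> PiE {1..5} (\<lambda>j. BV (r j)).
       (\<forall>k\<in>{1..3}. F k (restrict m (S k)) \<in> BV (u k)) \<and>
       (\<forall>j\<in>{1..5}. G j (restrict (\<lambda>k. F k (restrict m (S k))) {1..3}) (restrict m (A j)) = m j))"

definition lo :: "nat \<Rightarrow> (nat \<Rightarrow> bool) \<Rightarrow> nat \<Rightarrow> bool" where "lo r x = (\<lambda>i. i < r \<and> x i)"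
definition hi :: "nat \<Rightarrow> (nat \<Rightarrow> bool) \<Rightarrow> nat \<Rightarrow> bool" where "hi r x = (\<lambda>i. x (i + r))"
definition cat :: "nat \<Rightarrow> (nat \<Rightarrow> bool) \<Rightarrow> (nat \<Rightarrow> bool) \<Rightarrow> nat \<Rightarrow> bool" where
  "cat r x y = (\<lambda>i. if i < r then x i else y (i - r))"

lemma lo_BV: "lo r x \<in> BV r" unfolding lo_def BV_def by auto
lemma hi_BV: "x \<in> BV (r + r') \<Longrightarrow> hi r x \<in> BV r'" unfolding hi_def BV_def by auto
lemma cat_lo_hi: "cat r (lo r x) (hi r x) = x" unfolding cat_def lo_def hi_def by auto
lemma cat_BV: "x \<in> BV r \<Longrightarrow> y \<in> BV r' \<Longrightarrow> cat r x y \<in> BV (r + r')"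
  unfolding cat_def BV_def by auto
lemma lo_cat: "x \<in> BV r \<Longrightarrow> lo r (cat r x y) = x" unfolding cat_def BV_def lo_def by (auto simp: fun_eq_iff not_less)
lemma hi_cat: "hi r (cat r x y) = y" unfolding cat_def hi_def by auto

lemma zcode_cat:
  assumes SS: "\<forall>k\<in>{1..3}. S k \<subseteq> {1..5}" and AA: "\<forall>j\<in>{1..5}. A j \<subseteq> {1..5}"
    and c1: "zcode S A r u" and c2: "zcode S A r' u'"
  shows "zcode S A (\<lambda>j. r j + r' j) (\<lambda>k. u k + u' k)"
proof -
  obtain F G where FG: "\<forall>m \<in> PiE {1..5} (\<lambda>j. BV (r j)).
       (\<forall>k\<in>{1..3}. F k (restrict m (S k)) \<in> BV (u k)) \<and>
       (\<forall>j\<in>{1..5}. G j (restrict (\<lambda>k. F k (restrict m (S k))) {1..3}) (restrict m (A j)) = m j)"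
    using c1 unfolding zcode_def by blast
  obtain F' G' where FG': "\<forall>m \<in> PiE {1..5} (\<lambda>j. BV (r' j)).
       (\<forall>k\<in>{1..3}. F' k (restrict m (S k)) \<in> BV (u' k)) \<and>
       (\<forall>j\<in>{1..5}. G' j (restrict (\<lambda>k. F' k (restrict m (S k))) {1..3}) (restrict m (A j)) = m j)"
    using c2 unfolding zcode_def by blast
  define F2 where "F2 = (\<lambda>k M. cat (u k) (F k (restrict (\<lambda>j. lo (r j) (M j)) (S k)))
                                   (F' k (restrict (\<lambda>j. hi (r j) (M j)) (S k))))"
  define G2 where "G2 = (\<lambda>j L side. cat (r j)
       (G j (restrict (\<lambda>k. lo (u k) (L k)) {1..3}) (restrict (\<lambda>i. lo (r i) (side i)) (A j)))
       (G' j (restrict (\<lambda>k. hi (u k) (L k)) {1..3}) (restrict (\<lambda>i. hi (r i) (side i)) (A j))))"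
  show ?thesis unfolding zcode_def
  proof (rule exI[of _ F2], rule exI[of _ G2], rule ballI, rule conjI)
    fix m assume m: "m \<in> PiE {1..5} (\<lambda>j. BV (r j + r' j))"
    define mL where "mL = restrict (\<lambda>j. lo (r j) (m j)) {1..5}"
    define mH where "mH = restrict (\<lambda>j. hi (r j) (m j)) {1..5}"
    have mL: "mL \<in> PiE {1..5} (\<lambda>j. BV (r j))" unfolding mL_def using lo_BV by auto
    have mH: "mH \<in> PiE {1..5} (\<lambda>j. BV (r' j))" unfolding mH_def using hi_BV m by auto
    have eL: "restrict (\<lambda>j. lo (r j) (restrict m (S k) j)) (S k) = restrict mL (S k)" if "k \<in> {1..3}" for k
      proof -
      have "S k \<subseteq> {1..5}" using SS that by auto
      thus ?thesis unfolding mL_def by (intro ext) (auto simp: restrict_def)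
    qed
    have eH: "restrict (\<lambda>j. hi (r j) (restrict m (S k) j)) (S k) = restrict mH (S k)" if "k \<in> {1..3}" for k
      proof -
      have "S k \<subseteq> {1..5}" using SS that by auto
      thus ?thesis unfolding mH_def by (intro ext) (auto simp: restrict_def)
    qed
    have F2e: "F2 k (restrict m (S k)) = cat (u k) (F k (restrict mL (S k))) (F' k (restrict mH (S k)))"
      if "k \<in> {1..3}" for k using eL[OF that] eH[OF that] unfolding F2_def by simp
    show "\<forall>k\<in>{1..3}. F2 k (restrict m (S k)) \<in> BV (u k + u' k)"
      using F2e FG mL FG' mH cat_BV by auto
    show "\<forall>j\<in>{1..5}. G2 j (restrict (\<lambda>k. F2 k (restrict m (S k))) {1..3}) (restrict m (A j)) = m j"
    proof
      fix j :: nat assume j: "j \<in> {1..5}"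
      have l1: "restrict (\<lambda>k. lo (u k) (restrict (\<lambda>k. F2 k (restrict m (S k))) {1..3} k)) {1..3}
          = restrict (\<lambda>k. F k (restrict mL (S k))) {1..3}"
        using F2e FG mL lo_cat by (auto simp: restrict_def)
      have l2: "restrict (\<lambda>k. hi (u k) (restrict (\<lambda>k. F2 k (restrict m (S k))) {1..3} k)) {1..3}
          = restrict (\<lambda>k. F' k (restrict mH (S k))) {1..3}"
        using F2e hi_cat by (auto simp: restrict_def)
      have s1: "restrict (\<lambda>i. lo (r i) (restrict m (A j) i)) (A j) = restrict mL (A j)"
        proof -
        have "A j \<subseteq> {1..5}" using AA j by auto
        thus ?thesis unfolding mL_def by (intro ext) (auto simp: restrict_def)
      qed
      have s2: "restrict (\<lambda>i. hi (r i) (restrict m (A j) i)) (A j) = restrict mH (A j)"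
        proof -
        have "A j \<subseteq> {1..5}" using AA j by auto
        thus ?thesis unfolding mH_def by (intro ext) (auto simp: restrict_def)
      qed
      have "G2 j (restrict (\<lambda>k. F2 k (restrict m (S k))) {1..3}) (restrict m (A j))
          = cat (r j) (mL j) (mH j)"
        unfolding G2_def l1 l2 s1 s2 using FG mL FG' mH j by simp
      also have "\<dots> = m j" unfolding mL_def mH_def using j cat_lo_hi by simp
      finally show "G2 j (restrict (\<lambda>k. F2 k (restrict m (S k))) {1..3}) (restrict m (A j)) = m j" .
    qed
  qed
qed

lemma zcode_zero: "zcode S A (\<lambda>_. 0) (\<lambda>_. 0)"
  unfolding zcode_def
  by (rule exI[of _ "\<lambda>k M i. False"], rule exI[of _ "\<lambda>j L s i. False"])
     (auto simp: BV_def fun_eq_iff PiE_iff)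

lemma zcode_mult:
  assumes SS: "\<forall>k\<in>{1..3}. S k \<subseteq> {1..5}" and AA: "\<forall>j\<in>{1..5}. A j \<subseteq> {1..5}"
    and c: "zcode S A r u"
  shows "zcode S A (\<lambda>j. q * r j) (\<lambda>k. q * u k)"
proof (induction q)
  case 0 thus ?case using zcode_zero by simp
next
  case (Suc q)
  from zcode_cat[OF SS AA c Suc] show ?case by (simp add: add.commute)
qed

lemma idx_set_nat: "idx_set n r = {1..2 ^ nat \<lfloor>real n * r\<rfloor>}" by (simp add: idx_set_def)

lemma transport:
  assumes SS: "\<forall>k\<in>{1..3}. S k \<subseteq> {1..5}" and AA: "\<forall>j\<in>{1..5}. A j \<subseteq> {1..5}"
    and Cn: "\<forall>k\<in>{1..3}. C k = 1"
    and code: "zcode S A r u" and un: "\<forall>k\<in>{1..3}. u k \<le> n"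
    and rn: "\<forall>j\<in>{1..5}. nat \<lfloor>real n * R j\<rfloor> \<le> r j"
  shows "\<exists>f g. valid_code 5 3 S C R n f \<and> error_prob 5 3 S A R n f g = 0"
proof -
  obtain F G where FG: "\<forall>m \<in> PiE {1..5} (\<lambda>j. BV (r j)).
       (\<forall>k\<in>{1..3}. F k (restrict m (S k)) \<in> BV (u k)) \<and>
       (\<forall>j\<in>{1..5}. G j (restrict (\<lambda>k. F k (restrict m (S k))) {1..3}) (restrict m (A j)) = m j)"
    using code unfolding zcode_def by blast
  define b where "b = (\<lambda>j. nat \<lfloor>real n * R j\<rfloor>)"
  define f where "f = (\<lambda>k M. inv_into {1..2^n} enc (F k (restrict (\<lambda>i. enc (M i)) (S k))))"
  define g where "g = (\<lambda>j L side. inv_into {1..2^(b j)} enc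
       (G j (restrict (\<lambda>k. enc (L k)) {1..3}) (restrict (\<lambda>i. enc (side i)) (A j))))"
  have key: "f k (restrict m (S k)) \<in> {1..2^n} \<and> enc (f k (restrict m (S k))) = F k (restrict (restrict (\<lambda>i. enc (m i)) {1..5}) (S k))
         \<and> F k (restrict (restrict (\<lambda>i. enc (m i)) {1..5}) (S k)) \<in> BV (u k)"
    if m: "m \<in> msg_tuples 5 n R" and k: "k \<in> {1..3}" for m k
  proof -
    define em where "em = restrict (\<lambda>i. enc (m i)) {1..5}"
    have em: "em \<in> PiE {1..5} (\<lambda>j. BV (r j))"
    proof -
      have "enc (m j) \<in> BV (r j)" if j: "j \<in> {1..5}" for j
      proof -
        have "m j \<in> {1..2 ^ b j}" using m j unfolding msg_tuples_def b_def idx_set_def by auto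
        hence "enc (m j) \<in> BV (b j)" by (rule enc_BV)
        moreover have "b j \<le> r j" using rn j unfolding b_def by auto
        ultimately show ?thesis using BV_mono by auto
      qed
      thus ?thesis unfolding em_def by auto
    qed
    have Sk: "S k \<subseteq> {1..5}" using SS k by auto
    have e1: "restrict (\<lambda>i. enc (restrict m (S k) i)) (S k) = restrict em (S k)"
      using Sk unfolding em_def by (intro ext) (auto simp: restrict_def)
    have Fin: "F k (restrict em (S k)) \<in> BV (u k)" using FG em k by auto
    hence Fin2: "F k (restrict em (S k)) \<in> enc ` {1..2^n}"
      using BV_mono[of "u k" n] un k enc_image[of n] by auto
    show ?thesis unfolding f_def e1 em_def[symmetric]
      using inv_into_into[OF Fin2] f_inv_into_f[OF Fin2] Fin by simp
  qed
  have dec: "g j (broadcast 3 S f m) (restrict m (A j)) = m j"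
    if m: "m \<in> msg_tuples 5 n R" and j: "j \<in> {1..5}" for m j
  proof -
    define em where "em = restrict (\<lambda>i. enc (m i)) {1..5}"
    have em: "em \<in> PiE {1..5} (\<lambda>j. BV (r j))"
    proof -
      have "enc (m j) \<in> BV (r j)" if j: "j \<in> {1..5}" for j
      proof -
        have "m j \<in> {1..2 ^ b j}" using m j unfolding msg_tuples_def b_def idx_set_def by auto
        hence "enc (m j) \<in> BV (b j)" by (rule enc_BV)
        moreover have "b j \<le> r j" using rn j unfolding b_def by auto
        ultimately show ?thesis using BV_mono by auto
      qed
      thus ?thesis unfolding em_def by auto
    qed
    have L: "restrict (\<lambda>k. enc (broadcast 3 S f m k)) {1..3} = restrict (\<lambda>k. F k (restrict em (S k))) {1..3}"
      using key[OF m] unfolding broadcast_def em_def by (intro ext) (auto simp: restrict_def)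
    have Aj: "A j \<subseteq> {1..5}" using AA j by auto
    have s: "restrict (\<lambda>i. enc (restrict m (A j) i)) (A j) = restrict em (A j)"
      using Aj unfolding em_def by (intro ext) (auto simp: restrict_def)
    have "G j (restrict (\<lambda>k. F k (restrict em (S k))) {1..3}) (restrict em (A j)) = em j"
      using FG em j by auto
    hence "G j (restrict (\<lambda>k. enc (broadcast 3 S f m k)) {1..3}) (restrict (\<lambda>i. enc (restrict m (A j) i)) (A j)) = enc (m j)"
      unfolding L s using j em_def by simp
    moreover have "m j \<in> {1..2 ^ b j}" using m j unfolding msg_tuples_def b_def idx_set_def by auto
    ultimately show ?thesis unfolding g_def using inv_into_f_f[OF enc_inj] by simp
  qed
  show ?thesis
  proof (intro exI conjI)
    show "valid_code 5 3 S C R n f" unfolding valid_code_def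
    proof (intro ballI)
      fix k m assume k: "k \<in> {1..3::nat}" and m: "m \<in> msg_tuples 5 n R"
      have "C k = 1" using Cn k by auto
      thus "f k (restrict m (S k)) \<in> idx_set n (C k)" using key[OF m k] by (simp add: idx_set_def)
    qed
    have E: "{m \<in> msg_tuples 5 n R. \<exists>j\<in>{1..5}. g j (broadcast 3 S f m) (restrict m (A j)) \<noteq> m j} = {}"
      using dec by auto
    show "error_prob 5 3 S A R n f g = 0" unfolding error_prob_def E by simp
  qed
qed

lemma eventually_bits:
  fixes T r :: nat and x :: real
  assumes T: "T > 0" and x0: "x \<ge> 0" and xr: "x = 0 \<or> x * T < r"
  shows "eventually (\<lambda>n. nat \<lfloor>real n * x\<rfloor> \<le> (n div T) * r) sequentially"
proof (cases "x = 0")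
  case True thus ?thesis by simp
next
  case False
  hence xr: "x * T < r" using xr by auto
  define d where "d = real r - x * T"
  have d: "d > 0" using xr unfolding d_def by simp
  show ?thesis unfolding eventually_sequentially
  proof (intro exI allI impI)
    fix n assume n: "nat \<lceil>real r * T / d\<rceil> \<le> n"
    have n1: "real r * T / d \<le> real n" using n by linarith
    hence n2: "real r * T \<le> real n * d" using d by (simp add: divide_le_eq)
    have "n = T * (n div T) + n mod T" by simp
    moreover have "n mod T < T" using T by simp
    ultimately have "real n \<le> real T * real (n div T) + real T"
      by (metis add_le_mono le_refl less_imp_le_nat of_nat_add of_nat_le_iff of_nat_mult)
    hence q: "real (n div T) * T \<ge> real n - T" by (simp add: algebra_simps)
    have "real n * x * T = real n * r - real n * d" unfolding d_def by (simp add: algebra_simps)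
    also have "\<dots> \<le> real n * r - real r * T" using n2 by simp
    also have "\<dots> = (real n - T) * r" by (simp add: algebra_simps)
    also have "\<dots> \<le> real (n div T) * T * r" using q by (intro mult_right_mono) auto
    finally have "real n * x \<le> real (n div T) * r" using T by (simp add: mult.commute mult.left_commute)
    moreover have "real (nat \<lfloor>real n * x\<rfloor>) \<le> real n * x" using x0 by simp
    ultimately have "real (nat \<lfloor>real n * x\<rfloor>) \<le> real ((n div T) * r)" by simp
    thus "nat \<lfloor>real n * x\<rfloor> \<le> (n div T) * r" by (simp only: of_nat_le_iff)
  qed
qed

lemma achievable_from_code:
  fixes R :: "nat \<Rightarrow> real" and r u :: "nat \<Rightarrow> nat" and T :: nat
  assumes SS: "\<forall>k\<in>{1..3}. S k \<subseteq> {1..5}" and AA: "\<forall>j\<in>{1..5}. A j \<subseteq> {1..5}"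
    and Cn: "\<forall>k\<in>{1..3}. C k = 1"
    and code: "zcode S A r u" and T: "T > 0" and uT: "\<forall>k\<in>{1..3}. u k \<le> T"
    and Rnn: "\<forall>j\<in>{1..5}. R j \<ge> 0" and Rr: "\<forall>j\<in>{1..5}. R j = 0 \<or> R j * T < r j"
  shows "achievable 5 3 S A C R"
proof -
  have ex: "\<exists>fg. valid_code 5 3 S C R n (fst fg) \<and>
      ((\<forall>j\<in>{1..5}. nat \<lfloor>real n * R j\<rfloor> \<le> (n div T) * r j) \<longrightarrow> error_prob 5 3 S A R n (fst fg) (snd fg) = 0)" for n
  proof (cases "\<forall>j\<in>{1..5}. nat \<lfloor>real n * R j\<rfloor> \<le> (n div T) * r j")
    case True
    have c: "zcode S A (\<lambda>j. (n div T) * r j) (\<lambda>k. (n div T) * u k)" by (rule zcode_mult[OF SS AA code])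
    have "(n div T) * u k \<le> n" if "k \<in> {1..3}" for k
    proof -
      have "(n div T) * u k \<le> (n div T) * T" using uT that by simp
      also have "\<dots> \<le> n" by simp
      finally show ?thesis .
    qed
    then obtain f g where "valid_code 5 3 S C R n f \<and> error_prob 5 3 S A R n f g = 0"
      using transport[OF SS AA Cn c, of n R] True by auto
    thus ?thesis by (intro exI[of _ "(f, g)"]) simp
  next
    case False
    have "valid_code 5 3 S C R n (\<lambda>k m. 1)" unfolding valid_code_def idx_set_def by auto
    thus ?thesis using False by (intro exI[of _ "(\<lambda>k m. 1, undefined)"]) (simp only: fst_conv snd_conv, blast)
  qed
  hence "\<forall>n. \<exists>fg. valid_code 5 3 S C R n (fst fg) \<and>
      ((\<forall>j\<in>{1..5}. nat \<lfloor>real n * R j\<rfloor> \<le> (n div T) * r j) \<longrightarrow> error_prob 5 3 S A R n (fst fg) (snd fg) = 0)" by blast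
  from choice[OF this] obtain FG where FG: "\<forall>n. valid_code 5 3 S C R n (fst (FG n)) \<and>
      ((\<forall>j\<in>{1..5}. nat \<lfloor>real n * R j\<rfloor> \<le> (n div T) * r j) \<longrightarrow> error_prob 5 3 S A R n (fst (FG n)) (snd (FG n)) = 0)"
    by blast
  have ev: "eventually (\<lambda>n. \<forall>j\<in>{1..5}. nat \<lfloor>real n * R j\<rfloor> \<le> (n div T) * r j) sequentially"
    using eventually_bits[OF T] Rnn Rr by (intro eventually_ball_finite) auto
  have "eventually (\<lambda>n. error_prob 5 3 S A R n (fst (FG n)) (snd (FG n)) = 0) sequentially"
    using ev proof (rule eventually_mono)
    fix n assume "\<forall>j\<in>{1..5}. nat \<lfloor>real n * R j\<rfloor> \<le> (n div T) * r j"
    thus "error_prob 5 3 S A R n (fst (FG n)) (snd (FG n)) = 0" using FG by blast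
  qed
  hence "(\<lambda>n. error_prob 5 3 S A R n (fst (FG n)) (snd (FG n))) \<longlonglongrightarrow> 0"
    by (rule tendsto_eventually)
  moreover have "\<forall>n. valid_code 5 3 S C R n (fst (FG n))" using FG by blast
  ultimately show ?thesis unfolding achievable_def using Rnn by (intro conjI exI[of _ "\<lambda>n. fst (FG n)"] exI[of _ "\<lambda>n. snd (FG n)"]) simp_all
qed

definition vec5 :: "nat \<Rightarrow> nat \<Rightarrow> nat \<Rightarrow> nat \<Rightarrow> nat \<Rightarrow> nat \<Rightarrow> nat" where
  "vec5 a b c d e j = (if j = 1 then a else if j = 2 then b else if j = 3 then c else if j = 4 then d else if j = 5 then e else 0)"

lemma codeA:
  assumes "S 1 = {1,2,3}" "S 2 = {2,3,4}" "S 3 = {1,2,4,5}" "A 1 = {4,5}" "A 2 = {1,3,5}" "A 3 = {1,2}" "A 4 = {2,3,5}" "A 5 = {3}"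
  shows "zcode S A (vec5 0 2 2 0 1) (\<lambda>_. 1)"
proof -
  define F :: "nat \<Rightarrow> (nat \<Rightarrow> nat \<Rightarrow> bool) \<Rightarrow> nat \<Rightarrow> bool" where "F = (\<lambda>k M i. (if k = 1 then (if i = 0 then (M 2 0 \<noteq> M 3 0) else False) else (if k = 2 then (if i = 0 then (M 2 1 \<noteq> M 3 1) else False) else (if k = 3 then (if i = 0 then M 5 0 else False) else False))))"
  define G :: "nat \<Rightarrow> (nat \<Rightarrow> nat \<Rightarrow> bool) \<Rightarrow> (nat \<Rightarrow> nat \<Rightarrow> bool) \<Rightarrow> nat \<Rightarrow> bool" where "G = (\<lambda>j L s i. (if j = 1 then False else (if j = 2 then (if i = 0 then (L 1 0 \<noteq> s 3 0) else (if i = 1 then (L 2 0 \<noteq> s 3 1) else False)) else (if j = 3 then (if i = 0 then (L 1 0 \<noteq> s 2 0) else (if i = 1 then (L 2 0 \<noteq> s 2 1) else False)) else (if j = 4 then False else (if j = 5 then (if i = 0 then L 3 0 else False) else False))))))"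
  have "\<forall>m\<in>PiE {1..5} (\<lambda>j. BV (vec5 0 2 2 0 1 j)). (\<forall>k\<in>{1..3}. F k (restrict m (S k)) \<in> BV ((\<lambda>_. 1) k)) \<and>
     (\<forall>j\<in>{1..5}. G j (restrict (\<lambda>k. F k (restrict m (S k))) {1..3}) (restrict m (A j)) = m j)"
  proof (rule ballI, rule conjI)
  fix m assume m: "m \<in> PiE {1..5} (\<lambda>j. BV (vec5 0 2 2 0 1 j))"
  have z: "\<not> m j i" if "j \<in> {1..5}" "vec5 0 2 2 0 1 j \<le> i" for j i
    using m that unfolding BV_def PiE_iff by auto
  show "\<forall>k\<in>{1..3}. F k (restrict m (S k)) \<in> BV ((\<lambda>_. 1) k)"
    by (auto simp: BV_def F_def)
  have sA: "S (Suc 0) = {1,2,3}" "A (Suc 0) = {4,5}" using assms by simp_all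
  define L where "L = restrict (\<lambda>k. F k (restrict m (S k))) {1..3}"
  have Lk: "L 1 0 = (m 2 0 \<noteq> m 3 0)" "L (Suc 0) 0 = (m 2 0 \<noteq> m 3 0)" "L 2 0 = (m 2 1 \<noteq> m 3 1)" "L 3 0 = m 5 0"
    by (simp_all add: L_def F_def assms sA)
  have j1: "G 1 L (restrict m (A 1)) = m 1"
  proof (rule ext)
    fix i :: nat
    show "G 1 L (restrict m (A 1)) i = m 1 i"
    proof (cases "i < 0")
      case True thus ?thesis by simp
    next
      case False thus ?thesis using z[of 1 i] by (simp add: G_def vec5_def)
    qed
  qed
  have j2: "G 2 L (restrict m (A 2)) = m 2"
  proof (rule ext)
    fix i :: nat
    show "G 2 L (restrict m (A 2)) i = m 2 i"
    proof (cases "i < 2")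
      case True
        hence "i = 0 \<or> i = 1" by auto
        thus ?thesis by (elim disjE; simp add: G_def assms sA Lk; argo)
    next
      case False thus ?thesis using z[of 2 i] by (simp add: G_def vec5_def)
    qed
  qed
  have j3: "G 3 L (restrict m (A 3)) = m 3"
  proof (rule ext)
    fix i :: nat
    show "G 3 L (restrict m (A 3)) i = m 3 i"
    proof (cases "i < 2")
      case True
        hence "i = 0 \<or> i = 1" by auto
        thus ?thesis by (elim disjE; simp add: G_def assms sA Lk; argo)
    next
      case False thus ?thesis using z[of 3 i] by (simp add: G_def vec5_def)
    qed
  qed
  have j4: "G 4 L (restrict m (A 4)) = m 4"
  proof (rule ext)
    fix i :: nat
    show "G 4 L (restrict m (A 4)) i = m 4 i"
    proof (cases "i < 0")
      case True thus ?thesis by simp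
    next
      case False thus ?thesis using z[of 4 i] by (simp add: G_def vec5_def)
    qed
  qed
  have j5: "G 5 L (restrict m (A 5)) = m 5"
  proof (rule ext)
    fix i :: nat
    show "G 5 L (restrict m (A 5)) i = m 5 i"
    proof (cases "i < 1")
      case True
        hence "i = 0" by auto
        thus ?thesis by (simp add: G_def assms sA Lk; argo)
    next
      case False thus ?thesis using z[of 5 i] by (simp add: G_def vec5_def)
    qed
  qed
  have "G j L (restrict m (A j)) = m j" if "j \<in> {1..5}" for j
  proof -
    from that have "j = 1 \<or> j = 2 \<or> j = 3 \<or> j = 4 \<or> j = 5" by auto
    thus ?thesis using j1 j2 j3 j4 j5 by auto
  qed
  thus "\<forall>j\<in>{1..5}. G j (restrict (\<lambda>k. F k (restrict m (S k))) {1..3}) (restrict m (A j)) = m j"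
    unfolding L_def by blast
  qed
  thus ?thesis unfolding zcode_def by blast
qed

lemma codeB:
  assumes "S 1 = {1,2,3}" "S 2 = {2,3,4}" "S 3 = {1,2,4,5}" "A 1 = {4,5}" "A 2 = {1,3,5}" "A 3 = {1,2}" "A 4 = {2,3,5}" "A 5 = {3}"
  shows "zcode S A (vec5 0 3 2 0 0) (\<lambda>_. 1)"
proof -
  define F :: "nat \<Rightarrow> (nat \<Rightarrow> nat \<Rightarrow> bool) \<Rightarrow> nat \<Rightarrow> bool" where "F = (\<lambda>k M i. (if k = 1 then (if i = 0 then (M 2 2 \<noteq> M 3 1) else False) else (if k = 2 then (if i = 0 then (M 2 1 \<noteq> M 3 0) else False) else (if k = 3 then (if i = 0 then M 2 0 else False) else False))))"
  define G :: "nat \<Rightarrow> (nat \<Rightarrow> nat \<Rightarrow> bool) \<Rightarrow> (nat \<Rightarrow> nat \<Rightarrow> bool) \<Rightarrow> nat \<Rightarrow> bool" where "G = (\<lambda>j L s i. (if j = 1 then False else (if j = 2 then (if i = 0 then L 3 0 else (if i = 1 then (L 2 0 \<noteq> s 3 0) else (if i = 2 then (L 1 0 \<noteq> s 3 1) else False))) else (if j = 3 then (if i = 0 then (L 2 0 \<noteq> s 2 1) else (if i = 1 then (L 1 0 \<noteq> s 2 2) else False)) else (if j = 4 then False else (if j = 5 then False else False))))))"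
  have "\<forall>m\<in>PiE {1..5} (\<lambda>j. BV (vec5 0 3 2 0 0 j)). (\<forall>k\<in>{1..3}. F k (restrict m (S k)) \<in> BV ((\<lambda>_. 1) k)) \<and>
     (\<forall>j\<in>{1..5}. G j (restrict (\<lambda>k. F k (restrict m (S k))) {1..3}) (restrict m (A j)) = m j)"
  proof (rule ballI, rule conjI)
  fix m assume m: "m \<in> PiE {1..5} (\<lambda>j. BV (vec5 0 3 2 0 0 j))"
  have z: "\<not> m j i" if "j \<in> {1..5}" "vec5 0 3 2 0 0 j \<le> i" for j i
    using m that unfolding BV_def PiE_iff by auto
  show "\<forall>k\<in>{1..3}. F k (restrict m (S k)) \<in> BV ((\<lambda>_. 1) k)"
    by (auto simp: BV_def F_def)
  have sA: "S (Suc 0) = {1,2,3}" "A (Suc 0) = {4,5}" using assms by simp_all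
  define L where "L = restrict (\<lambda>k. F k (restrict m (S k))) {1..3}"
  have Lk: "L 1 0 = (m 2 2 \<noteq> m 3 1)" "L (Suc 0) 0 = (m 2 2 \<noteq> m 3 1)" "L 2 0 = (m 2 1 \<noteq> m 3 0)" "L 3 0 = m 2 0"
    by (simp_all add: L_def F_def assms sA)
  have j1: "G 1 L (restrict m (A 1)) = m 1"
  proof (rule ext)
    fix i :: nat
    show "G 1 L (restrict m (A 1)) i = m 1 i"
    proof (cases "i < 0")
      case True thus ?thesis by simp
    next
      case False thus ?thesis using z[of 1 i] by (simp add: G_def vec5_def)
    qed
  qed
  have j2: "G 2 L (restrict m (A 2)) = m 2"
  proof (rule ext)
    fix i :: nat
    show "G 2 L (restrict m (A 2)) i = m 2 i"
    proof (cases "i < 3")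
      case True
        hence "i = 0 \<or> i = 1 \<or> i = 2" by auto
        thus ?thesis by (elim disjE; simp add: G_def assms sA Lk; argo)
    next
      case False thus ?thesis using z[of 2 i] by (simp add: G_def vec5_def)
    qed
  qed
  have j3: "G 3 L (restrict m (A 3)) = m 3"
  proof (rule ext)
    fix i :: nat
    show "G 3 L (restrict m (A 3)) i = m 3 i"
    proof (cases "i < 2")
      case True
        hence "i = 0 \<or> i = 1" by auto
        thus ?thesis by (elim disjE; simp add: G_def assms sA Lk; argo)
    next
      case False thus ?thesis using z[of 3 i] by (simp add: G_def vec5_def)
    qed
  qed
  have j4: "G 4 L (restrict m (A 4)) = m 4"
  proof (rule ext)
    fix i :: nat
    show "G 4 L (restrict m (A 4)) i = m 4 i"
    proof (cases "i < 0")
      case True thus ?thesis by simp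
    next
      case False thus ?thesis using z[of 4 i] by (simp add: G_def vec5_def)
    qed
  qed
  have j5: "G 5 L (restrict m (A 5)) = m 5"
  proof (rule ext)
    fix i :: nat
    show "G 5 L (restrict m (A 5)) i = m 5 i"
    proof (cases "i < 0")
      case True thus ?thesis by simp
    next
      case False thus ?thesis using z[of 5 i] by (simp add: G_def vec5_def)
    qed
  qed
  have "G j L (restrict m (A j)) = m j" if "j \<in> {1..5}" for j
  proof -
    from that have "j = 1 \<or> j = 2 \<or> j = 3 \<or> j = 4 \<or> j = 5" by auto
    thus ?thesis using j1 j2 j3 j4 j5 by auto
  qed
  thus "\<forall>j\<in>{1..5}. G j (restrict (\<lambda>k. F k (restrict m (S k))) {1..3}) (restrict m (A j)) = m j"
    unfolding L_def by blast
  qed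
  thus ?thesis unfolding zcode_def by blast
qed

lemma codeC:
  assumes "S 1 = {1,2,3}" "S 2 = {2,3,4}" "S 3 = {1,2,4,5}" "A 1 = {4,5}" "A 2 = {1,3,5}" "A 3 = {1,2}" "A 4 = {2,3,5}" "A 5 = {3}"
  shows "zcode S A (vec5 1 1 1 1 1) (\<lambda>_. 1)"
proof -
  define F :: "nat \<Rightarrow> (nat \<Rightarrow> nat \<Rightarrow> bool) \<Rightarrow> nat \<Rightarrow> bool" where "F = (\<lambda>k M i. (if k = 1 then (if i = 0 then (M 1 0 \<noteq> (M 2 0 \<noteq> M 3 0)) else False) else (if k = 2 then (if i = 0 then (M 2 0 \<noteq> (M 3 0 \<noteq> M 4 0)) else False) else (if k = 3 then (if i = 0 then M 5 0 else False) else False))))"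
  define G :: "nat \<Rightarrow> (nat \<Rightarrow> nat \<Rightarrow> bool) \<Rightarrow> (nat \<Rightarrow> nat \<Rightarrow> bool) \<Rightarrow> nat \<Rightarrow> bool" where "G = (\<lambda>j L s i. (if j = 1 then (if i = 0 then (L 1 0 \<noteq> (L 2 0 \<noteq> s 4 0)) else False) else (if j = 2 then (if i = 0 then (L 1 0 \<noteq> (s 1 0 \<noteq> s 3 0)) else False) else (if j = 3 then (if i = 0 then (L 1 0 \<noteq> (s 1 0 \<noteq> s 2 0)) else False) else (if j = 4 then (if i = 0 then (L 2 0 \<noteq> (s 2 0 \<noteq> s 3 0)) else False) else (if j = 5 then (if i = 0 then L 3 0 else False) else False))))))"
  have "\<forall>m\<in>PiE {1..5} (\<lambda>j. BV (vec5 1 1 1 1 1 j)). (\<forall>k\<in>{1..3}. F k (restrict m (S k)) \<in> BV ((\<lambda>_. 1) k)) \<and>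
     (\<forall>j\<in>{1..5}. G j (restrict (\<lambda>k. F k (restrict m (S k))) {1..3}) (restrict m (A j)) = m j)"
  proof (rule ballI, rule conjI)
  fix m assume m: "m \<in> PiE {1..5} (\<lambda>j. BV (vec5 1 1 1 1 1 j))"
  have z: "\<not> m j i" if "j \<in> {1..5}" "vec5 1 1 1 1 1 j \<le> i" for j i
    using m that unfolding BV_def PiE_iff by auto
  show "\<forall>k\<in>{1..3}. F k (restrict m (S k)) \<in> BV ((\<lambda>_. 1) k)"
    by (auto simp: BV_def F_def)
  have sA: "S (Suc 0) = {1,2,3}" "A (Suc 0) = {4,5}" using assms by simp_all
  define L where "L = restrict (\<lambda>k. F k (restrict m (S k))) {1..3}"
  have Lk: "L 1 0 = (m 1 0 \<noteq> (m 2 0 \<noteq> m 3 0))" "L (Suc 0) 0 = (m 1 0 \<noteq> (m 2 0 \<noteq> m 3 0))" "L 2 0 = (m 2 0 \<noteq> (m 3 0 \<noteq> m 4 0))" "L 3 0 = m 5 0"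
    by (simp_all add: L_def F_def assms sA)
  have j1: "G 1 L (restrict m (A 1)) = m 1"
  proof (rule ext)
    fix i :: nat
    show "G 1 L (restrict m (A 1)) i = m 1 i"
    proof (cases "i < 1")
      case True
        hence "i = 0" by auto
        thus ?thesis by (simp add: G_def assms sA Lk; argo)
    next
      case False thus ?thesis using z[of 1 i] by (simp add: G_def vec5_def)
    qed
  qed
  have j2: "G 2 L (restrict m (A 2)) = m 2"
  proof (rule ext)
    fix i :: nat
    show "G 2 L (restrict m (A 2)) i = m 2 i"
    proof (cases "i < 1")
      case True
        hence "i = 0" by auto
        thus ?thesis by (simp add: G_def assms sA Lk; argo)
    next
      case False thus ?thesis using z[of 2 i] by (simp add: G_def vec5_def)
    qed
  qed
  have j3: "G 3 L (restrict m (A 3)) = m 3"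
  proof (rule ext)
    fix i :: nat
    show "G 3 L (restrict m (A 3)) i = m 3 i"
    proof (cases "i < 1")
      case True
        hence "i = 0" by auto
        thus ?thesis by (simp add: G_def assms sA Lk; argo)
    next
      case False thus ?thesis using z[of 3 i] by (simp add: G_def vec5_def)
    qed
  qed
  have j4: "G 4 L (restrict m (A 4)) = m 4"
  proof (rule ext)
    fix i :: nat
    show "G 4 L (restrict m (A 4)) i = m 4 i"
    proof (cases "i < 1")
      case True
        hence "i = 0" by auto
        thus ?thesis by (simp add: G_def assms sA Lk; argo)
    next
      case False thus ?thesis using z[of 4 i] by (simp add: G_def vec5_def)
    qed
  qed
  have j5: "G 5 L (restrict m (A 5)) = m 5"
  proof (rule ext)
    fix i :: nat
    show "G 5 L (restrict m (A 5)) i = m 5 i"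
    proof (cases "i < 1")
      case True
        hence "i = 0" by auto
        thus ?thesis by (simp add: G_def assms sA Lk; argo)
    next
      case False thus ?thesis using z[of 5 i] by (simp add: G_def vec5_def)
    qed
  qed
  have "G j L (restrict m (A j)) = m j" if "j \<in> {1..5}" for j
  proof -
    from that have "j = 1 \<or> j = 2 \<or> j = 3 \<or> j = 4 \<or> j = 5" by auto
    thus ?thesis using j1 j2 j3 j4 j5 by auto
  qed
  thus "\<forall>j\<in>{1..5}. G j (restrict (\<lambda>k. F k (restrict m (S k))) {1..3}) (restrict m (A j)) = m j"
    unfolding L_def by blast
  qed
  thus ?thesis unfolding zcode_def by blast
qed

lemma codeD:
  assumes "S 1 = {1,2,3}" "S 2 = {2,3,4}" "S 3 = {1,2,4,5}" "A 1 = {4,5}" "A 2 = {1,3,5}" "A 3 = {1,2}" "A 4 = {2,3,5}" "A 5 = {3}"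
  shows "zcode S A (vec5 1 1 1 2 0) (\<lambda>_. 1)"
proof -
  define F :: "nat \<Rightarrow> (nat \<Rightarrow> nat \<Rightarrow> bool) \<Rightarrow> nat \<Rightarrow> bool" where "F = (\<lambda>k M i. (if k = 1 then (if i = 0 then (M 1 0 \<noteq> (M 2 0 \<noteq> M 3 0)) else False) else (if k = 2 then (if i = 0 then M 4 0 else False) else (if k = 3 then (if i = 0 then (M 1 0 \<noteq> M 4 1) else False) else False))))"
  define G :: "nat \<Rightarrow> (nat \<Rightarrow> nat \<Rightarrow> bool) \<Rightarrow> (nat \<Rightarrow> nat \<Rightarrow> bool) \<Rightarrow> nat \<Rightarrow> bool" where "G = (\<lambda>j L s i. (if j = 1 then (if i = 0 then (L 3 0 \<noteq> s 4 1) else False) else (if j = 2 then (if i = 0 then (L 1 0 \<noteq> (s 1 0 \<noteq> s 3 0)) else False) else (if j = 3 then (if i = 0 then (L 1 0 \<noteq> (s 1 0 \<noteq> s 2 0)) else False) else (if j = 4 then (if i = 0 then L 2 0 else (if i = 1 then (L 1 0 \<noteq> (L 3 0 \<noteq> (s 2 0 \<noteq> s 3 0))) else False)) else (if j = 5 then False else False))))))"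
  have "\<forall>m\<in>PiE {1..5} (\<lambda>j. BV (vec5 1 1 1 2 0 j)). (\<forall>k\<in>{1..3}. F k (restrict m (S k)) \<in> BV ((\<lambda>_. 1) k)) \<and>
     (\<forall>j\<in>{1..5}. G j (restrict (\<lambda>k. F k (restrict m (S k))) {1..3}) (restrict m (A j)) = m j)"
  proof (rule ballI, rule conjI)
  fix m assume m: "m \<in> PiE {1..5} (\<lambda>j. BV (vec5 1 1 1 2 0 j))"
  have z: "\<not> m j i" if "j \<in> {1..5}" "vec5 1 1 1 2 0 j \<le> i" for j i
    using m that unfolding BV_def PiE_iff by auto
  show "\<forall>k\<in>{1..3}. F k (restrict m (S k)) \<in> BV ((\<lambda>_. 1) k)"
    by (auto simp: BV_def F_def)
  have sA: "S (Suc 0) = {1,2,3}" "A (Suc 0) = {4,5}" using assms by simp_all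
  define L where "L = restrict (\<lambda>k. F k (restrict m (S k))) {1..3}"
  have Lk: "L 1 0 = (m 1 0 \<noteq> (m 2 0 \<noteq> m 3 0))" "L (Suc 0) 0 = (m 1 0 \<noteq> (m 2 0 \<noteq> m 3 0))" "L 2 0 = m 4 0" "L 3 0 = (m 1 0 \<noteq> m 4 1)"
    by (simp_all add: L_def F_def assms sA)
  have j1: "G 1 L (restrict m (A 1)) = m 1"
  proof (rule ext)
    fix i :: nat
    show "G 1 L (restrict m (A 1)) i = m 1 i"
    proof (cases "i < 1")
      case True
        hence "i = 0" by auto
        thus ?thesis by (simp add: G_def assms sA Lk; argo)
    next
      case False thus ?thesis using z[of 1 i] by (simp add: G_def vec5_def)
    qed
  qed
  have j2: "G 2 L (restrict m (A 2)) = m 2"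
  proof (rule ext)
    fix i :: nat
    show "G 2 L (restrict m (A 2)) i = m 2 i"
    proof (cases "i < 1")
      case True
        hence "i = 0" by auto
        thus ?thesis by (simp add: G_def assms sA Lk; argo)
    next
      case False thus ?thesis using z[of 2 i] by (simp add: G_def vec5_def)
    qed
  qed
  have j3: "G 3 L (restrict m (A 3)) = m 3"
  proof (rule ext)
    fix i :: nat
    show "G 3 L (restrict m (A 3)) i = m 3 i"
    proof (cases "i < 1")
      case True
        hence "i = 0" by auto
        thus ?thesis by (simp add: G_def assms sA Lk; argo)
    next
      case False thus ?thesis using z[of 3 i] by (simp add: G_def vec5_def)
    qed
  qed
  have j4: "G 4 L (restrict m (A 4)) = m 4"
  proof (rule ext)
    fix i :: nat
    show "G 4 L (restrict m (A 4)) i = m 4 i"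
    proof (cases "i < 2")
      case True
        hence "i = 0 \<or> i = 1" by auto
        thus ?thesis by (elim disjE; simp add: G_def assms sA Lk; argo)
    next
      case False thus ?thesis using z[of 4 i] by (simp add: G_def vec5_def)
    qed
  qed
  have j5: "G 5 L (restrict m (A 5)) = m 5"
  proof (rule ext)
    fix i :: nat
    show "G 5 L (restrict m (A 5)) i = m 5 i"
    proof (cases "i < 0")
      case True thus ?thesis by simp
    next
      case False thus ?thesis using z[of 5 i] by (simp add: G_def vec5_def)
    qed
  qed
  have "G j L (restrict m (A j)) = m j" if "j \<in> {1..5}" for j
  proof -
    from that have "j = 1 \<or> j = 2 \<or> j = 3 \<or> j = 4 \<or> j = 5" by auto
    thus ?thesis using j1 j2 j3 j4 j5 by auto
  qed
  thus "\<forall>j\<in>{1..5}. G j (restrict (\<lambda>k. F k (restrict m (S k))) {1..3}) (restrict m (A j)) = m j"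
    unfolding L_def by blast
  qed
  thus ?thesis unfolding zcode_def by blast
qed

lemma codeE:
  assumes "S 1 = {1,2,3}" "S 2 = {2,3,4}" "S 3 = {1,2,4,5}" "A 1 = {4,5}" "A 2 = {1,3,5}" "A 3 = {1,2}" "A 4 = {2,3,5}" "A 5 = {3}"
  shows "zcode S A (vec5 1 1 2 0 1) (\<lambda>_. 1)"
proof -
  define F :: "nat \<Rightarrow> (nat \<Rightarrow> nat \<Rightarrow> bool) \<Rightarrow> nat \<Rightarrow> bool" where "F = (\<lambda>k M i. (if k = 1 then (if i = 0 then (M 1 0 \<noteq> M 3 0) else False) else (if k = 2 then (if i = 0 then (M 2 0 \<noteq> M 3 1) else False) else (if k = 3 then (if i = 0 then (M 1 0 \<noteq> M 5 0) else False) else False))))"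
  define G :: "nat \<Rightarrow> (nat \<Rightarrow> nat \<Rightarrow> bool) \<Rightarrow> (nat \<Rightarrow> nat \<Rightarrow> bool) \<Rightarrow> nat \<Rightarrow> bool" where "G = (\<lambda>j L s i. (if j = 1 then (if i = 0 then (L 3 0 \<noteq> s 5 0) else False) else (if j = 2 then (if i = 0 then (L 2 0 \<noteq> s 3 1) else False) else (if j = 3 then (if i = 0 then (L 1 0 \<noteq> s 1 0) else (if i = 1 then (L 2 0 \<noteq> s 2 0) else False)) else (if j = 4 then False else (if j = 5 then (if i = 0 then (L 1 0 \<noteq> (L 3 0 \<noteq> s 3 0)) else False) else False))))))"
  have "\<forall>m\<in>PiE {1..5} (\<lambda>j. BV (vec5 1 1 2 0 1 j)). (\<forall>k\<in>{1..3}. F k (restrict m (S k)) \<in> BV ((\<lambda>_. 1) k)) \<and>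
     (\<forall>j\<in>{1..5}. G j (restrict (\<lambda>k. F k (restrict m (S k))) {1..3}) (restrict m (A j)) = m j)"
  proof (rule ballI, rule conjI)
  fix m assume m: "m \<in> PiE {1..5} (\<lambda>j. BV (vec5 1 1 2 0 1 j))"
  have z: "\<not> m j i" if "j \<in> {1..5}" "vec5 1 1 2 0 1 j \<le> i" for j i
    using m that unfolding BV_def PiE_iff by auto
  show "\<forall>k\<in>{1..3}. F k (restrict m (S k)) \<in> BV ((\<lambda>_. 1) k)"
    by (auto simp: BV_def F_def)
  have sA: "S (Suc 0) = {1,2,3}" "A (Suc 0) = {4,5}" using assms by simp_all
  define L where "L = restrict (\<lambda>k. F k (restrict m (S k))) {1..3}"
  have Lk: "L 1 0 = (m 1 0 \<noteq> m 3 0)" "L (Suc 0) 0 = (m 1 0 \<noteq> m 3 0)" "L 2 0 = (m 2 0 \<noteq> m 3 1)" "L 3 0 = (m 1 0 \<noteq> m 5 0)"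
    by (simp_all add: L_def F_def assms sA)
  have j1: "G 1 L (restrict m (A 1)) = m 1"
  proof (rule ext)
    fix i :: nat
    show "G 1 L (restrict m (A 1)) i = m 1 i"
    proof (cases "i < 1")
      case True
        hence "i = 0" by auto
        thus ?thesis by (simp add: G_def assms sA Lk; argo)
    next
      case False thus ?thesis using z[of 1 i] by (simp add: G_def vec5_def)
    qed
  qed
  have j2: "G 2 L (restrict m (A 2)) = m 2"
  proof (rule ext)
    fix i :: nat
    show "G 2 L (restrict m (A 2)) i = m 2 i"
    proof (cases "i < 1")
      case True
        hence "i = 0" by auto
        thus ?thesis by (simp add: G_def assms sA Lk; argo)
    next
      case False thus ?thesis using z[of 2 i] by (simp add: G_def vec5_def)
    qed
  qed
  have j3: "G 3 L (restrict m (A 3)) = m 3"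
  proof (rule ext)
    fix i :: nat
    show "G 3 L (restrict m (A 3)) i = m 3 i"
    proof (cases "i < 2")
      case True
        hence "i = 0 \<or> i = 1" by auto
        thus ?thesis by (elim disjE; simp add: G_def assms sA Lk; argo)
    next
      case False thus ?thesis using z[of 3 i] by (simp add: G_def vec5_def)
    qed
  qed
  have j4: "G 4 L (restrict m (A 4)) = m 4"
  proof (rule ext)
    fix i :: nat
    show "G 4 L (restrict m (A 4)) i = m 4 i"
    proof (cases "i < 0")
      case True thus ?thesis by simp
    next
      case False thus ?thesis using z[of 4 i] by (simp add: G_def vec5_def)
    qed
  qed
  have j5: "G 5 L (restrict m (A 5)) = m 5"
  proof (rule ext)
    fix i :: nat
    show "G 5 L (restrict m (A 5)) i = m 5 i"
    proof (cases "i < 1")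
      case True
        hence "i = 0" by auto
        thus ?thesis by (simp add: G_def assms sA Lk; argo)
    next
      case False thus ?thesis using z[of 5 i] by (simp add: G_def vec5_def)
    qed
  qed
  have "G j L (restrict m (A j)) = m j" if "j \<in> {1..5}" for j
  proof -
    from that have "j = 1 \<or> j = 2 \<or> j = 3 \<or> j = 4 \<or> j = 5" by auto
    thus ?thesis using j1 j2 j3 j4 j5 by auto
  qed
  thus "\<forall>j\<in>{1..5}. G j (restrict (\<lambda>k. F k (restrict m (S k))) {1..3}) (restrict m (A j)) = m j"
    unfolding L_def by blast
  qed
  thus ?thesis unfolding zcode_def by blast
qed

lemma codeF:
  assumes "S 1 = {1,2,3}" "S 2 = {2,3,4}" "S 3 = {1,2,4,5}" "A 1 = {4,5}" "A 2 = {1,3,5}" "A 3 = {1,2}" "A 4 = {2,3,5}" "A 5 = {3}"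
  shows "zcode S A (vec5 1 2 2 1 0) (\<lambda>_. 1)"
proof -
  define F :: "nat \<Rightarrow> (nat \<Rightarrow> nat \<Rightarrow> bool) \<Rightarrow> nat \<Rightarrow> bool" where "F = (\<lambda>k M i. (if k = 1 then (if i = 0 then (M 1 0 \<noteq> (M 2 1 \<noteq> M 3 0)) else False) else (if k = 2 then (if i = 0 then (M 2 0 \<noteq> M 3 1) else False) else (if k = 3 then (if i = 0 then (M 1 0 \<noteq> M 4 0) else False) else False))))"
  define G :: "nat \<Rightarrow> (nat \<Rightarrow> nat \<Rightarrow> bool) \<Rightarrow> (nat \<Rightarrow> nat \<Rightarrow> bool) \<Rightarrow> nat \<Rightarrow> bool" where "G = (\<lambda>j L s i. (if j = 1 then (if i = 0 then (L 3 0 \<noteq> s 4 0) else False) else (if j = 2 then (if i = 0 then (L 2 0 \<noteq> s 3 1) else (if i = 1 then (L 1 0 \<noteq> (s 1 0 \<noteq> s 3 0)) else False)) else (if j = 3 then (if i = 0 then (L 1 0 \<noteq> (s 1 0 \<noteq> s 2 1)) else (if i = 1 then (L 2 0 \<noteq> s 2 0) else False)) else (if j = 4 then (if i = 0 then (L 1 0 \<noteq> (L 3 0 \<noteq> (s 2 1 \<noteq> s 3 0))) else False) else (if j = 5 then False else False))))))"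
  have "\<forall>m\<in>PiE {1..5} (\<lambda>j. BV (vec5 1 2 2 1 0 j)). (\<forall>k\<in>{1..3}. F k (restrict m (S k)) \<in> BV ((\<lambda>_. 1) k)) \<and>
     (\<forall>j\<in>{1..5}. G j (restrict (\<lambda>k. F k (restrict m (S k))) {1..3}) (restrict m (A j)) = m j)"
  proof (rule ballI, rule conjI)
  fix m assume m: "m \<in> PiE {1..5} (\<lambda>j. BV (vec5 1 2 2 1 0 j))"
  have z: "\<not> m j i" if "j \<in> {1..5}" "vec5 1 2 2 1 0 j \<le> i" for j i
    using m that unfolding BV_def PiE_iff by auto
  show "\<forall>k\<in>{1..3}. F k (restrict m (S k)) \<in> BV ((\<lambda>_. 1) k)"
    by (auto simp: BV_def F_def)
  have sA: "S (Suc 0) = {1,2,3}" "A (Suc 0) = {4,5}" using assms by simp_all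
  define L where "L = restrict (\<lambda>k. F k (restrict m (S k))) {1..3}"
  have Lk: "L 1 0 = (m 1 0 \<noteq> (m 2 1 \<noteq> m 3 0))" "L (Suc 0) 0 = (m 1 0 \<noteq> (m 2 1 \<noteq> m 3 0))" "L 2 0 = (m 2 0 \<noteq> m 3 1)" "L 3 0 = (m 1 0 \<noteq> m 4 0)"
    by (simp_all add: L_def F_def assms sA)
  have j1: "G 1 L (restrict m (A 1)) = m 1"
  proof (rule ext)
    fix i :: nat
    show "G 1 L (restrict m (A 1)) i = m 1 i"
    proof (cases "i < 1")
      case True
        hence "i = 0" by auto
        thus ?thesis by (simp add: G_def assms sA Lk; argo)
    next
      case False thus ?thesis using z[of 1 i] by (simp add: G_def vec5_def)
    qed
  qed
  have j2: "G 2 L (restrict m (A 2)) = m 2"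
  proof (rule ext)
    fix i :: nat
    show "G 2 L (restrict m (A 2)) i = m 2 i"
    proof (cases "i < 2")
      case True
        hence "i = 0 \<or> i = 1" by auto
        thus ?thesis by (elim disjE; simp add: G_def assms sA Lk; argo)
    next
      case False thus ?thesis using z[of 2 i] by (simp add: G_def vec5_def)
    qed
  qed
  have j3: "G 3 L (restrict m (A 3)) = m 3"
  proof (rule ext)
    fix i :: nat
    show "G 3 L (restrict m (A 3)) i = m 3 i"
    proof (cases "i < 2")
      case True
        hence "i = 0 \<or> i = 1" by auto
        thus ?thesis by (elim disjE; simp add: G_def assms sA Lk; argo)
    next
      case False thus ?thesis using z[of 3 i] by (simp add: G_def vec5_def)
    qed
  qed
  have j4: "G 4 L (restrict m (A 4)) = m 4"
  proof (rule ext)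
    fix i :: nat
    show "G 4 L (restrict m (A 4)) i = m 4 i"
    proof (cases "i < 1")
      case True
        hence "i = 0" by auto
        thus ?thesis by (simp add: G_def assms sA Lk; argo)
    next
      case False thus ?thesis using z[of 4 i] by (simp add: G_def vec5_def)
    qed
  qed
  have j5: "G 5 L (restrict m (A 5)) = m 5"
  proof (rule ext)
    fix i :: nat
    show "G 5 L (restrict m (A 5)) i = m 5 i"
    proof (cases "i < 0")
      case True thus ?thesis by simp
    next
      case False thus ?thesis using z[of 5 i] by (simp add: G_def vec5_def)
    qed
  qed
  have "G j L (restrict m (A j)) = m j" if "j \<in> {1..5}" for j
  proof -
    from that have "j = 1 \<or> j = 2 \<or> j = 3 \<or> j = 4 \<or> j = 5" by auto
    thus ?thesis using j1 j2 j3 j4 j5 by auto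
  qed
  thus "\<forall>j\<in>{1..5}. G j (restrict (\<lambda>k. F k (restrict m (S k))) {1..3}) (restrict m (A j)) = m j"
    unfolding L_def by blast
  qed
  thus ?thesis unfolding zcode_def by blast
qed

lemma codeG:
  assumes "S 1 = {1,2,3}" "S 2 = {2,3,4}" "S 3 = {1,2,4,5}" "A 1 = {4,5}" "A 2 = {1,3,5}" "A 3 = {1,2}" "A 4 = {2,3,5}" "A 5 = {3}"
  shows "zcode S A (vec5 3 2 3 2 1) (\<lambda>_. 2)"
proof -
  define F :: "nat \<Rightarrow> (nat \<Rightarrow> nat \<Rightarrow> bool) \<Rightarrow> nat \<Rightarrow> bool" where "F = (\<lambda>k M i. (if k = 1 then (if i = 0 then (M 1 1 \<noteq> (M 1 2 \<noteq> M 3 1)) else (if i = 1 then (M 1 0 \<noteq> (M 2 0 \<noteq> M 3 0)) else False)) else (if k = 2 then (if i = 0 then (M 2 1 \<noteq> (M 3 2 \<noteq> M 4 0)) else (if i = 1 then (M 2 0 \<noteq> (M 3 0 \<noteq> M 4 1)) else False)) else (if k = 3 then (if i = 0 then (M 1 1 \<noteq> (M 1 2 \<noteq> M 5 0)) else (if i = 1 then (M 1 1 \<noteq> M 4 0) else False)) else False))))"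
  define G :: "nat \<Rightarrow> (nat \<Rightarrow> nat \<Rightarrow> bool) \<Rightarrow> (nat \<Rightarrow> nat \<Rightarrow> bool) \<Rightarrow> nat \<Rightarrow> bool" where "G = (\<lambda>j L s i. (if j = 1 then (if i = 0 then (L 1 1 \<noteq> (L 2 1 \<noteq> s 4 1)) else (if i = 1 then (L 3 1 \<noteq> s 4 0) else (if i = 2 then (L 3 0 \<noteq> (L 3 1 \<noteq> (s 4 0 \<noteq> s 5 0))) else False))) else (if j = 2 then (if i = 0 then (L 1 1 \<noteq> (s 1 0 \<noteq> s 3 0)) else (if i = 1 then (L 2 0 \<noteq> (L 3 1 \<noteq> (s 1 1 \<noteq> s 3 2))) else False)) else (if j = 3 then (if i = 0 then (L 1 1 \<noteq> (s 1 0 \<noteq> s 2 0)) else (if i = 1 then (L 1 0 \<noteq> (s 1 1 \<noteq> s 1 2)) else (if i = 2 then (L 2 0 \<noteq> (L 3 1 \<noteq> (s 1 1 \<noteq> s 2 1))) else False))) else (if j = 4 then (if i = 0 then (L 2 0 \<noteq> (s 2 1 \<noteq> s 3 2)) else (if i = 1 then (L 2 1 \<noteq> (s 2 0 \<noteq> s 3 0)) else False)) else (if j = 5 then (if i = 0 then (L 1 0 \<noteq> (L 3 0 \<noteq> s 3 1)) else False) else False))))))"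
  have "\<forall>m\<in>PiE {1..5} (\<lambda>j. BV (vec5 3 2 3 2 1 j)). (\<forall>k\<in>{1..3}. F k (restrict m (S k)) \<in> BV ((\<lambda>_. 2) k)) \<and>
     (\<forall>j\<in>{1..5}. G j (restrict (\<lambda>k. F k (restrict m (S k))) {1..3}) (restrict m (A j)) = m j)"
  proof (rule ballI, rule conjI)
  fix m assume m: "m \<in> PiE {1..5} (\<lambda>j. BV (vec5 3 2 3 2 1 j))"
  have z: "\<not> m j i" if "j \<in> {1..5}" "vec5 3 2 3 2 1 j \<le> i" for j i
    using m that unfolding BV_def PiE_iff by auto
  show "\<forall>k\<in>{1..3}. F k (restrict m (S k)) \<in> BV ((\<lambda>_. 2) k)"
    by (auto simp: BV_def F_def)
  have sA: "S (Suc 0) = {1,2,3}" "A (Suc 0) = {4,5}" using assms by simp_all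
  define L where "L = restrict (\<lambda>k. F k (restrict m (S k))) {1..3}"
  have Lk: "L 1 0 = (m 1 1 \<noteq> (m 1 2 \<noteq> m 3 1))" "L (Suc 0) 0 = (m 1 1 \<noteq> (m 1 2 \<noteq> m 3 1))" "L 1 1 = (m 1 0 \<noteq> (m 2 0 \<noteq> m 3 0))" "L 1 (Suc 0) = (m 1 0 \<noteq> (m 2 0 \<noteq> m 3 0))" "L (Suc 0) 1 = (m 1 0 \<noteq> (m 2 0 \<noteq> m 3 0))" "L (Suc 0) (Suc 0) = (m 1 0 \<noteq> (m 2 0 \<noteq> m 3 0))" "L 2 0 = (m 2 1 \<noteq> (m 3 2 \<noteq> m 4 0))" "L 2 1 = (m 2 0 \<noteq> (m 3 0 \<noteq> m 4 1))" "L 2 (Suc 0) = (m 2 0 \<noteq> (m 3 0 \<noteq> m 4 1))" "L 3 0 = (m 1 1 \<noteq> (m 1 2 \<noteq> m 5 0))" "L 3 1 = (m 1 1 \<noteq> m 4 0)" "L 3 (Suc 0) = (m 1 1 \<noteq> m 4 0)"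
    by (simp_all add: L_def F_def assms sA)
  have j1: "G 1 L (restrict m (A 1)) = m 1"
  proof (rule ext)
    fix i :: nat
    show "G 1 L (restrict m (A 1)) i = m 1 i"
    proof (cases "i < 3")
      case True
        hence "i = 0 \<or> i = 1 \<or> i = 2" by auto
        thus ?thesis by (elim disjE; simp add: G_def assms sA Lk; argo)
    next
      case False thus ?thesis using z[of 1 i] by (simp add: G_def vec5_def)
    qed
  qed
  have j2: "G 2 L (restrict m (A 2)) = m 2"
  proof (rule ext)
    fix i :: nat
    show "G 2 L (restrict m (A 2)) i = m 2 i"
    proof (cases "i < 2")
      case True
        hence "i = 0 \<or> i = 1" by auto
        thus ?thesis by (elim disjE; simp add: G_def assms sA Lk; argo)
    next
      case False thus ?thesis using z[of 2 i] by (simp add: G_def vec5_def)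
    qed
  qed
  have j3: "G 3 L (restrict m (A 3)) = m 3"
  proof (rule ext)
    fix i :: nat
    show "G 3 L (restrict m (A 3)) i = m 3 i"
    proof (cases "i < 3")
      case True
        hence "i = 0 \<or> i = 1 \<or> i = 2" by auto
        thus ?thesis by (elim disjE; simp add: G_def assms sA Lk; argo)
    next
      case False thus ?thesis using z[of 3 i] by (simp add: G_def vec5_def)
    qed
  qed
  have j4: "G 4 L (restrict m (A 4)) = m 4"
  proof (rule ext)
    fix i :: nat
    show "G 4 L (restrict m (A 4)) i = m 4 i"
    proof (cases "i < 2")
      case True
        hence "i = 0 \<or> i = 1" by auto
        thus ?thesis by (elim disjE; simp add: G_def assms sA Lk; argo)
    next
      case False thus ?thesis using z[of 4 i] by (simp add: G_def vec5_def)
    qed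
  qed
  have j5: "G 5 L (restrict m (A 5)) = m 5"
  proof (rule ext)
    fix i :: nat
    show "G 5 L (restrict m (A 5)) i = m 5 i"
    proof (cases "i < 1")
      case True
        hence "i = 0" by auto
        thus ?thesis by (simp add: G_def assms sA Lk; argo)
    next
      case False thus ?thesis using z[of 5 i] by (simp add: G_def vec5_def)
    qed
  qed
  have "G j L (restrict m (A j)) = m j" if "j \<in> {1..5}" for j
  proof -
    from that have "j = 1 \<or> j = 2 \<or> j = 3 \<or> j = 4 \<or> j = 5" by auto
    thus ?thesis using j1 j2 j3 j4 j5 by auto
  qed
  thus "\<forall>j\<in>{1..5}. G j (restrict (\<lambda>k. F k (restrict m (S k))) {1..3}) (restrict m (A j)) = m j"
    unfolding L_def by blast
  qed
  thus ?thesis unfolding zcode_def by blast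
qed

lemma codeH:
  assumes "S 1 = {1,2,3}" "S 2 = {2,3,4}" "S 3 = {1,2,4,5}" "A 1 = {4,5}" "A 2 = {1,3,5}" "A 3 = {1,2}" "A 4 = {2,3,5}" "A 5 = {3}"
  shows "zcode S A (vec5 3 3 3 3 0) (\<lambda>_. 2)"
proof -
  define F :: "nat \<Rightarrow> (nat \<Rightarrow> nat \<Rightarrow> bool) \<Rightarrow> nat \<Rightarrow> bool" where "F = (\<lambda>k M i. (if k = 1 then (if i = 0 then (M 1 2 \<noteq> (M 2 1 \<noteq> M 3 2)) else (if i = 1 then (M 1 1 \<noteq> (M 2 2 \<noteq> M 3 0)) else False)) else (if k = 2 then (if i = 0 then (M 2 1 \<noteq> (M 3 2 \<noteq> M 4 2)) else (if i = 1 then (M 2 0 \<noteq> (M 3 1 \<noteq> M 4 0)) else False)) else (if k = 3 then (if i = 0 then (M 1 1 \<noteq> M 4 1) else (if i = 1 then (M 1 0 \<noteq> M 4 0) else False)) else False))))"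
  define G :: "nat \<Rightarrow> (nat \<Rightarrow> nat \<Rightarrow> bool) \<Rightarrow> (nat \<Rightarrow> nat \<Rightarrow> bool) \<Rightarrow> nat \<Rightarrow> bool" where "G = (\<lambda>j L s i. (if j = 1 then (if i = 0 then (L 3 1 \<noteq> s 4 0) else (if i = 1 then (L 3 0 \<noteq> s 4 1) else (if i = 2 then (L 1 0 \<noteq> (L 2 0 \<noteq> s 4 2)) else False))) else (if j = 2 then (if i = 0 then (L 2 1 \<noteq> (L 3 1 \<noteq> (s 1 0 \<noteq> s 3 1))) else (if i = 1 then (L 1 0 \<noteq> (s 1 2 \<noteq> s 3 2)) else (if i = 2 then (L 1 1 \<noteq> (s 1 1 \<noteq> s 3 0)) else False))) else (if j = 3 then (if i = 0 then (L 1 1 \<noteq> (s 1 1 \<noteq> s 2 2)) else (if i = 1 then (L 2 1 \<noteq> (L 3 1 \<noteq> (s 1 0 \<noteq> s 2 0))) else (if i = 2 then (L 1 0 \<noteq> (s 1 2 \<noteq> s 2 1)) else False))) else (if j = 4 then (if i = 0 then (L 2 1 \<noteq> (s 2 0 \<noteq> s 3 1)) else (if i = 1 then (L 1 1 \<noteq> (L 3 0 \<noteq> (s 2 2 \<noteq> s 3 0))) else (if i = 2 then (L 2 0 \<noteq> (s 2 1 \<noteq> s 3 2)) else False))) else (if j = 5 then False else False))))))"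
  have "\<forall>m\<in>PiE {1..5} (\<lambda>j. BV (vec5 3 3 3 3 0 j)). (\<forall>k\<in>{1..3}. F k (restrict m (S k)) \<in> BV ((\<lambda>_. 2) k)) \<and>
     (\<forall>j\<in>{1..5}. G j (restrict (\<lambda>k. F k (restrict m (S k))) {1..3}) (restrict m (A j)) = m j)"
  proof (rule ballI, rule conjI)
  fix m assume m: "m \<in> PiE {1..5} (\<lambda>j. BV (vec5 3 3 3 3 0 j))"
  have z: "\<not> m j i" if "j \<in> {1..5}" "vec5 3 3 3 3 0 j \<le> i" for j i
    using m that unfolding BV_def PiE_iff by auto
  show "\<forall>k\<in>{1..3}. F k (restrict m (S k)) \<in> BV ((\<lambda>_. 2) k)"
    by (auto simp: BV_def F_def)
  have sA: "S (Suc 0) = {1,2,3}" "A (Suc 0) = {4,5}" using assms by simp_all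
  define L where "L = restrict (\<lambda>k. F k (restrict m (S k))) {1..3}"
  have Lk: "L 1 0 = (m 1 2 \<noteq> (m 2 1 \<noteq> m 3 2))" "L (Suc 0) 0 = (m 1 2 \<noteq> (m 2 1 \<noteq> m 3 2))" "L 1 1 = (m 1 1 \<noteq> (m 2 2 \<noteq> m 3 0))" "L 1 (Suc 0) = (m 1 1 \<noteq> (m 2 2 \<noteq> m 3 0))" "L (Suc 0) 1 = (m 1 1 \<noteq> (m 2 2 \<noteq> m 3 0))" "L (Suc 0) (Suc 0) = (m 1 1 \<noteq> (m 2 2 \<noteq> m 3 0))" "L 2 0 = (m 2 1 \<noteq> (m 3 2 \<noteq> m 4 2))" "L 2 1 = (m 2 0 \<noteq> (m 3 1 \<noteq> m 4 0))" "L 2 (Suc 0) = (m 2 0 \<noteq> (m 3 1 \<noteq> m 4 0))" "L 3 0 = (m 1 1 \<noteq> m 4 1)" "L 3 1 = (m 1 0 \<noteq> m 4 0)" "L 3 (Suc 0) = (m 1 0 \<noteq> m 4 0)"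
    by (simp_all add: L_def F_def assms sA)
  have j1: "G 1 L (restrict m (A 1)) = m 1"
  proof (rule ext)
    fix i :: nat
    show "G 1 L (restrict m (A 1)) i = m 1 i"
    proof (cases "i < 3")
      case True
        hence "i = 0 \<or> i = 1 \<or> i = 2" by auto
        thus ?thesis by (elim disjE; simp add: G_def assms sA Lk; argo)
    next
      case False thus ?thesis using z[of 1 i] by (simp add: G_def vec5_def)
    qed
  qed
  have j2: "G 2 L (restrict m (A 2)) = m 2"
  proof (rule ext)
    fix i :: nat
    show "G 2 L (restrict m (A 2)) i = m 2 i"
    proof (cases "i < 3")
      case True
        hence "i = 0 \<or> i = 1 \<or> i = 2" by auto
        thus ?thesis by (elim disjE; simp add: G_def assms sA Lk; argo)
    next
      case False thus ?thesis using z[of 2 i] by (simp add: G_def vec5_def)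
    qed
  qed
  have j3: "G 3 L (restrict m (A 3)) = m 3"
  proof (rule ext)
    fix i :: nat
    show "G 3 L (restrict m (A 3)) i = m 3 i"
    proof (cases "i < 3")
      case True
        hence "i = 0 \<or> i = 1 \<or> i = 2" by auto
        thus ?thesis by (elim disjE; simp add: G_def assms sA Lk; argo)
    next
      case False thus ?thesis using z[of 3 i] by (simp add: G_def vec5_def)
    qed
  qed
  have j4: "G 4 L (restrict m (A 4)) = m 4"
  proof (rule ext)
    fix i :: nat
    show "G 4 L (restrict m (A 4)) i = m 4 i"
    proof (cases "i < 3")
      case True
        hence "i = 0 \<or> i = 1 \<or> i = 2" by auto
        thus ?thesis by (elim disjE; simp add: G_def assms sA Lk; argo)
    next
      case False thus ?thesis using z[of 4 i] by (simp add: G_def vec5_def)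
    qed
  qed
  have j5: "G 5 L (restrict m (A 5)) = m 5"
  proof (rule ext)
    fix i :: nat
    show "G 5 L (restrict m (A 5)) i = m 5 i"
    proof (cases "i < 0")
      case True thus ?thesis by simp
    next
      case False thus ?thesis using z[of 5 i] by (simp add: G_def vec5_def)
    qed
  qed
  have "G j L (restrict m (A j)) = m j" if "j \<in> {1..5}" for j
  proof -
    from that have "j = 1 \<or> j = 2 \<or> j = 3 \<or> j = 4 \<or> j = 5" by auto
    thus ?thesis using j1 j2 j3 j4 j5 by auto
  qed
  thus "\<forall>j\<in>{1..5}. G j (restrict (\<lambda>k. F k (restrict m (S k))) {1..3}) (restrict m (A j)) = m j"
    unfolding L_def by blast
  qed
  thus ?thesis unfolding zcode_def by blast
qed

lemma codeI:
  assumes "S 1 = {1,2,3}" "S 2 = {2,3,4}" "S 3 = {1,2,4,5}" "A 1 = {4,5}" "A 2 = {1,3,5}" "A 3 = {1,2}" "A 4 = {2,3,5}" "A 5 = {3}"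
  shows "zcode S A (vec5 2 1 1 1 0) (\<lambda>_. 1)"
proof -
  define F :: "nat \<Rightarrow> (nat \<Rightarrow> nat \<Rightarrow> bool) \<Rightarrow> nat \<Rightarrow> bool" where "F = (\<lambda>k M i. (if k = 1 then (if i = 0 then M 1 1 else False) else (if k = 2 then (if i = 0 then (M 2 0 \<noteq> (M 3 0 \<noteq> M 4 0)) else False) else (if k = 3 then (if i = 0 then (M 1 0 \<noteq> M 4 0) else False) else False))))"
  define G :: "nat \<Rightarrow> (nat \<Rightarrow> nat \<Rightarrow> bool) \<Rightarrow> (nat \<Rightarrow> nat \<Rightarrow> bool) \<Rightarrow> nat \<Rightarrow> bool" where "G = (\<lambda>j L s i. (if j = 1 then (if i = 0 then (L 3 0 \<noteq> s 4 0) else (if i = 1 then L 1 0 else False)) else (if j = 2 then (if i = 0 then (L 2 0 \<noteq> (L 3 0 \<noteq> (s 1 0 \<noteq> s 3 0))) else False) else (if j = 3 then (if i = 0 then (L 2 0 \<noteq> (L 3 0 \<noteq> (s 1 0 \<noteq> s 2 0))) else False) else (if j = 4 then (if i = 0 then (L 2 0 \<noteq> (s 2 0 \<noteq> s 3 0)) else False) else (if j = 5 then False else False))))))"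
  have "\<forall>m\<in>PiE {1..5} (\<lambda>j. BV (vec5 2 1 1 1 0 j)). (\<forall>k\<in>{1..3}. F k (restrict m (S k)) \<in> BV ((\<lambda>_. 1) k)) \<and>
     (\<forall>j\<in>{1..5}. G j (restrict (\<lambda>k. F k (restrict m (S k))) {1..3}) (restrict m (A j)) = m j)"
  proof (rule ballI, rule conjI)
  fix m assume m: "m \<in> PiE {1..5} (\<lambda>j. BV (vec5 2 1 1 1 0 j))"
  have z: "\<not> m j i" if "j \<in> {1..5}" "vec5 2 1 1 1 0 j \<le> i" for j i
    using m that unfolding BV_def PiE_iff by auto
  show "\<forall>k\<in>{1..3}. F k (restrict m (S k)) \<in> BV ((\<lambda>_. 1) k)"
    by (auto simp: BV_def F_def)
  have sA: "S (Suc 0) = {1,2,3}" "A (Suc 0) = {4,5}" using assms by simp_all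
  define L where "L = restrict (\<lambda>k. F k (restrict m (S k))) {1..3}"
  have Lk: "L 1 0 = m 1 1" "L (Suc 0) 0 = m 1 1" "L 2 0 = (m 2 0 \<noteq> (m 3 0 \<noteq> m 4 0))" "L 3 0 = (m 1 0 \<noteq> m 4 0)"
    by (simp_all add: L_def F_def assms sA)
  have j1: "G 1 L (restrict m (A 1)) = m 1"
  proof (rule ext)
    fix i :: nat
    show "G 1 L (restrict m (A 1)) i = m 1 i"
    proof (cases "i < 2")
      case True
        hence "i = 0 \<or> i = 1" by auto
        thus ?thesis by (elim disjE; simp add: G_def assms sA Lk; argo)
    next
      case False thus ?thesis using z[of 1 i] by (simp add: G_def vec5_def)
    qed
  qed
  have j2: "G 2 L (restrict m (A 2)) = m 2"
  proof (rule ext)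
    fix i :: nat
    show "G 2 L (restrict m (A 2)) i = m 2 i"
    proof (cases "i < 1")
      case True
        hence "i = 0" by auto
        thus ?thesis by (simp add: G_def assms sA Lk; argo)
    next
      case False thus ?thesis using z[of 2 i] by (simp add: G_def vec5_def)
    qed
  qed
  have j3: "G 3 L (restrict m (A 3)) = m 3"
  proof (rule ext)
    fix i :: nat
    show "G 3 L (restrict m (A 3)) i = m 3 i"
    proof (cases "i < 1")
      case True
        hence "i = 0" by auto
        thus ?thesis by (simp add: G_def assms sA Lk; argo)
    next
      case False thus ?thesis using z[of 3 i] by (simp add: G_def vec5_def)
    qed
  qed
  have j4: "G 4 L (restrict m (A 4)) = m 4"
  proof (rule ext)
    fix i :: nat
    show "G 4 L (restrict m (A 4)) i = m 4 i"
    proof (cases "i < 1")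
      case True
        hence "i = 0" by auto
        thus ?thesis by (simp add: G_def assms sA Lk; argo)
    next
      case False thus ?thesis using z[of 4 i] by (simp add: G_def vec5_def)
    qed
  qed
  have j5: "G 5 L (restrict m (A 5)) = m 5"
  proof (rule ext)
    fix i :: nat
    show "G 5 L (restrict m (A 5)) i = m 5 i"
    proof (cases "i < 0")
      case True thus ?thesis by simp
    next
      case False thus ?thesis using z[of 5 i] by (simp add: G_def vec5_def)
    qed
  qed
  have "G j L (restrict m (A j)) = m j" if "j \<in> {1..5}" for j
  proof -
    from that have "j = 1 \<or> j = 2 \<or> j = 3 \<or> j = 4 \<or> j = 5" by auto
    thus ?thesis using j1 j2 j3 j4 j5 by auto
  qed
  thus "\<forall>j\<in>{1..5}. G j (restrict (\<lambda>k. F k (restrict m (S k))) {1..3}) (restrict m (A j)) = m j"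
    unfolding L_def by blast
  qed
  thus ?thesis unfolding zcode_def by blast
qed

lemma fm_decomp:
  fixes R1 R2 R3 R4 R5 :: real
  assumes nn: "0 \<le> R1" "0 \<le> R2" "0 \<le> R3" "0 \<le> R4" "0 \<le> R5"
    and lev9: "R1 + R2 + R5 \<le> 3" "R1 + R3 \<le> 3" "R1 + R4 + R5 \<le> 3" "R1 + R5 \<le> 2" "R3 + R4 + R5 \<le> 3" "R2 + R4 + R5 \<le> 3" "R3 \<le> 2" "R5 \<le> 1" "R4 + R5 \<le> 2"
  shows "\<exists>l0 l1 l2 l3 l4 l5 l6 l7 l8. 0 \<le> l0 \<and> 0 \<le> l1 \<and> 0 \<le> l2 \<and> 0 \<le> l3 \<and> 0 \<le> l4 \<and> 0 \<le> l5 \<and> 0 \<le> l6 \<and> 0 \<le> l7 \<and> 0 \<le> l8 \<and> l0 + l1 + l2 + l3 + l4 + l5 + l6 + l7 + l8 \<le> 1 \<and> R1 \<le> 0 * l0 + 0 * l1 + 1 * l2 + 1 * l3 + 1 * l4 + 1 * l5 + (3 / 2) * l6 + (3 / 2) * l7 + 2 * l8 \<and> R2 \<le> 2 * l0 + 3 * l1 + 1 * l2 + 1 * l3 + 1 * l4 + 2 * l5 + 1 * l6 + (3 / 2) * l7 + 1 * l8 \<and> R3 \<le> 2 * l0 + 2 * l1 + 1 * l2 + 1 * l3 + 2 * l4 + 2 * l5 + (3 / 2) * l6 + (3 / 2) * l7 + 1 * l8 \<and> R4 \<le> 0 * l0 + 0 * l1 + 1 * l2 + 2 * l3 + 0 *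 l4 + 1 * l5 + 1 * l6 + (3 / 2) * l7 + 1 * l8 \<and> R5 \<le> 1 * l0 + 0 * l1 + 1 * l2 + 0 * l3 + 1 * l4 + 0 * l5 + (1 / 2) * l6 + 0 * l7 + 0 * l8"
proof -
  define l8 :: real where "l8 = max (2 * R1 - 3) 0"
  have l8lb: "0 \<le> l8" "2 * R1 - 3 \<le> l8" by (simp_all add: l8_def)
  have l8ub0: "l8 \<le> - R3 - R4 - R5 + 3" using lev9(2) lev9(3) lev9(5) nn(1) nn(3) nn(4) nn(5) unfolding l8_def by (intro max.boundedI; linarith)
  have l8ub1: "l8 \<le> - R2 - R4 - R5 + 3" using lev9(1) lev9(3) lev9(6) nn(1) nn(2) nn(4) nn(5) unfolding l8_def by (intro max.boundedI; linarith)
  have l8ub2: "l8 \<le> - R3 + 2" using lev9(2) lev9(4) lev9(7) nn(1) nn(3) nn(5) unfolding l8_def by (intro max.boundedI; linarith)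
  have l8ub3: "l8 \<le> - R5 + 1" using lev9(4) lev9(8) nn(1) nn(5) unfolding l8_def by (intro max.boundedI; linarith)
  have l8ub4: "l8 \<le> - (1 / 2) * R2 - (1 / 2) * R5 + (3 / 2)" using lev9(1) lev9(4) lev9(6) nn(1) nn(2) nn(4) nn(5) unfolding l8_def by (intro max.boundedI; linarith)
  have l8ub5: "l8 \<le> - R4 - R5 + 2" using lev9(3) lev9(4) lev9(9) nn(1) nn(4) nn(5) unfolding l8_def by (intro max.boundedI; linarith)
  have lev8_0: "R1 + R2 + R5 \<le> 3" using lev9(1) nn(1) nn(2) nn(5) by linarith
  have lev8_1: "R3 + R4 + R5 + l8 \<le> 3" using l8ub0 nn(3) nn(4) nn(5) l8lb(1) by linarith
  have lev8_2: "R2 + R4 + R5 + l8 \<le> 3" using l8ub1 nn(2) nn(4) nn(5) l8lb(1) by linarith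
  have lev8_3: "R1 + R3 \<le> 3" using lev9(2) nn(1) nn(3) by linarith
  have lev8_4: "2 * R1 - l8 \<le> 3" using l8lb(2) nn(1) l8lb(1) by linarith
  have lev8_5: "R1 + R4 + R5 \<le> 3" using lev9(3) nn(1) nn(4) nn(5) by linarith
  have lev8_6: "R3 + l8 \<le> 2" using l8ub2 nn(3) l8lb(1) by linarith
  have lev8_7: "R5 + l8 \<le> 1" using l8ub3 nn(5) l8lb(1) by linarith
  have lev8_8: "R2 + R5 + 2 * l8 \<le> 3" using l8ub4 nn(2) nn(5) l8lb(1) by linarith
  have lev8_9: "R4 + R5 + l8 \<le> 2" using l8ub5 nn(4) nn(5) l8lb(1) by linarith
  have lev8_10: "R1 + R5 \<le> 2" using lev9(4) nn(1) nn(5) by linarith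
  define l7 :: real where "l7 = max (2 * R1 + 2 * R2 + 2 * R4 + 2 * R5 - 8) (max (2 * R1 + R2 + R4 - l8 - 5) (max (4 * R1 + 2 * R4 - 2 * l8 - 8) (max (4 * R1 + 2 * R2 - 2 * l8 - 8) (max (2 * R1 + 2 * R3 + 2 * R4 - 8) 0))))"
  have l7lb: "0 \<le> l7" "2 * R1 + 2 * R2 + 2 * R4 + 2 * R5 - 8 \<le> l7" "2 * R1 + R2 + R4 - l8 - 5 \<le> l7" "4 * R1 + 2 * R4 - 2 * l8 - 8 \<le> l7" "4 * R1 + 2 * R2 - 2 * l8 - 8 \<le> l7" "2 * R1 + 2 * R3 + 2 * R4 - 8 \<le> l7" by (simp_all add: l7_def)
  have l7ub0: "l7 \<le> - 2 * R3 - 2 * l8 + 4" using lev8_2 lev8_3 lev8_5 lev8_0 lev8_1 lev8_6 nn(1) nn(2) nn(3) nn(4) nn(5) l8lb(1) unfolding l7_def by (intro max.boundedI; linarith)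
  have l7ub1: "l7 \<le> - R5 - l8 + 1" using lev8_0 lev8_2 lev8_5 lev8_4 lev8_1 lev8_7 nn(1) nn(2) nn(3) nn(4) nn(5) l8lb(1) unfolding l7_def by (intro max.boundedI; linarith)
  have l7ub2: "l7 \<le> - (2 / 3) * R2 - (2 / 3) * R5 - (4 / 3) * l8 + 2" using lev8_0 lev8_2 lev8_5 lev8_4 lev8_1 lev8_3 lev8_8 nn(1) nn(2) nn(3) nn(4) nn(5) l8lb(1) unfolding l7_def by (intro max.boundedI; linarith)
  have l7ub3: "l7 \<le> - 2 * R4 - 2 * R5 - 2 * l8 + 4" using lev8_2 lev8_5 lev8_4 lev8_1 lev8_9 nn(1) nn(2) nn(3) nn(4) nn(5) l8lb(1) unfolding l7_def by (intro max.boundedI; linarith)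
  have l7ub4: "l7 \<le> - 2 * R1 - 2 * R5 + 4" using lev8_0 lev8_5 lev8_4 lev8_3 lev8_10 nn(1) nn(2) nn(3) nn(4) nn(5) l8lb(1) unfolding l7_def by (intro max.boundedI; linarith)
  have lev7_0: "R1 + R2 + R5 \<le> 3" using lev8_0 nn(1) nn(2) nn(5) by linarith
  have lev7_1: "R3 + R4 + R5 + l8 \<le> 3" using lev8_1 nn(3) nn(4) nn(5) l8lb(1) by linarith
  have lev7_2: "2 * R3 + l7 + 2 * l8 \<le> 4" using l7ub0 nn(3) l7lb(1) l8lb(1) by linarith
  have lev7_3: "R2 + R4 + R5 + l8 \<le> 3" using lev8_2 nn(2) nn(4) nn(5) l8lb(1) by linarith
  have lev7_4: "R5 + l7 + l8 \<le> 1" using l7ub1 nn(5) l7lb(1) l8lb(1) by linarith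
  have lev7_5: "2 * R2 + 2 * R5 + 3 * l7 + 4 * l8 \<le> 6" using l7ub2 nn(2) nn(5) l7lb(1) l8lb(1) by linarith
  have lev7_6: "2 * R4 + 2 * R5 + l7 + 2 * l8 \<le> 4" using l7ub3 nn(4) nn(5) l7lb(1) l8lb(1) by linarith
  have lev7_7: "R1 + R3 \<le> 3" using lev8_3 nn(1) nn(3) by linarith
  have lev7_8: "2 * R1 + 2 * R2 + 2 * R4 + 2 * R5 - l7 \<le> 8" using l7lb(2) nn(1) nn(2) nn(4) nn(5) l7lb(1) by linarith
  have lev7_9: "2 * R1 + R2 + R4 - l7 - l8 \<le> 5" using l7lb(3) nn(1) nn(2) nn(4) l7lb(1) l8lb(1) by linarith
  have lev7_10: "2 * R1 + 2 * R5 + l7 \<le> 4" using l7ub4 nn(1) nn(5) l7lb(1) by linarith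
  have lev7_11: "2 * R1 - l8 \<le> 3" using lev8_4 nn(1) l8lb(1) by linarith
  have lev7_12: "R1 + R4 + R5 \<le> 3" using lev8_5 nn(1) nn(4) nn(5) by linarith
  have lev7_13: "4 * R1 + 2 * R4 - l7 - 2 * l8 \<le> 8" using l7lb(4) nn(1) nn(4) l7lb(1) l8lb(1) by linarith
  have lev7_14: "4 * R1 + 2 * R2 - l7 - 2 * l8 \<le> 8" using l7lb(5) nn(1) nn(2) l7lb(1) l8lb(1) by linarith
  have lev7_15: "2 * R1 + 2 * R3 + 2 * R4 - l7 \<le> 8" using l7lb(6) nn(1) nn(3) nn(4) l7lb(1) by linarith
  define l6 :: real where "l6 = max (2 * R1 - l7 - 2 * l8 - 2) 0"
  have l6lb: "0 \<le> l6" "2 * R1 - l7 - 2 * l8 - 2 \<le> l6" by (simp_all add: l6_def)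
  have l6ub0: "l6 \<le> - 2 * R3 - l7 - 2 * l8 + 4" using lev7_7 lev7_2 nn(1) nn(3) l7lb(1) l8lb(1) unfolding l6_def by (intro max.boundedI; linarith)
  have l6ub1: "l6 \<le> - 2 * R2 - 2 * R4 - 2 * R5 - 2 * l8 + 6" using lev7_8 lev7_3 nn(1) nn(2) nn(4) nn(5) l7lb(1) l8lb(1) unfolding l6_def by (intro max.boundedI; linarith)
  have l6ub2: "l6 \<le> - R2 - R4 - l8 + 3" using lev7_9 lev7_3 nn(1) nn(2) nn(4) nn(5) l7lb(1) l8lb(1) unfolding l6_def by (intro max.boundedI; linarith)
  have l6ub3: "l6 \<le> - 2 * R5 - 2 * l7 - 2 * l8 + 2" using lev7_10 lev7_4 nn(1) nn(5) l7lb(1) l8lb(1) unfolding l6_def by (intro max.boundedI; linarith)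
  have l6ub4: "l6 \<le> - l7 - l8 + 1" using lev7_11 lev7_4 nn(1) nn(5) l7lb(1) l8lb(1) unfolding l6_def by (intro max.boundedI; linarith)
  have l6ub5: "l6 \<le> - (1 / 2) * R2 - (3 / 4) * l7 - l8 + (3 / 2)" using lev7_11 lev7_14 lev7_5 nn(1) nn(2) nn(5) l7lb(1) l8lb(1) unfolding l6_def by (intro max.boundedI; linarith)
  have l6ub6: "l6 \<le> - (2 / 3) * R2 - (2 / 3) * R5 - l7 - (4 / 3) * l8 + 2" using lev7_10 lev7_14 lev7_5 nn(1) nn(2) nn(5) l7lb(1) l8lb(1) unfolding l6_def by (intro max.boundedI; linarith)
  have l6ub7: "l6 \<le> - 2 * R4 - 2 * R5 - l7 - 2 * l8 + 4" using lev7_12 lev7_6 nn(1) nn(4) nn(5) l7lb(1) l8lb(1) unfolding l6_def by (intro max.boundedI; linarith)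
  have l6ub8: "l6 \<le> - R4 - (1 / 2) * l7 - l8 + 2" using lev7_13 lev7_6 nn(1) nn(4) nn(5) l7lb(1) l8lb(1) unfolding l6_def by (intro max.boundedI; linarith)
  have l6ub9: "l6 \<le> - 2 * R1 - 2 * R2 + 6" using lev7_14 lev7_0 nn(1) nn(2) nn(5) l7lb(1) l8lb(1) unfolding l6_def by (intro max.boundedI; linarith)
  have l6ub10: "l6 \<le> - 2 * R3 - 2 * R4 - 2 * l8 + 6" using lev7_15 lev7_1 nn(1) nn(3) nn(4) nn(5) l7lb(1) l8lb(1) unfolding l6_def by (intro max.boundedI; linarith)
  have lev6_0: "2 * R1 - l6 - l7 - 2 * l8 \<le> 2" using l6lb(2) nn(1) l6lb(1) l7lb(1) l8lb(1) by linarith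
  have lev6_1: "2 * R3 + l6 + l7 + 2 * l8 \<le> 4" using l6ub0 nn(3) l6lb(1) l7lb(1) l8lb(1) by linarith
  have lev6_2: "R1 + R2 + R5 \<le> 3" using lev7_0 nn(1) nn(2) nn(5) by linarith
  have lev6_3: "R3 + R4 + R5 + l8 \<le> 3" using lev7_1 nn(3) nn(4) nn(5) l8lb(1) by linarith
  have lev6_4: "2 * R2 + 2 * R4 + 2 * R5 + l6 + 2 * l8 \<le> 6" using l6ub1 nn(2) nn(4) nn(5) l6lb(1) l8lb(1) by linarith
  have lev6_5: "R2 + R4 + l6 + l8 \<le> 3" using l6ub2 nn(2) nn(4) l6lb(1) l8lb(1) by linarith
  have lev6_6: "2 * R5 + l6 + 2 * l7 + 2 * l8 \<le> 2" using l6ub3 nn(5) l6lb(1) l7lb(1) l8lb(1) by linarith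
  have lev6_7: "l6 + l7 + l8 \<le> 1" using l6ub4 l6lb(1) l7lb(1) l8lb(1) by linarith
  have lev6_8: "2 * R2 + 4 * l6 + 3 * l7 + 4 * l8 \<le> 6" using l6ub5 nn(2) l6lb(1) l7lb(1) l8lb(1) by linarith
  have lev6_9: "2 * R2 + 2 * R5 + 3 * l6 + 3 * l7 + 4 * l8 \<le> 6" using l6ub6 nn(2) nn(5) l6lb(1) l7lb(1) l8lb(1) by linarith
  have lev6_10: "2 * R4 + 2 * R5 + l6 + l7 + 2 * l8 \<le> 4" using l6ub7 nn(4) nn(5) l6lb(1) l7lb(1) l8lb(1) by linarith
  have lev6_11: "2 * R4 + 2 * l6 + l7 + 2 * l8 \<le> 4" using l6ub8 nn(4) l6lb(1) l7lb(1) l8lb(1) by linarith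
  have lev6_12: "2 * R1 + 2 * R2 + l6 \<le> 6" using l6ub9 nn(1) nn(2) l6lb(1) by linarith
  have lev6_13: "2 * R3 + 2 * R4 + l6 + 2 * l8 \<le> 6" using l6ub10 nn(3) nn(4) l6lb(1) l8lb(1) by linarith
  define l5 :: real where "l5 = max (2 * R1 + R2 - l6 - (3 / 2) * l7 - 2 * l8 - 3) (max (2 * R3 + R4 - (1 / 2) * l7 + l8 - 4) (max (R1 + R2 + R3 + R4 + R5 - (1 / 2) * l6 - l7 - 5) 0))"
  have l5lb: "0 \<le> l5" "2 * R1 + R2 - l6 - (3 / 2) * l7 - 2 * l8 - 3 \<le> l5" "2 * R3 + R4 - (1 / 2) * l7 + l8 - 4 \<le> l5" "R1 + R2 + R3 + R4 + R5 - (1 / 2) * l6 - l7 - 5 \<le> l5" by (simp_all add: l5_def)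
  have l5ub0: "l5 \<le> - R5 - (1 / 2) * l6 - l7 - l8 + 1" using lev6_0 lev6_2 lev6_1 lev6_3 lev6_6 nn(1) nn(2) nn(3) nn(4) nn(5) l6lb(1) l7lb(1) l8lb(1) unfolding l5_def by (intro max.boundedI; linarith)
  have l5ub1: "l5 \<le> - l6 - l7 - l8 + 1" using lev6_0 lev6_12 lev6_1 lev6_13 lev6_3 lev6_7 nn(1) nn(2) nn(3) nn(4) nn(5) l6lb(1) l7lb(1) l8lb(1) unfolding l5_def by (intro max.boundedI; linarith)
  have l5ub2: "l5 \<le> - R2 - 2 * l6 - (3 / 2) * l7 - 2 * l8 + 3" using lev6_12 lev6_1 lev6_5 lev6_4 lev6_8 nn(1) nn(2) nn(3) nn(4) nn(5) l6lb(1) l7lb(1) l8lb(1) unfolding l5_def by (intro max.boundedI; linarith)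
  have l5ub3: "l5 \<le> - R2 - R5 - (3 / 2) * l6 - (3 / 2) * l7 - 2 * l8 + 3" using lev6_2 lev6_12 lev6_1 lev6_4 lev6_9 nn(1) nn(2) nn(3) nn(4) nn(5) l6lb(1) l7lb(1) l8lb(1) unfolding l5_def by (intro max.boundedI; linarith)
  have l5ub4: "l5 \<le> - R4 - R5 - (1 / 2) * l6 - (1 / 2) * l7 - l8 + 2" using lev6_0 lev6_4 lev6_3 lev6_13 lev6_10 nn(1) nn(2) nn(3) nn(4) nn(5) l6lb(1) l7lb(1) l8lb(1) unfolding l5_def by (intro max.boundedI; linarith)
  have l5ub5: "l5 \<le> - R4 - l6 - (1 / 2) * l7 - l8 + 2" using lev6_0 lev6_5 lev6_13 lev6_4 lev6_11 nn(1) nn(2) nn(3) nn(4) nn(5) l6lb(1) l7lb(1) l8lb(1) unfolding l5_def by (intro max.boundedI; linarith)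
  have lev5_0: "2 * R1 - l6 - l7 - 2 * l8 \<le> 2" using lev6_0 nn(1) l6lb(1) l7lb(1) l8lb(1) by linarith
  have lev5_1: "4 * R1 + 2 * R2 - 2 * l5 - 2 * l6 - 3 * l7 - 4 * l8 \<le> 6" using l5lb(2) nn(1) nn(2) l5lb(1) l6lb(1) l7lb(1) l8lb(1) by linarith
  have lev5_2: "2 * R5 + 2 * l5 + l6 + 2 * l7 + 2 * l8 \<le> 2" using l5ub0 nn(5) l5lb(1) l6lb(1) l7lb(1) l8lb(1) by linarith
  have lev5_3: "2 * R3 + l6 + l7 + 2 * l8 \<le> 4" using lev6_1 nn(3) l6lb(1) l7lb(1) l8lb(1) by linarith
  have lev5_4: "R1 + R2 + R5 \<le> 3" using lev6_2 nn(1) nn(2) nn(5) by linarith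
  have lev5_5: "R3 + R4 + R5 + l8 \<le> 3" using lev6_3 nn(3) nn(4) nn(5) l8lb(1) by linarith
  have lev5_6: "4 * R3 + 2 * R4 - 2 * l5 - l7 + 2 * l8 \<le> 8" using l5lb(3) nn(3) nn(4) l5lb(1) l7lb(1) l8lb(1) by linarith
  have lev5_7: "2 * R2 + 2 * R4 + 2 * R5 + l6 + 2 * l8 \<le> 6" using lev6_4 nn(2) nn(4) nn(5) l6lb(1) l8lb(1) by linarith
  have lev5_8: "l5 + l6 + l7 + l8 \<le> 1" using l5ub1 l5lb(1) l6lb(1) l7lb(1) l8lb(1) by linarith
  have lev5_9: "2 * R2 + 2 * l5 + 4 * l6 + 3 * l7 + 4 * l8 \<le> 6" using l5ub2 nn(2) l5lb(1) l6lb(1) l7lb(1) l8lb(1) by linarith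
  have lev5_10: "2 * R2 + 2 * R5 + 2 * l5 + 3 * l6 + 3 * l7 + 4 * l8 \<le> 6" using l5ub3 nn(2) nn(5) l5lb(1) l6lb(1) l7lb(1) l8lb(1) by linarith
  have lev5_11: "2 * R4 + 2 * R5 + 2 * l5 + l6 + l7 + 2 * l8 \<le> 4" using l5ub4 nn(4) nn(5) l5lb(1) l6lb(1) l7lb(1) l8lb(1) by linarith
  have lev5_12: "2 * R4 + 2 * l5 + 2 * l6 + l7 + 2 * l8 \<le> 4" using l5ub5 nn(4) l5lb(1) l6lb(1) l7lb(1) l8lb(1) by linarith
  have lev5_13: "R2 + R4 + l6 + l8 \<le> 3" using lev6_5 nn(2) nn(4) l6lb(1) l8lb(1) by linarith
  have lev5_14: "2 * R1 + 2 * R2 + 2 * R3 + 2 * R4 + 2 * R5 - 2 * l5 - l6 - 2 * l7 \<le> 10" using l5lb(4) nn(1) nn(2) nn(3) nn(4) nn(5) l5lb(1) l6lb(1) l7lb(1) by linarith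
  define l4 :: real where "l4 = max (R1 + R3 - l5 - l6 - l7 - l8 - 2) 0"
  have l4lb: "0 \<le> l4" "R1 + R3 - l5 - l6 - l7 - l8 - 2 \<le> l4" by (simp_all add: l4_def)
  have l4ub0: "l4 \<le> - R2 - R4 - R5 - (1 / 2) * l6 - l8 + 3" using lev5_14 lev5_7 nn(1) nn(2) nn(3) nn(4) nn(5) l5lb(1) l6lb(1) l7lb(1) l8lb(1) unfolding l4_def by (intro max.boundedI; linarith)
  have l4ub1: "l4 \<le> - l5 - l6 - l7 - l8 + 1" using lev5_0 lev5_3 lev5_8 nn(1) nn(3) l5lb(1) l6lb(1) l7lb(1) l8lb(1) unfolding l4_def by (intro max.boundedI; linarith)
  have l4ub2: "l4 \<le> - (1 / 2) * R2 - (1 / 2) * l5 - l6 - (3 / 4) * l7 - l8 + (3 / 2)" using lev5_1 lev5_3 lev5_9 nn(1) nn(2) nn(3) l5lb(1) l6lb(1) l7lb(1) l8lb(1) unfolding l4_def by (intro max.boundedI; linarith)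
  have l4ub3: "l4 \<le> - R2 - R5 - l5 - (3 / 2) * l6 - (3 / 2) * l7 - 2 * l8 + 3" using lev5_3 lev5_4 lev5_10 nn(1) nn(2) nn(3) nn(5) l5lb(1) l6lb(1) l7lb(1) l8lb(1) unfolding l4_def by (intro max.boundedI; linarith)
  have l4ub4: "l4 \<le> - R4 - R5 - l5 - (1 / 2) * l6 - (1 / 2) * l7 - l8 + 2" using lev5_0 lev5_5 lev5_11 nn(1) nn(3) nn(4) nn(5) l5lb(1) l6lb(1) l7lb(1) l8lb(1) unfolding l4_def by (intro max.boundedI; linarith)
  have l4ub5: "l4 \<le> - (1 / 2) * R4 - (1 / 2) * l5 - (1 / 2) * l6 - (1 / 4) * l7 - (1 / 2) * l8 + 1" using lev5_0 lev5_6 lev5_12 nn(1) nn(3) nn(4) l5lb(1) l6lb(1) l7lb(1) l8lb(1) unfolding l4_def by (intro max.boundedI; linarith)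
  have l4ub6: "l4 \<le> - (1 / 2) * R2 - (1 / 2) * R4 - (1 / 2) * l6 - (1 / 2) * l8 + (3 / 2)" using lev5_1 lev5_6 lev5_13 nn(1) nn(2) nn(3) nn(4) l5lb(1) l6lb(1) l7lb(1) l8lb(1) unfolding l4_def by (intro max.boundedI; linarith)
  have lev4_0: "R1 + R3 - l4 - l5 - l6 - l7 - l8 \<le> 2" using l4lb(2) nn(1) nn(3) l4lb(1) l5lb(1) l6lb(1) l7lb(1) l8lb(1) by linarith
  have lev4_1: "2 * R1 - l6 - l7 - 2 * l8 \<le> 2" using lev5_0 nn(1) l6lb(1) l7lb(1) l8lb(1) by linarith
  have lev4_2: "4 * R1 + 2 * R2 - 2 * l5 - 2 * l6 - 3 * l7 - 4 * l8 \<le> 6" using lev5_1 nn(1) nn(2) l5lb(1) l6lb(1) l7lb(1) l8lb(1) by linarith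
  have lev4_3: "2 * R2 + 2 * R4 + 2 * R5 + 2 * l4 + l6 + 2 * l8 \<le> 6" using l4ub0 nn(2) nn(4) nn(5) l4lb(1) l6lb(1) l8lb(1) by linarith
  have lev4_4: "2 * R5 + 2 * l5 + l6 + 2 * l7 + 2 * l8 \<le> 2" using lev5_2 nn(5) l5lb(1) l6lb(1) l7lb(1) l8lb(1) by linarith
  have lev4_5: "2 * R3 + l6 + l7 + 2 * l8 \<le> 4" using lev5_3 nn(3) l6lb(1) l7lb(1) l8lb(1) by linarith
  have lev4_6: "l4 + l5 + l6 + l7 + l8 \<le> 1" using l4ub1 l4lb(1) l5lb(1) l6lb(1) l7lb(1) l8lb(1) by linarith
  have lev4_7: "2 * R2 + 4 * l4 + 2 * l5 + 4 * l6 + 3 * l7 + 4 * l8 \<le> 6" using l4ub2 nn(2) l4lb(1) l5lb(1) l6lb(1) l7lb(1) l8lb(1) by linarith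
  have lev4_8: "2 * R2 + 2 * R5 + 2 * l4 + 2 * l5 + 3 * l6 + 3 * l7 + 4 * l8 \<le> 6" using l4ub3 nn(2) nn(5) l4lb(1) l5lb(1) l6lb(1) l7lb(1) l8lb(1) by linarith
  have lev4_9: "R1 + R2 + R5 \<le> 3" using lev5_4 nn(1) nn(2) nn(5) by linarith
  have lev4_10: "R3 + R4 + R5 + l8 \<le> 3" using lev5_5 nn(3) nn(4) nn(5) l8lb(1) by linarith
  have lev4_11: "2 * R4 + 2 * R5 + 2 * l4 + 2 * l5 + l6 + l7 + 2 * l8 \<le> 4" using l4ub4 nn(4) nn(5) l4lb(1) l5lb(1) l6lb(1) l7lb(1) l8lb(1) by linarith
  have lev4_12: "4 * R3 + 2 * R4 - 2 * l5 - l7 + 2 * l8 \<le> 8" using lev5_6 nn(3) nn(4) l5lb(1) l7lb(1) l8lb(1) by linarith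
  have lev4_13: "2 * R4 + 4 * l4 + 2 * l5 + 2 * l6 + l7 + 2 * l8 \<le> 4" using l4ub5 nn(4) l4lb(1) l5lb(1) l6lb(1) l7lb(1) l8lb(1) by linarith
  have lev4_14: "R2 + R4 + 2 * l4 + l6 + l8 \<le> 3" using l4ub6 nn(2) nn(4) l4lb(1) l6lb(1) l8lb(1) by linarith
  define l3 :: real where "l3 = max (R3 + R4 - l5 - (1 / 2) * l6 - l7 - 2) (max (R4 + l4 - (1 / 2) * l7 - 1) (max ((1 / 2) * R2 + R4 + l4 - (1 / 2) * l5 - (3 / 4) * l7 - (3 / 2)) 0))"
  have l3lb: "0 \<le> l3" "R3 + R4 - l5 - (1 / 2) * l6 - l7 - 2 \<le> l3" "R4 + l4 - (1 / 2) * l7 - 1 \<le> l3" "(1 / 2) * R2 + R4 + l4 - (1 / 2) * l5 - (3 / 4) * l7 - (3 / 2) \<le> l3" by (simp_all add: l3_def)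
  have l3ub0: "l3 \<le> - R5 - l5 - (1 / 2) * l6 - l7 - l8 + 1" using lev4_10 lev4_11 lev4_3 lev4_4 nn(2) nn(3) nn(4) nn(5) l4lb(1) l5lb(1) l6lb(1) l7lb(1) l8lb(1) unfolding l3_def by (intro max.boundedI; linarith)
  have l3ub1: "l3 \<le> - R3 - (1 / 2) * l6 - (1 / 2) * l7 - l8 + 2" using lev4_12 lev4_13 lev4_14 lev4_5 nn(2) nn(3) nn(4) l4lb(1) l5lb(1) l6lb(1) l7lb(1) l8lb(1) unfolding l3_def by (intro max.boundedI; linarith)
  have l3ub2: "l3 \<le> - l4 - l5 - l6 - l7 - l8 + 1" using lev4_12 lev4_13 lev4_14 lev4_6 nn(2) nn(3) nn(4) l4lb(1) l5lb(1) l6lb(1) l7lb(1) l8lb(1) unfolding l3_def by (intro max.boundedI; linarith)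
  have l3ub3: "l3 \<le> - (1 / 2) * R2 - l4 - (1 / 2) * l5 - l6 - (3 / 4) * l7 - l8 + (3 / 2)" using lev4_12 lev4_14 lev4_13 lev4_7 nn(2) nn(3) nn(4) l4lb(1) l5lb(1) l6lb(1) l7lb(1) l8lb(1) unfolding l3_def by (intro max.boundedI; linarith)
  have l3ub4: "l3 \<le> - (1 / 2) * R2 - (1 / 2) * R5 - (1 / 2) * l4 - (1 / 2) * l5 - (3 / 4) * l6 - (3 / 4) * l7 - l8 + (3 / 2)" using lev4_3 lev4_12 lev4_11 lev4_14 lev4_8 nn(2) nn(3) nn(4) nn(5) l4lb(1) l5lb(1) l6lb(1) l7lb(1) l8lb(1) unfolding l3_def by (intro max.boundedI; linarith)
  have l3ub5: "l3 \<le> - R1 - R2 - R5 + 3" using lev4_0 lev4_3 lev4_2 lev4_11 lev4_9 nn(1) nn(2) nn(3) nn(4) nn(5) l4lb(1) l5lb(1) l6lb(1) l7lb(1) l8lb(1) unfolding l3_def by (intro max.boundedI; linarith)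
  have lev3_0: "2 * R5 + 2 * l3 + 2 * l5 + l6 + 2 * l7 + 2 * l8 \<le> 2" using l3ub0 nn(5) l3lb(1) l5lb(1) l6lb(1) l7lb(1) l8lb(1) by linarith
  have lev3_1: "2 * R3 + 2 * l3 + l6 + l7 + 2 * l8 \<le> 4" using l3ub1 nn(3) l3lb(1) l6lb(1) l7lb(1) l8lb(1) by linarith
  have lev3_2: "l3 + l4 + l5 + l6 + l7 + l8 \<le> 1" using l3ub2 l3lb(1) l4lb(1) l5lb(1) l6lb(1) l7lb(1) l8lb(1) by linarith
  have lev3_3: "2 * R2 + 4 * l3 + 4 * l4 + 2 * l5 + 4 * l6 + 3 * l7 + 4 * l8 \<le> 6" using l3ub3 nn(2) l3lb(1) l4lb(1) l5lb(1) l6lb(1) l7lb(1) l8lb(1) by linarith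
  have lev3_4: "2 * R2 + 2 * R5 + 4 * l3 + 2 * l4 + 2 * l5 + 3 * l6 + 3 * l7 + 4 * l8 \<le> 6" using l3ub4 nn(2) nn(5) l3lb(1) l4lb(1) l5lb(1) l6lb(1) l7lb(1) l8lb(1) by linarith
  have lev3_5: "R1 + R3 - l4 - l5 - l6 - l7 - l8 \<le> 2" using lev4_0 nn(1) nn(3) l4lb(1) l5lb(1) l6lb(1) l7lb(1) l8lb(1) by linarith
  have lev3_6: "2 * R3 + 2 * R4 - 2 * l3 - 2 * l5 - l6 - 2 * l7 \<le> 4" using l3lb(2) nn(3) nn(4) l3lb(1) l5lb(1) l6lb(1) l7lb(1) by linarith
  have lev3_7: "2 * R1 - l6 - l7 - 2 * l8 \<le> 2" using lev4_1 nn(1) l6lb(1) l7lb(1) l8lb(1) by linarith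
  have lev3_8: "2 * R4 - 2 * l3 + 2 * l4 - l7 \<le> 2" using l3lb(3) nn(4) l3lb(1) l4lb(1) l7lb(1) by linarith
  have lev3_9: "4 * R1 + 2 * R2 - 2 * l5 - 2 * l6 - 3 * l7 - 4 * l8 \<le> 6" using lev4_2 nn(1) nn(2) l5lb(1) l6lb(1) l7lb(1) l8lb(1) by linarith
  have lev3_10: "2 * R2 + 4 * R4 - 4 * l3 + 4 * l4 - 2 * l5 - 3 * l7 \<le> 6" using l3lb(4) nn(2) nn(4) l3lb(1) l4lb(1) l5lb(1) l7lb(1) by linarith
  have lev3_11: "R1 + R2 + R5 + l3 \<le> 3" using l3ub5 nn(1) nn(2) nn(5) l3lb(1) by linarith
  have lev3_12: "2 * R2 + 2 * R4 + 2 * R5 + 2 * l4 + l6 + 2 * l8 \<le> 6" using lev4_3 nn(2) nn(4) nn(5) l4lb(1) l6lb(1) l8lb(1) by linarith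
  define l2 :: real where "l2 = max (R1 - l3 - l4 - l5 - (3 / 2) * l6 - (3 / 2) * l7 - 2 * l8) (max (R4 - 2 * l3 - l5 - l6 - (3 / 2) * l7 - l8) 0)"
  have l2lb: "0 \<le> l2" "R1 - l3 - l4 - l5 - (3 / 2) * l6 - (3 / 2) * l7 - 2 * l8 \<le> l2" "R4 - 2 * l3 - l5 - l6 - (3 / 2) * l7 - l8 \<le> l2" by (simp_all add: l2_def)
  have l2ub0: "l2 \<le> - R3 - l3 - (1 / 2) * l6 - (1 / 2) * l7 - l8 + 2" using lev3_5 lev3_6 lev3_1 nn(1) nn(3) nn(4) l3lb(1) l4lb(1) l5lb(1) l6lb(1) l7lb(1) l8lb(1) unfolding l2_def by (intro max.boundedI; linarith)
  have l2ub1: "l2 \<le> - l3 - l4 - l5 - l6 - l7 - l8 + 1" using lev3_7 lev3_8 lev3_2 nn(1) nn(4) l3lb(1) l4lb(1) l5lb(1) l6lb(1) l7lb(1) l8lb(1) unfolding l2_def by (intro max.boundedI; linarith)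
  have l2ub2: "l2 \<le> - (1 / 2) * R2 - l3 - l4 - (1 / 2) * l5 - l6 - (3 / 4) * l7 - l8 + (3 / 2)" using lev3_9 lev3_10 lev3_3 nn(1) nn(2) nn(4) l3lb(1) l4lb(1) l5lb(1) l6lb(1) l7lb(1) l8lb(1) unfolding l2_def by (intro max.boundedI; linarith)
  have l2ub3: "l2 \<le> - R2 - R5 - 2 * l3 - l4 - l5 - (3 / 2) * l6 - (3 / 2) * l7 - 2 * l8 + 3" using lev3_11 lev3_12 lev3_4 nn(1) nn(2) nn(4) nn(5) l3lb(1) l4lb(1) l5lb(1) l6lb(1) l7lb(1) l8lb(1) unfolding l2_def by (intro max.boundedI; linarith)
  have lev2_0: "2 * R1 - 2 * l2 - 2 * l3 - 2 * l4 - 2 * l5 - 3 * l6 - 3 * l7 - 4 * l8 \<le> 0" using l2lb(2) nn(1) l2lb(1) l3lb(1) l4lb(1) l5lb(1) l6lb(1) l7lb(1) l8lb(1) by linarith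
  have lev2_1: "2 * R4 - 2 * l2 - 4 * l3 - 2 * l5 - 2 * l6 - 3 * l7 - 2 * l8 \<le> 0" using l2lb(3) nn(4) l2lb(1) l3lb(1) l5lb(1) l6lb(1) l7lb(1) l8lb(1) by linarith
  have lev2_2: "2 * R3 + 2 * l2 + 2 * l3 + l6 + l7 + 2 * l8 \<le> 4" using l2ub0 nn(3) l2lb(1) l3lb(1) l6lb(1) l7lb(1) l8lb(1) by linarith
  have lev2_3: "l2 + l3 + l4 + l5 + l6 + l7 + l8 \<le> 1" using l2ub1 l2lb(1) l3lb(1) l4lb(1) l5lb(1) l6lb(1) l7lb(1) l8lb(1) by linarith
  have lev2_4: "2 * R5 + 2 * l3 + 2 * l5 + l6 + 2 * l7 + 2 * l8 \<le> 2" using lev3_0 nn(5) l3lb(1) l5lb(1) l6lb(1) l7lb(1) l8lb(1) by linarith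
  have lev2_5: "2 * R2 + 4 * l2 + 4 * l3 + 4 * l4 + 2 * l5 + 4 * l6 + 3 * l7 + 4 * l8 \<le> 6" using l2ub2 nn(2) l2lb(1) l3lb(1) l4lb(1) l5lb(1) l6lb(1) l7lb(1) l8lb(1) by linarith
  have lev2_6: "2 * R2 + 2 * R5 + 2 * l2 + 4 * l3 + 2 * l4 + 2 * l5 + 3 * l6 + 3 * l7 + 4 * l8 \<le> 6" using l2ub3 nn(2) nn(5) l2lb(1) l3lb(1) l4lb(1) l5lb(1) l6lb(1) l7lb(1) l8lb(1) by linarith
  define l1 :: real where "l1 = max (R2 + l2 + l3 + l4 + l6 + (1 / 2) * l7 + l8 - 2) 0"
  have l1lb: "0 \<le> l1" "R2 + l2 + l3 + l4 + l6 + (1 / 2) * l7 + l8 - 2 \<le> l1" by (simp_all add: l1_def)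
  have l1ub0: "l1 \<le> - l2 - l3 - l4 - l5 - l6 - l7 - l8 + 1" using lev2_5 lev2_3 nn(2) l2lb(1) l3lb(1) l4lb(1) l5lb(1) l6lb(1) l7lb(1) l8lb(1) unfolding l1_def by (intro max.boundedI; linarith)
  have l1ub1: "l1 \<le> - R5 - l3 - l5 - (1 / 2) * l6 - l7 - l8 + 1" using lev2_6 lev2_4 nn(2) nn(5) l2lb(1) l3lb(1) l4lb(1) l5lb(1) l6lb(1) l7lb(1) l8lb(1) unfolding l1_def by (intro max.boundedI; linarith)
  have lev1_0: "2 * R1 - 2 * l2 - 2 * l3 - 2 * l4 - 2 * l5 - 3 * l6 - 3 * l7 - 4 * l8 \<le> 0" using lev2_0 nn(1) l2lb(1) l3lb(1) l4lb(1) l5lb(1) l6lb(1) l7lb(1) l8lb(1) by linarith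
  have lev1_1: "2 * R4 - 2 * l2 - 4 * l3 - 2 * l5 - 2 * l6 - 3 * l7 - 2 * l8 \<le> 0" using lev2_1 nn(4) l2lb(1) l3lb(1) l5lb(1) l6lb(1) l7lb(1) l8lb(1) by linarith
  have lev1_2: "l1 + l2 + l3 + l4 + l5 + l6 + l7 + l8 \<le> 1" using l1ub0 l1lb(1) l2lb(1) l3lb(1) l4lb(1) l5lb(1) l6lb(1) l7lb(1) l8lb(1) by linarith
  have lev1_3: "2 * R2 - 2 * l1 + 2 * l2 + 2 * l3 + 2 * l4 + 2 * l6 + l7 + 2 * l8 \<le> 4" using l1lb(2) nn(2) l1lb(1) l2lb(1) l3lb(1) l4lb(1) l6lb(1) l7lb(1) l8lb(1) by linarith
  have lev1_4: "2 * R3 + 2 * l2 + 2 * l3 + l6 + l7 + 2 * l8 \<le> 4" using lev2_2 nn(3) l2lb(1) l3lb(1) l6lb(1) l7lb(1) l8lb(1) by linarith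
  have lev1_5: "2 * R5 + 2 * l1 + 2 * l3 + 2 * l5 + l6 + 2 * l7 + 2 * l8 \<le> 2" using l1ub1 nn(5) l1lb(1) l3lb(1) l5lb(1) l6lb(1) l7lb(1) l8lb(1) by linarith
  define l0 :: real where "l0 = max ((1 / 2) * R2 - (3 / 2) * l1 - (1 / 2) * l2 - (1 / 2) * l3 - (1 / 2) * l4 - l5 - (1 / 2) * l6 - (3 / 4) * l7 - (1 / 2) * l8) (max ((1 / 2) * R3 - l1 - (1 / 2) * l2 - (1 / 2) * l3 - l4 - l5 - (3 / 4) * l6 - (3 / 4) * l7 - (1 / 2) * l8) (max (R5 - l2 - l4 - (1 / 2) * l6) 0))"
  have l0lb: "0 \<le> l0" "(1 / 2) * R2 - (3 / 2) * l1 - (1 / 2) * l2 - (1 / 2) * l3 - (1 / 2) * l4 - l5 - (1 / 2) * l6 - (3 / 4) * l7 - (1 / 2) * l8 \<le> l0" "(1 / 2) * R3 - l1 - (1 / 2) * l2 - (1 / 2) * l3 - l4 - l5 - (3 / 4) * l6 - (3 / 4) * l7 - (1 / 2) * l8 \<le> l0" "R5 - l2 - l4 - (1 / 2) * l6 \<le> l0" by (simp_all add: l0_def)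
  have l0ub0: "l0 \<le> - l1 - l2 - l3 - l4 - l5 - l6 - l7 - l8 + 1" using lev1_3 lev1_4 lev1_5 lev1_2 nn(2) nn(3) nn(5) l1lb(1) l2lb(1) l3lb(1) l4lb(1) l5lb(1) l6lb(1) l7lb(1) l8lb(1) unfolding l0_def by (intro max.boundedI; linarith)
  have lev0_0: "2 * R1 - 2 * l2 - 2 * l3 - 2 * l4 - 2 * l5 - 3 * l6 - 3 * l7 - 4 * l8 \<le> 0" using lev1_0 nn(1) l2lb(1) l3lb(1) l4lb(1) l5lb(1) l6lb(1) l7lb(1) l8lb(1) by linarith
  have lev0_1: "2 * R2 - 4 * l0 - 6 * l1 - 2 * l2 - 2 * l3 - 2 * l4 - 4 * l5 - 2 * l6 - 3 * l7 - 2 * l8 \<le> 0" using l0lb(2) nn(2) l0lb(1) l1lb(1) l2lb(1) l3lb(1) l4lb(1) l5lb(1) l6lb(1) l7lb(1) l8lb(1) by linarith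
  have lev0_2: "2 * R3 - 4 * l0 - 4 * l1 - 2 * l2 - 2 * l3 - 4 * l4 - 4 * l5 - 3 * l6 - 3 * l7 - 2 * l8 \<le> 0" using l0lb(3) nn(3) l0lb(1) l1lb(1) l2lb(1) l3lb(1) l4lb(1) l5lb(1) l6lb(1) l7lb(1) l8lb(1) by linarith
  have lev0_3: "2 * R4 - 2 * l2 - 4 * l3 - 2 * l5 - 2 * l6 - 3 * l7 - 2 * l8 \<le> 0" using lev1_1 nn(4) l2lb(1) l3lb(1) l5lb(1) l6lb(1) l7lb(1) l8lb(1) by linarith
  have lev0_4: "2 * R5 - 2 * l0 - 2 * l2 - 2 * l4 - l6 \<le> 0" using l0lb(4) nn(5) l0lb(1) l2lb(1) l4lb(1) l6lb(1) by linarith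
  have lev0_5: "l0 + l1 + l2 + l3 + l4 + l5 + l6 + l7 + l8 \<le> 1" using l0ub0 l0lb(1) l1lb(1) l2lb(1) l3lb(1) l4lb(1) l5lb(1) l6lb(1) l7lb(1) l8lb(1) by linarith
  show ?thesis
    apply (rule exI[of _ l0])
    apply (rule exI[of _ l1])
    apply (rule exI[of _ l2])
    apply (rule exI[of _ l3])
    apply (rule exI[of _ l4])
    apply (rule exI[of _ l5])
    apply (rule exI[of _ l6])
    apply (rule exI[of _ l7])
    apply (rule exI[of _ l8])
    apply (intro conjI)
    using lev0_0 lev0_1 lev0_2 lev0_3 lev0_4 lev0_5 l0lb(1) l1lb(1) l2lb(1) l3lb(1) l4lb(1) l5lb(1) l6lb(1) l7lb(1) l8lb(1) by linarith+
qed

definition good :: "(nat \<Rightarrow> nat set) \<Rightarrow> (nat \<Rightarrow> nat set) \<Rightarrow> (nat \<Rightarrow> real) \<Rightarrow> nat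
   \<Rightarrow> (nat \<Rightarrow> (nat \<Rightarrow> nat) \<Rightarrow> nat) \<Rightarrow> (nat \<Rightarrow> (nat \<Rightarrow> nat) \<Rightarrow> (nat \<Rightarrow> nat) \<Rightarrow> nat) \<Rightarrow> (nat \<Rightarrow> nat) set" where
  "good S A R n f g = {m \<in> msg_tuples 5 n R. \<forall>j\<in>{1..5}. g j (broadcast 3 S f m) (restrict m (A j)) = m j}"

lemma card_idx: "card (idx_set n r) = 2 ^ nat \<lfloor>real n * r\<rfloor>" by (simp add: idx_set_def)

lemma finite_msg: "finite (msg_tuples N n R)" unfolding msg_tuples_def idx_set_def
  by (intro finite_PiE) auto

lemma card_msg: "card (msg_tuples N n R) = (\<Prod>j\<in>{1..N}. 2 ^ nat \<lfloor>real n * R j\<rfloor>)"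
  unfolding msg_tuples_def by (simp add: card_PiE card_idx)

lemma error_good:
  "error_prob 5 3 S A R n f g = 1 - real (card (good S A R n f g)) / real (card (msg_tuples 5 n R))"
proof -
  let ?M = "msg_tuples 5 n R"
  have E: "{m \<in> ?M. \<exists>j\<in>{1..5}. g j (broadcast 3 S f m) (restrict m (A j)) \<noteq> m j} = ?M - good S A R n f g"
    unfolding good_def by auto
  have sub: "good S A R n f g \<subseteq> ?M" unfolding good_def by auto
  have fin: "finite ?M" by (rule finite_msg)
  have pos: "card ?M > 0" unfolding card_msg by (simp add: prod_pos)
  have "card (?M - good S A R n f g) = card ?M - card (good S A R n f g)"
    using card_Diff_subset[OF finite_subset[OF sub fin] sub] .
  moreover have "card (good S A R n f g) \<le> card ?M" using card_mono[OF fin sub] .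
  ultimately have "real (card (?M - good S A R n f g)) = real (card ?M) - real (card (good S A R n f g))"
    by simp
  thus ?thesis unfolding error_prob_def E using pos by (simp add: diff_divide_distrib)
qed

definition injprop :: "(nat \<Rightarrow> nat set) \<Rightarrow> (nat \<Rightarrow> nat set) \<Rightarrow> (nat \<Rightarrow> real) \<Rightarrow> nat
   \<Rightarrow> (nat \<Rightarrow> (nat \<Rightarrow> nat) \<Rightarrow> nat) \<Rightarrow> (nat \<Rightarrow> (nat \<Rightarrow> nat) \<Rightarrow> (nat \<Rightarrow> nat) \<Rightarrow> nat) \<Rightarrow> nat set \<Rightarrow> nat set \<Rightarrow> bool" where
  "injprop S A R n f g Fx s \<longleftrightarrow> (\<forall>m\<in>good S A R n f g. \<forall>m'\<in>good S A R n f g.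
      (\<forall>i\<in>Fx. m i = m' i) \<longrightarrow> (\<forall>k\<in>s. f k (restrict m (S k)) = f k (restrict m' (S k))) \<longrightarrow> m = m')"

lemma card_good_bound:
  assumes Cn: "\<forall>k\<in>{1..3}. C k = 1" and v: "valid_code 5 3 S C R n f"
    and Fx: "Fx \<subseteq> {1..5}" and s: "s \<subseteq> {1..3}" and ip: "injprop S A R n f g Fx s"
  shows "card (good S A R n f g) \<le> (\<Prod>j\<in>Fx. 2 ^ nat \<lfloor>real n * R j\<rfloor>) * (2 ^ n) ^ card s"
proof -
  let ?key = "\<lambda>m. (restrict m Fx, restrict (\<lambda>k. f k (restrict m (S k))) s)"
  let ?X = "PiE Fx (\<lambda>j. idx_set n (R j)) \<times> PiE s (\<lambda>k. {1..(2::nat)^n})"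
  have inj: "inj_on ?key (good S A R n f g)"
  proof (rule inj_onI)
    fix m m' assume m: "m \<in> good S A R n f g" and m': "m' \<in> good S A R n f g" and e: "?key m = ?key m'"
    from e have a: "\<forall>i\<in>Fx. m i = m' i" by (metis (mono_tags, lifting) fst_conv restrict_apply')
    from e have b: "\<forall>k\<in>s. f k (restrict m (S k)) = f k (restrict m' (S k))"
      by (metis (mono_tags, lifting) snd_conv restrict_apply')
    show "m = m'" using ip m m' a b unfolding injprop_def by blast
  qed
  have img: "?key ` good S A R n f g \<subseteq> ?X"
  proof
    fix x assume "x \<in> ?key ` good S A R n f g"
    then obtain m where m: "m \<in> good S A R n f g" and x: "x = ?key m" by blast
    have mM: "m \<in> msg_tuples 5 n R" using m unfolding good_def by auto
    have "restrict m Fx \<in> PiE Fx (\<lambda>j. idx_set n (R j))"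
      using mM Fx unfolding msg_tuples_def by (auto simp: PiE_iff)
    moreover have "restrict (\<lambda>k. f k (restrict m (S k))) s \<in> PiE s (\<lambda>k. {1..(2::nat)^n})"
    proof -
      have "f k (restrict m (S k)) \<in> {1..2^n}" if "k \<in> s" for k
      proof -
        have k: "k \<in> {1..3}" using s that by auto
        have "f k (restrict m (S k)) \<in> idx_set n (C k)" using v mM k unfolding valid_code_def by blast
        thus ?thesis using Cn k by (simp add: idx_set_def)
      qed
      thus ?thesis by auto
    qed
    ultimately show "x \<in> ?X" using x by auto
  qed
  have fF: "finite Fx" using Fx finite_subset by blast
  have fs: "finite s" using s finite_subset by blast
  have finX: "finite ?X" unfolding idx_set_def using fF fs by (intro finite_cartesian_product finite_PiE) auto
  have "card (good S A R n f g) = card (?key ` good S A R n f g)" using card_image[OF inj] by simp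
  also have "\<dots> \<le> card ?X" by (rule card_mono[OF finX img])
  also have "\<dots> = (\<Prod>j\<in>Fx. 2 ^ nat \<lfloor>real n * R j\<rfloor>) * (2 ^ n) ^ card s"
    using Fx s by (simp add: card_cartesian_product card_PiE card_idx finite_subset)
  finally show ?thesis .
qed

lemma ratio_bound:
  fixes R :: "nat \<Rightarrow> real"
  assumes Cn: "\<forall>k\<in>{1..3}. C k = 1" and v: "valid_code 5 3 S C R n f"
    and Fx: "Fx \<subseteq> {1..5}" and s: "s \<subseteq> {1..3}" and ip: "injprop S A R n f g Fx s"
    and Rnn: "\<forall>j\<in>{1..5}. R j \<ge> 0"
  shows "real (card (good S A R n f g)) / real (card (msg_tuples 5 n R))
     \<le> 2 powr (real n * card s - real n * (\<Sum>j\<in>{1..5} - Fx. R j) + 5)"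
proof -
  define b where "b = (\<lambda>j. nat \<lfloor>real n * R j\<rfloor>)"
  define D where "D = {1..5} - Fx"
  have fF: "finite Fx" using Fx finite_subset by blast
  have fD: "finite D" unfolding D_def by simp
  have U: "{1..5} = Fx \<union> D" "Fx \<inter> D = {}" using Fx unfolding D_def by auto
  define PF where "PF = (\<Prod>j\<in>Fx. (2::nat) ^ b j)"
  have PFpos: "PF > 0" unfolding PF_def by (simp add: prod_pos)
  have cM: "card (msg_tuples 5 n R) = PF * 2 ^ (\<Sum>j\<in>D. b j)"
  proof -
    have "card (msg_tuples 5 n R) = (\<Prod>j\<in>{1..5}. (2::nat) ^ b j)" unfolding card_msg b_def ..
    also have "\<dots> = (\<Prod>j\<in>Fx \<union> D. (2::nat) ^ b j)" using U(1) by simp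
    also have "\<dots> = PF * (\<Prod>j\<in>D. (2::nat) ^ b j)" unfolding PF_def by (rule prod.union_disjoint[OF fF fD U(2)])
    finally show ?thesis by (simp add: power_sum)
  qed
  have cG: "card (good S A R n f g) \<le> PF * (2 ^ n) ^ card s"
    using card_good_bound[OF Cn v Fx s ip] unfolding PF_def b_def .
  have "real (card (good S A R n f g)) / real (card (msg_tuples 5 n R))
      \<le> real (PF * (2 ^ n) ^ card s) / real (PF * 2 ^ (\<Sum>j\<in>D. b j))"
  proof -
    have "real (card (good S A R n f g)) \<le> real (PF * (2 ^ n) ^ card s)" using cG by (simp only: of_nat_le_iff)
    thus ?thesis unfolding cM by (intro divide_right_mono) auto
  qed
  also have "\<dots> = 2 ^ (n * card s) / 2 ^ (\<Sum>j\<in>D. b j)"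
    using PFpos by (simp add: power_mult)
  also have "\<dots> = 2 powr (real (n * card s) - real (\<Sum>j\<in>D. b j))"
    unfolding powr_diff by (simp only: powr_realpow[of 2] zero_less_numeral)
  also have "\<dots> \<le> 2 powr (real n * card s - real n * (\<Sum>j\<in>{1..5} - Fx. R j) + 5)"
  proof (rule powr_mono)
    have bj: "real (b j) \<ge> real n * R j - 1" if "j \<in> D" for j
    proof -
      have "R j \<ge> 0" using Rnn that unfolding D_def by auto
      hence "real n * R j \<ge> 0" by simp
      thus ?thesis unfolding b_def by linarith
    qed
    have "real (\<Sum>j\<in>D. b j) = (\<Sum>j\<in>D. real (b j))" by simp
    also have "\<dots> \<ge> (\<Sum>j\<in>D. real n * R j - 1)" using bj by (intro sum_mono) auto
    finally have s1: "real (\<Sum>j\<in>D. b j) \<ge> real n * (\<Sum>j\<in>D. R j) - real (card D)"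
      by (simp add: sum_subtractf sum_distrib_left)
    have "card D \<le> card {1..5::nat}" unfolding D_def by (intro card_mono) auto
    hence "real (card D) \<le> 5" by simp
    thus "real (n * card s) - real (\<Sum>j\<in>D. b j) \<le> real n * card s - real n * (\<Sum>j\<in>{1..5} - Fx. R j) + 5"
      using s1 unfolding D_def by simp
  qed simp
  finally show ?thesis .
qed

lemma converse_generic:
  fixes R :: "nat \<Rightarrow> real"
  assumes Cn: "\<forall>k\<in>{1..3}. C k = 1" and ach: "achievable 5 3 S A C R"
    and Fx: "Fx \<subseteq> {1..5}" and s: "s \<subseteq> {1..3}"
    and ip: "\<And>n f g. valid_code 5 3 S C R n f \<Longrightarrow> injprop S A R n f g Fx s"
  shows "(\<Sum>j\<in>{1..5} - Fx. R j) \<le> real (card s)"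
proof (rule ccontr)
  assume "\<not> ?thesis"
  then obtain e where e: "e > 0" "(\<Sum>j\<in>{1..5} - Fx. R j) = real (card s) + e"
    by (intro that[of "(\<Sum>j\<in>{1..5} - Fx. R j) - real (card s)"]) auto
  from ach obtain f g where Rnn: "\<forall>j\<in>{1..5}. R j \<ge> 0" and v: "\<forall>n. valid_code 5 3 S C R n (f n)"
    and t: "(\<lambda>n. error_prob 5 3 S A R n (f n) (g n)) \<longlonglongrightarrow> 0"
    unfolding achievable_def by blast
  have ev1: "eventually (\<lambda>n. error_prob 5 3 S A R n (f n) (g n) < 1/2) sequentially"
    using order_tendstoD(2)[OF t, of "1/2"] by simp
  have ev2: "eventually (\<lambda>n. error_prob 5 3 S A R n (f n) (g n) \<ge> 1/2) sequentially"
    unfolding eventually_sequentially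
  proof (intro exI allI impI)
    fix n assume n: "nat \<lceil>6 / e\<rceil> \<le> n"
    hence "6 / e \<le> real n" by linarith
    hence n6: "6 \<le> real n * e" using e(1) by (simp add: divide_le_eq mult.commute)
    have rb: "real (card (good S A R n (f n) (g n))) / real (card (msg_tuples 5 n R))
     \<le> 2 powr (real n * card s - real n * (\<Sum>j\<in>{1..5} - Fx. R j) + 5)"
      by (rule ratio_bound[OF Cn v[rule_format] Fx s ip[OF v[rule_format]] Rnn])
    also have "\<dots> \<le> 2 powr (-1)"
    proof (rule powr_mono)
      show "real n * real (card s) - real n * (\<Sum>j\<in>{1..5} - Fx. R j) + 5 \<le> - 1"
        unfolding e(2) using n6 by (simp add: algebra_simps)
    qed simp
    also have "\<dots> = 1/2" by (simp add: powr_minus)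
    finally show "error_prob 5 3 S A R n (f n) (g n) \<ge> 1/2" unfolding error_good by simp
  qed
  have "eventually (\<lambda>n. False) sequentially"
    using eventually_conj[OF ev1 ev2] by (rule eventually_mono) linarith
  thus False by simp
qed

lemma chain_step:
  assumes m: "m \<in> good S A R n f g" and m': "m' \<in> good S A R n f g"
    and B: "broadcast 3 S f m = broadcast 3 S f m'"
    and X: "\<forall>i\<in>X. m i = m' i" and AX: "A j \<subseteq> X" and j: "j \<in> {1..5}"
  shows "m j = m' j"
proof -
  have r: "restrict m (A j) = restrict m' (A j)" using X AX by (intro restrict_ext) auto
  have "m j = g j (broadcast 3 S f m) (restrict m (A j))" using m j unfolding good_def by auto
  also have "\<dots> = g j (broadcast 3 S f m') (restrict m' (A j))" using B r by simp
  also have "\<dots> = m' j" using m' j unfolding good_def by auto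
  finally show ?thesis .
qed

lemma good_ext:
  assumes m: "m \<in> good S A R n f g" and m': "m' \<in> good S A R n f g" and e: "\<forall>i\<in>{1..5}. m i = m' i"
  shows "m = m'"
proof -
  have "m \<in> msg_tuples 5 n R" "m' \<in> msg_tuples 5 n R" using m m' unfolding good_def by auto
  thus ?thesis unfolding msg_tuples_def using e by (intro PiE_ext) auto
qed

lemma conv0:
  fixes R :: "nat \<Rightarrow> real"
  assumes Sa: "S 1 = {1,2,3}" "S 2 = {2,3,4}" "S 3 = {1,2,4,5}"
    and Aa: "A 1 = {4,5}" "A 2 = {1,3,5}" "A 3 = {1,2}" "A 4 = {2,3,5}" "A 5 = {3}"
    and Cn: "\<forall>k\<in>{1..3}. C k = 1" and ach: "achievable 5 3 S A C R"
  shows "R 3 \<le> 2"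
proof -
  have Aa1: "A (Suc 0) = {4,5}" using Aa by simp
  have "(\<Sum>j\<in>{1..5} - {1,2,4,5}. R j) \<le> real (card ({1,2}::nat set))"
  proof (rule converse_generic[OF Cn ach])
    show "{1,2,4,5} \<subseteq> {1..5::nat}" by auto
    show "{1,2} \<subseteq> {1..3::nat}" by auto
    fix n f g assume v: "valid_code 5 3 S C R n f"
    show "injprop S A R n f g {1,2,4,5} {1,2}" unfolding injprop_def
    proof (intro ballI impI)
      fix m m' assume m: "m \<in> good S A R n f g" and m': "m' \<in> good S A R n f g"
        and a: "\<forall>i\<in>{1,2,4,5}. m i = m' i" and b: "\<forall>k\<in>{1,2}. f k (restrict m (S k)) = f k (restrict m' (S k))"
      have f1: "f 1 (restrict m (S 1)) = f 1 (restrict m' (S 1))" using b by simp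
      have f2: "f 2 (restrict m (S 2)) = f 2 (restrict m' (S 2))" using b by simp
      have f3: "f 3 (restrict m (S 3)) = f 3 (restrict m' (S 3))"
        using a unfolding Sa by (intro arg_cong[of _ _ "f 3"] restrict_ext) auto
      have B: "broadcast 3 S f m = broadcast 3 S f m'"
        unfolding broadcast_def
      proof (rule restrict_ext)
        fix k :: nat assume "k \<in> {1..3}"
        hence "k = 1 \<or> k = 2 \<or> k = 3" by auto
        thus "f k (restrict m (S k)) = f k (restrict m' (S k))" using f1 f2 f3 by auto
      qed
      have c0: "m 3 = m' 3"
        by (rule chain_step[OF m m' B, of "{1,2,4,5}"]) (use a in \<open>auto simp: Aa Aa1\<close>)
      show "m = m'"
        by (rule good_ext[OF m m']) (use a c0 in \<open>auto simp: atLeastAtMost_iff le_Suc_eq numeral_3_eq_3 eval_nat_numeral\<close>)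
    qed
  qed
  moreover have "{1..5::nat} - {1,2,4,5} = {3}" by auto
  ultimately show ?thesis by simp
qed

lemma conv1:
  fixes R :: "nat \<Rightarrow> real"
  assumes Sa: "S 1 = {1,2,3}" "S 2 = {2,3,4}" "S 3 = {1,2,4,5}"
    and Aa: "A 1 = {4,5}" "A 2 = {1,3,5}" "A 3 = {1,2}" "A 4 = {2,3,5}" "A 5 = {3}"
    and Cn: "\<forall>k\<in>{1..3}. C k = 1" and ach: "achievable 5 3 S A C R"
  shows "R 5 \<le> 1"
proof -
  have Aa1: "A (Suc 0) = {4,5}" using Aa by simp
  have "(\<Sum>j\<in>{1..5} - {1,2,3,4}. R j) \<le> real (card ({3}::nat set))"
  proof (rule converse_generic[OF Cn ach])
    show "{1,2,3,4} \<subseteq> {1..5::nat}" by auto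
    show "{3} \<subseteq> {1..3::nat}" by auto
    fix n f g assume v: "valid_code 5 3 S C R n f"
    show "injprop S A R n f g {1,2,3,4} {3}" unfolding injprop_def
    proof (intro ballI impI)
      fix m m' assume m: "m \<in> good S A R n f g" and m': "m' \<in> good S A R n f g"
        and a: "\<forall>i\<in>{1,2,3,4}. m i = m' i" and b: "\<forall>k\<in>{3}. f k (restrict m (S k)) = f k (restrict m' (S k))"
      have f1: "f 1 (restrict m (S 1)) = f 1 (restrict m' (S 1))"
        using a unfolding Sa by (intro arg_cong[of _ _ "f 1"] restrict_ext) auto
      have f2: "f 2 (restrict m (S 2)) = f 2 (restrict m' (S 2))"
        using a unfolding Sa by (intro arg_cong[of _ _ "f 2"] restrict_ext) auto
      have f3: "f 3 (restrict m (S 3)) = f 3 (restrict m' (S 3))" using b by simp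
      have B: "broadcast 3 S f m = broadcast 3 S f m'"
        unfolding broadcast_def
      proof (rule restrict_ext)
        fix k :: nat assume "k \<in> {1..3}"
        hence "k = 1 \<or> k = 2 \<or> k = 3" by auto
        thus "f k (restrict m (S k)) = f k (restrict m' (S k))" using f1 f2 f3 by auto
      qed
      have c0: "m 5 = m' 5"
        by (rule chain_step[OF m m' B, of "{1,2,3,4}"]) (use a in \<open>auto simp: Aa Aa1\<close>)
      show "m = m'"
        by (rule good_ext[OF m m']) (use a c0 in \<open>auto simp: atLeastAtMost_iff le_Suc_eq numeral_3_eq_3 eval_nat_numeral\<close>)
    qed
  qed
  moreover have "{1..5::nat} - {1,2,3,4} = {5}" by auto
  ultimately show ?thesis by simp
qed

lemma conv2:
  fixes R :: "nat \<Rightarrow> real"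
  assumes Sa: "S 1 = {1,2,3}" "S 2 = {2,3,4}" "S 3 = {1,2,4,5}"
    and Aa: "A 1 = {4,5}" "A 2 = {1,3,5}" "A 3 = {1,2}" "A 4 = {2,3,5}" "A 5 = {3}"
    and Cn: "\<forall>k\<in>{1..3}. C k = 1" and ach: "achievable 5 3 S A C R"
  shows "R 1 + R 3 \<le> 3"
proof -
  have Aa1: "A (Suc 0) = {4,5}" using Aa by simp
  have "(\<Sum>j\<in>{1..5} - {2,4,5}. R j) \<le> real (card ({1,2,3}::nat set))"
  proof (rule converse_generic[OF Cn ach])
    show "{2,4,5} \<subseteq> {1..5::nat}" by auto
    show "{1,2,3} \<subseteq> {1..3::nat}" by auto
    fix n f g assume v: "valid_code 5 3 S C R n f"
    show "injprop S A R n f g {2,4,5} {1,2,3}" unfolding injprop_def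
    proof (intro ballI impI)
      fix m m' assume m: "m \<in> good S A R n f g" and m': "m' \<in> good S A R n f g"
        and a: "\<forall>i\<in>{2,4,5}. m i = m' i" and b: "\<forall>k\<in>{1,2,3}. f k (restrict m (S k)) = f k (restrict m' (S k))"
      have f1: "f 1 (restrict m (S 1)) = f 1 (restrict m' (S 1))" using b by simp
      have f2: "f 2 (restrict m (S 2)) = f 2 (restrict m' (S 2))" using b by simp
      have f3: "f 3 (restrict m (S 3)) = f 3 (restrict m' (S 3))" using b by simp
      have B: "broadcast 3 S f m = broadcast 3 S f m'"
        unfolding broadcast_def
      proof (rule restrict_ext)
        fix k :: nat assume "k \<in> {1..3}"
        hence "k = 1 \<or> k = 2 \<or> k = 3" by auto
        thus "f k (restrict m (S k)) = f k (restrict m' (S k))" using f1 f2 f3 by auto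
      qed
      have c0: "m 1 = m' 1"
        by (rule chain_step[OF m m' B, of "{2,4,5}"]) (use a in \<open>auto simp: Aa Aa1\<close>)
      have c1: "m 3 = m' 3"
        by (rule chain_step[OF m m' B, of "{2,4,5,1}"]) (use a c0 in \<open>auto simp: Aa Aa1\<close>)
      show "m = m'"
        by (rule good_ext[OF m m']) (use a c0 c1 in \<open>auto simp: atLeastAtMost_iff le_Suc_eq numeral_3_eq_3 eval_nat_numeral\<close>)
    qed
  qed
  moreover have "{1..5::nat} - {2,4,5} = {1,3}" by auto
  ultimately show ?thesis by simp
qed

lemma conv3:
  fixes R :: "nat \<Rightarrow> real"
  assumes Sa: "S 1 = {1,2,3}" "S 2 = {2,3,4}" "S 3 = {1,2,4,5}"
    and Aa: "A 1 = {4,5}" "A 2 = {1,3,5}" "A 3 = {1,2}" "A 4 = {2,3,5}" "A 5 = {3}"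
    and Cn: "\<forall>k\<in>{1..3}. C k = 1" and ach: "achievable 5 3 S A C R"
  shows "R 1 + R 5 \<le> 2"
proof -
  have Aa1: "A (Suc 0) = {4,5}" using Aa by simp
  have "(\<Sum>j\<in>{1..5} - {2,3,4}. R j) \<le> real (card ({1,3}::nat set))"
  proof (rule converse_generic[OF Cn ach])
    show "{2,3,4} \<subseteq> {1..5::nat}" by auto
    show "{1,3} \<subseteq> {1..3::nat}" by auto
    fix n f g assume v: "valid_code 5 3 S C R n f"
    show "injprop S A R n f g {2,3,4} {1,3}" unfolding injprop_def
    proof (intro ballI impI)
      fix m m' assume m: "m \<in> good S A R n f g" and m': "m' \<in> good S A R n f g"
        and a: "\<forall>i\<in>{2,3,4}. m i = m' i" and b: "\<forall>k\<in>{1,3}. f k (restrict m (S k)) = f k (restrict m' (S k))"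
      have f1: "f 1 (restrict m (S 1)) = f 1 (restrict m' (S 1))" using b by simp
      have f2: "f 2 (restrict m (S 2)) = f 2 (restrict m' (S 2))"
        using a unfolding Sa by (intro arg_cong[of _ _ "f 2"] restrict_ext) auto
      have f3: "f 3 (restrict m (S 3)) = f 3 (restrict m' (S 3))" using b by simp
      have B: "broadcast 3 S f m = broadcast 3 S f m'"
        unfolding broadcast_def
      proof (rule restrict_ext)
        fix k :: nat assume "k \<in> {1..3}"
        hence "k = 1 \<or> k = 2 \<or> k = 3" by auto
        thus "f k (restrict m (S k)) = f k (restrict m' (S k))" using f1 f2 f3 by auto
      qed
      have c0: "m 5 = m' 5"
        by (rule chain_step[OF m m' B, of "{2,3,4}"]) (use a in \<open>auto simp: Aa Aa1\<close>)
      have c1: "m 1 = m' 1"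
        by (rule chain_step[OF m m' B, of "{2,3,4,5}"]) (use a c0 in \<open>auto simp: Aa Aa1\<close>)
      show "m = m'"
        by (rule good_ext[OF m m']) (use a c0 c1 in \<open>auto simp: atLeastAtMost_iff le_Suc_eq numeral_3_eq_3 eval_nat_numeral\<close>)
    qed
  qed
  moreover have "{1..5::nat} - {2,3,4} = {1,5}" by auto
  ultimately show ?thesis by simp
qed

lemma conv4:
  fixes R :: "nat \<Rightarrow> real"
  assumes Sa: "S 1 = {1,2,3}" "S 2 = {2,3,4}" "S 3 = {1,2,4,5}"
    and Aa: "A 1 = {4,5}" "A 2 = {1,3,5}" "A 3 = {1,2}" "A 4 = {2,3,5}" "A 5 = {3}"
    and Cn: "\<forall>k\<in>{1..3}. C k = 1" and ach: "achievable 5 3 S A C R"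
  shows "R 4 + R 5 \<le> 2"
proof -
  have Aa1: "A (Suc 0) = {4,5}" using Aa by simp
  have "(\<Sum>j\<in>{1..5} - {1,2,3}. R j) \<le> real (card ({2,3}::nat set))"
  proof (rule converse_generic[OF Cn ach])
    show "{1,2,3} \<subseteq> {1..5::nat}" by auto
    show "{2,3} \<subseteq> {1..3::nat}" by auto
    fix n f g assume v: "valid_code 5 3 S C R n f"
    show "injprop S A R n f g {1,2,3} {2,3}" unfolding injprop_def
    proof (intro ballI impI)
      fix m m' assume m: "m \<in> good S A R n f g" and m': "m' \<in> good S A R n f g"
        and a: "\<forall>i\<in>{1,2,3}. m i = m' i" and b: "\<forall>k\<in>{2,3}. f k (restrict m (S k)) = f k (restrict m' (S k))"
      have f1: "f 1 (restrict m (S 1)) = f 1 (restrict m' (S 1))"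
        using a unfolding Sa by (intro arg_cong[of _ _ "f 1"] restrict_ext) auto
      have f2: "f 2 (restrict m (S 2)) = f 2 (restrict m' (S 2))" using b by simp
      have f3: "f 3 (restrict m (S 3)) = f 3 (restrict m' (S 3))" using b by simp
      have B: "broadcast 3 S f m = broadcast 3 S f m'"
        unfolding broadcast_def
      proof (rule restrict_ext)
        fix k :: nat assume "k \<in> {1..3}"
        hence "k = 1 \<or> k = 2 \<or> k = 3" by auto
        thus "f k (restrict m (S k)) = f k (restrict m' (S k))" using f1 f2 f3 by auto
      qed
      have c0: "m 5 = m' 5"
        by (rule chain_step[OF m m' B, of "{1,2,3}"]) (use a in \<open>auto simp: Aa Aa1\<close>)
      have c1: "m 4 = m' 4"
        by (rule chain_step[OF m m' B, of "{1,2,3,5}"]) (use a c0 in \<open>auto simp: Aa Aa1\<close>)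
      show "m = m'"
        by (rule good_ext[OF m m']) (use a c0 c1 in \<open>auto simp: atLeastAtMost_iff le_Suc_eq numeral_3_eq_3 eval_nat_numeral\<close>)
    qed
  qed
  moreover have "{1..5::nat} - {1,2,3} = {4,5}" by auto
  ultimately show ?thesis by simp
qed

lemma conv5:
  fixes R :: "nat \<Rightarrow> real"
  assumes Sa: "S 1 = {1,2,3}" "S 2 = {2,3,4}" "S 3 = {1,2,4,5}"
    and Aa: "A 1 = {4,5}" "A 2 = {1,3,5}" "A 3 = {1,2}" "A 4 = {2,3,5}" "A 5 = {3}"
    and Cn: "\<forall>k\<in>{1..3}. C k = 1" and ach: "achievable 5 3 S A C R"
  shows "R 1 + R 2 + R 5 \<le> 3"
proof -
  have Aa1: "A (Suc 0) = {4,5}" using Aa by simp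
  have "(\<Sum>j\<in>{1..5} - {3,4}. R j) \<le> real (card ({1,2,3}::nat set))"
  proof (rule converse_generic[OF Cn ach])
    show "{3,4} \<subseteq> {1..5::nat}" by auto
    show "{1,2,3} \<subseteq> {1..3::nat}" by auto
    fix n f g assume v: "valid_code 5 3 S C R n f"
    show "injprop S A R n f g {3,4} {1,2,3}" unfolding injprop_def
    proof (intro ballI impI)
      fix m m' assume m: "m \<in> good S A R n f g" and m': "m' \<in> good S A R n f g"
        and a: "\<forall>i\<in>{3,4}. m i = m' i" and b: "\<forall>k\<in>{1,2,3}. f k (restrict m (S k)) = f k (restrict m' (S k))"
      have f1: "f 1 (restrict m (S 1)) = f 1 (restrict m' (S 1))" using b by simp
      have f2: "f 2 (restrict m (S 2)) = f 2 (restrict m' (S 2))" using b by simp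
      have f3: "f 3 (restrict m (S 3)) = f 3 (restrict m' (S 3))" using b by simp
      have B: "broadcast 3 S f m = broadcast 3 S f m'"
        unfolding broadcast_def
      proof (rule restrict_ext)
        fix k :: nat assume "k \<in> {1..3}"
        hence "k = 1 \<or> k = 2 \<or> k = 3" by auto
        thus "f k (restrict m (S k)) = f k (restrict m' (S k))" using f1 f2 f3 by auto
      qed
      have c0: "m 5 = m' 5"
        by (rule chain_step[OF m m' B, of "{3,4}"]) (use a in \<open>auto simp: Aa Aa1\<close>)
      have c1: "m 1 = m' 1"
        by (rule chain_step[OF m m' B, of "{3,4,5}"]) (use a c0 in \<open>auto simp: Aa Aa1\<close>)
      have c2: "m 2 = m' 2"
        by (rule chain_step[OF m m' B, of "{3,4,5,1}"]) (use a c0 c1 in \<open>auto simp: Aa Aa1\<close>)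
      show "m = m'"
        by (rule good_ext[OF m m']) (use a c0 c1 c2 in \<open>auto simp: atLeastAtMost_iff le_Suc_eq numeral_3_eq_3 eval_nat_numeral\<close>)
    qed
  qed
  moreover have "{1..5::nat} - {3,4} = {1,2,5}" by auto
  ultimately show ?thesis by simp
qed

lemma conv6:
  fixes R :: "nat \<Rightarrow> real"
  assumes Sa: "S 1 = {1,2,3}" "S 2 = {2,3,4}" "S 3 = {1,2,4,5}"
    and Aa: "A 1 = {4,5}" "A 2 = {1,3,5}" "A 3 = {1,2}" "A 4 = {2,3,5}" "A 5 = {3}"
    and Cn: "\<forall>k\<in>{1..3}. C k = 1" and ach: "achievable 5 3 S A C R"
  shows "R 1 + R 4 + R 5 \<le> 3"
proof -
  have Aa1: "A (Suc 0) = {4,5}" using Aa by simp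
  have "(\<Sum>j\<in>{1..5} - {2,3}. R j) \<le> real (card ({1,2,3}::nat set))"
  proof (rule converse_generic[OF Cn ach])
    show "{2,3} \<subseteq> {1..5::nat}" by auto
    show "{1,2,3} \<subseteq> {1..3::nat}" by auto
    fix n f g assume v: "valid_code 5 3 S C R n f"
    show "injprop S A R n f g {2,3} {1,2,3}" unfolding injprop_def
    proof (intro ballI impI)
      fix m m' assume m: "m \<in> good S A R n f g" and m': "m' \<in> good S A R n f g"
        and a: "\<forall>i\<in>{2,3}. m i = m' i" and b: "\<forall>k\<in>{1,2,3}. f k (restrict m (S k)) = f k (restrict m' (S k))"
      have f1: "f 1 (restrict m (S 1)) = f 1 (restrict m' (S 1))" using b by simp
      have f2: "f 2 (restrict m (S 2)) = f 2 (restrict m' (S 2))" using b by simp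
      have f3: "f 3 (restrict m (S 3)) = f 3 (restrict m' (S 3))" using b by simp
      have B: "broadcast 3 S f m = broadcast 3 S f m'"
        unfolding broadcast_def
      proof (rule restrict_ext)
        fix k :: nat assume "k \<in> {1..3}"
        hence "k = 1 \<or> k = 2 \<or> k = 3" by auto
        thus "f k (restrict m (S k)) = f k (restrict m' (S k))" using f1 f2 f3 by auto
      qed
      have c0: "m 5 = m' 5"
        by (rule chain_step[OF m m' B, of "{2,3}"]) (use a in \<open>auto simp: Aa Aa1\<close>)
      have c1: "m 4 = m' 4"
        by (rule chain_step[OF m m' B, of "{2,3,5}"]) (use a c0 in \<open>auto simp: Aa Aa1\<close>)
      have c2: "m 1 = m' 1"
        by (rule chain_step[OF m m' B, of "{2,3,5,4}"]) (use a c0 c1 in \<open>auto simp: Aa Aa1\<close>)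
      show "m = m'"
        by (rule good_ext[OF m m']) (use a c0 c1 c2 in \<open>auto simp: atLeastAtMost_iff le_Suc_eq numeral_3_eq_3 eval_nat_numeral\<close>)
    qed
  qed
  moreover have "{1..5::nat} - {2,3} = {1,4,5}" by auto
  ultimately show ?thesis by simp
qed

lemma conv7:
  fixes R :: "nat \<Rightarrow> real"
  assumes Sa: "S 1 = {1,2,3}" "S 2 = {2,3,4}" "S 3 = {1,2,4,5}"
    and Aa: "A 1 = {4,5}" "A 2 = {1,3,5}" "A 3 = {1,2}" "A 4 = {2,3,5}" "A 5 = {3}"
    and Cn: "\<forall>k\<in>{1..3}. C k = 1" and ach: "achievable 5 3 S A C R"
  shows "R 2 + R 4 + R 5 \<le> 3"
proof -
  have Aa1: "A (Suc 0) = {4,5}" using Aa by simp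
  have "(\<Sum>j\<in>{1..5} - {1,3}. R j) \<le> real (card ({1,2,3}::nat set))"
  proof (rule converse_generic[OF Cn ach])
    show "{1,3} \<subseteq> {1..5::nat}" by auto
    show "{1,2,3} \<subseteq> {1..3::nat}" by auto
    fix n f g assume v: "valid_code 5 3 S C R n f"
    show "injprop S A R n f g {1,3} {1,2,3}" unfolding injprop_def
    proof (intro ballI impI)
      fix m m' assume m: "m \<in> good S A R n f g" and m': "m' \<in> good S A R n f g"
        and a: "\<forall>i\<in>{1,3}. m i = m' i" and b: "\<forall>k\<in>{1,2,3}. f k (restrict m (S k)) = f k (restrict m' (S k))"
      have f1: "f 1 (restrict m (S 1)) = f 1 (restrict m' (S 1))" using b by simp
      have f2: "f 2 (restrict m (S 2)) = f 2 (restrict m' (S 2))" using b by simp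
      have f3: "f 3 (restrict m (S 3)) = f 3 (restrict m' (S 3))" using b by simp
      have B: "broadcast 3 S f m = broadcast 3 S f m'"
        unfolding broadcast_def
      proof (rule restrict_ext)
        fix k :: nat assume "k \<in> {1..3}"
        hence "k = 1 \<or> k = 2 \<or> k = 3" by auto
        thus "f k (restrict m (S k)) = f k (restrict m' (S k))" using f1 f2 f3 by auto
      qed
      have c0: "m 5 = m' 5"
        by (rule chain_step[OF m m' B, of "{1,3}"]) (use a in \<open>auto simp: Aa Aa1\<close>)
      have c1: "m 2 = m' 2"
        by (rule chain_step[OF m m' B, of "{1,3,5}"]) (use a c0 in \<open>auto simp: Aa Aa1\<close>)
      have c2: "m 4 = m' 4"
        by (rule chain_step[OF m m' B, of "{1,3,5,2}"]) (use a c0 c1 in \<open>auto simp: Aa Aa1\<close>)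
      show "m = m'"
        by (rule good_ext[OF m m']) (use a c0 c1 c2 in \<open>auto simp: atLeastAtMost_iff le_Suc_eq numeral_3_eq_3 eval_nat_numeral\<close>)
    qed
  qed
  moreover have "{1..5::nat} - {1,3} = {2,4,5}" by auto
  ultimately show ?thesis by simp
qed

lemma conv8:
  fixes R :: "nat \<Rightarrow> real"
  assumes Sa: "S 1 = {1,2,3}" "S 2 = {2,3,4}" "S 3 = {1,2,4,5}"
    and Aa: "A 1 = {4,5}" "A 2 = {1,3,5}" "A 3 = {1,2}" "A 4 = {2,3,5}" "A 5 = {3}"
    and Cn: "\<forall>k\<in>{1..3}. C k = 1" and ach: "achievable 5 3 S A C R"
  shows "R 3 + R 4 + R 5 \<le> 3"
proof -
  have Aa1: "A (Suc 0) = {4,5}" using Aa by simp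
  have "(\<Sum>j\<in>{1..5} - {1,2}. R j) \<le> real (card ({1,2,3}::nat set))"
  proof (rule converse_generic[OF Cn ach])
    show "{1,2} \<subseteq> {1..5::nat}" by auto
    show "{1,2,3} \<subseteq> {1..3::nat}" by auto
    fix n f g assume v: "valid_code 5 3 S C R n f"
    show "injprop S A R n f g {1,2} {1,2,3}" unfolding injprop_def
    proof (intro ballI impI)
      fix m m' assume m: "m \<in> good S A R n f g" and m': "m' \<in> good S A R n f g"
        and a: "\<forall>i\<in>{1,2}. m i = m' i" and b: "\<forall>k\<in>{1,2,3}. f k (restrict m (S k)) = f k (restrict m' (S k))"
      have f1: "f 1 (restrict m (S 1)) = f 1 (restrict m' (S 1))" using b by simp
      have f2: "f 2 (restrict m (S 2)) = f 2 (restrict m' (S 2))" using b by simp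
      have f3: "f 3 (restrict m (S 3)) = f 3 (restrict m' (S 3))" using b by simp
      have B: "broadcast 3 S f m = broadcast 3 S f m'"
        unfolding broadcast_def
      proof (rule restrict_ext)
        fix k :: nat assume "k \<in> {1..3}"
        hence "k = 1 \<or> k = 2 \<or> k = 3" by auto
        thus "f k (restrict m (S k)) = f k (restrict m' (S k))" using f1 f2 f3 by auto
      qed
      have c0: "m 3 = m' 3"
        by (rule chain_step[OF m m' B, of "{1,2}"]) (use a in \<open>auto simp: Aa Aa1\<close>)
      have c1: "m 5 = m' 5"
        by (rule chain_step[OF m m' B, of "{1,2,3}"]) (use a c0 in \<open>auto simp: Aa Aa1\<close>)
      have c2: "m 4 = m' 4"
        by (rule chain_step[OF m m' B, of "{1,2,3,5}"]) (use a c0 c1 in \<open>auto simp: Aa Aa1\<close>)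
      show "m = m'"
        by (rule good_ext[OF m m']) (use a c0 c1 c2 in \<open>auto simp: atLeastAtMost_iff le_Suc_eq numeral_3_eq_3 eval_nat_numeral\<close>)
    qed
  qed
  moreover have "{1..5::nat} - {1,2} = {3,4,5}" by auto
  ultimately show ?thesis by simp
qed

lemma zcode_sum_upto:
  fixes N :: nat and p :: "nat \<Rightarrow> nat" and rr uu :: "nat \<Rightarrow> nat \<Rightarrow> nat"
  assumes SS: "\<forall>k\<in>{1..3}. S k \<subseteq> {1..5}" and AA: "\<forall>j\<in>{1..5}. A j \<subseteq> {1..5}"
    and c: "\<And>i. i < N \<Longrightarrow> zcode S A (rr i) (uu i)"
  shows "zcode S A (\<lambda>j. \<Sum>i<N. p i * rr i j) (\<lambda>k. \<Sum>i<N. p i * uu i k)"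
  using c
proof (induction N)
  case 0 thus ?case using zcode_zero by simp
next
  case (Suc N)
  have a: "zcode S A (\<lambda>j. \<Sum>i<N. p i * rr i j) (\<lambda>k. \<Sum>i<N. p i * uu i k)" using Suc by simp
  have b: "zcode S A (\<lambda>j. p N * rr N j) (\<lambda>k. p N * uu N k)" using zcode_mult[OF SS AA Suc.prems[of N]] by simp
  show ?case using zcode_cat[OF SS AA a b] by simp
qed

lemma zcode_double:
  assumes SS: "\<forall>k\<in>{1..3}. S k \<subseteq> {1..5}" and AA: "\<forall>j\<in>{1..5}. A j \<subseteq> {1..5}"
    and c: "zcode S A (vec5 a b c d e) (\<lambda>_. 1)"
  shows "zcode S A (vec5 (2*a) (2*b) (2*c) (2*d) (2*e)) (\<lambda>_. 2)"
proof -
  have "zcode S A (\<lambda>j. 2 * vec5 a b c d e j) (\<lambda>k. 2 * 1)" by (rule zcode_mult[OF SS AA c])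
  moreover have "(\<lambda>j. 2 * vec5 a b c d e j) = vec5 (2*a) (2*b) (2*c) (2*d) (2*e)"
    by (auto simp: vec5_def fun_eq_iff)
  ultimately show ?thesis by simp
qed

definition rho :: "nat \<Rightarrow> nat \<Rightarrow> nat" where
  "rho i = (if i = 0 then vec5 0 4 4 0 2 else if i = 1 then vec5 0 6 4 0 0 else if i = 2 then vec5 2 2 2 2 2
     else if i = 3 then vec5 2 2 2 4 0 else if i = 4 then vec5 2 2 4 0 2 else if i = 5 then vec5 2 4 4 2 0
     else if i = 6 then vec5 3 2 3 2 1 else if i = 7 then vec5 3 3 3 3 0 else vec5 4 2 2 2 0)"

lemma rho_code:
  assumes Sa: "S 1 = {1,2,3}" "S 2 = {2,3,4}" "S 3 = {1,2,4,5}"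
    and Aa: "A 1 = {4,5}" "A 2 = {1,3,5}" "A 3 = {1,2}" "A 4 = {2,3,5}" "A 5 = {3}"
    and i: "i < 9"
  shows "zcode S A (rho i) (\<lambda>_. 2)"
proof -
  have SS: "\<forall>k\<in>{1..3}. S k \<subseteq> {1..5}"
  proof
    fix k :: nat assume "k \<in> {1..3}" hence "k = 1 \<or> k = 2 \<or> k = 3" by auto
    thus "S k \<subseteq> {1..5}" using Sa by auto
  qed
  have AA: "\<forall>j\<in>{1..5}. A j \<subseteq> {1..5}"
  proof
    fix k :: nat assume "k \<in> {1..5}" hence "k = 1 \<or> k = 2 \<or> k = 3 \<or> k = 4 \<or> k = 5" by auto
    thus "A k \<subseteq> {1..5}" using Aa by auto
  qed
  note cs = Sa Aa
  have "i = 0 \<or> i = 1 \<or> i = 2 \<or> i = 3 \<or> i = 4 \<or> i = 5 \<or> i = 6 \<or> i = 7 \<or> i = 8" using i by auto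
  thus ?thesis
  proof (elim disjE)
    assume "i = 0" thus ?thesis using zcode_double[OF SS AA codeA[OF cs]] by (simp add: rho_def)
  next
    assume "i = 1" thus ?thesis using zcode_double[OF SS AA codeB[OF cs]] by (simp add: rho_def)
  next
    assume "i = 2" thus ?thesis using zcode_double[OF SS AA codeC[OF cs]] by (simp add: rho_def)
  next
    assume "i = 3" thus ?thesis using zcode_double[OF SS AA codeD[OF cs]] by (simp add: rho_def)
  next
    assume "i = 4" thus ?thesis using zcode_double[OF SS AA codeE[OF cs]] by (simp add: rho_def)
  next
    assume "i = 5" thus ?thesis using zcode_double[OF SS AA codeF[OF cs]] by (simp add: rho_def)
  next
    assume "i = 6" thus ?thesis using codeG[OF cs] by (simp add: rho_def)
  next
    assume "i = 7" thus ?thesis using codeH[OF cs] by (simp add: rho_def)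
  next
    assume "i = 8" thus ?thesis using zcode_double[OF SS AA codeI[OF cs]] by (simp add: rho_def)
  qed
qed

lemma approx:
  fixes lam :: "nat \<Rightarrow> real" and w :: "nat \<Rightarrow> nat \<Rightarrow> real" and R :: "nat \<Rightarrow> real" and d :: real
  assumes lam0: "\<And>i. 0 \<le> lam i" and lam1: "(\<Sum>i<9. lam i) \<le> 1"
    and w: "\<And>i j. 0 \<le> w i j" "\<And>i j. w i j \<le> 3"
    and R0: "\<forall>j\<in>{1..5}. 0 \<le> R j" and Rw: "\<forall>j\<in>{1..5}. R j \<le> (\<Sum>i<9. lam i * w i j)"
    and d: "0 < d"
  obtains T :: nat and p :: "nat \<Rightarrow> nat" where "T > 0" "(\<Sum>i<9. p i) \<le> T"
          "\<forall>j\<in>{1..5}. R j = 0 \<or> (1 - d) * R j * T < (\<Sum>i<9. real (p i) * w i j)"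
proof -
  define Q where "Q = (\<Sum>j\<in>{1..5::nat}. if R j > 0 then 27 / (d * R j) else 0)"
  define T where "T = nat \<lceil>Q\<rceil> + 1"
  define p where "p = (\<lambda>i. nat \<lfloor>real T * lam i\<rfloor>)"
  have Tpos: "T > 0" unfolding T_def by simp
  have TQ: "real T > Q" unfolding T_def by linarith
  have p1: "real (p i) \<le> real T * lam i" for i unfolding p_def using lam0[of i] by simp
  have p2: "real (p i) \<ge> real T * lam i - 1" for i unfolding p_def using lam0[of i] by linarith
  have "real (\<Sum>i<9. p i) = (\<Sum>i<9. real (p i))" by simp
  also have "\<dots> \<le> (\<Sum>i<9. real T * lam i)" using p1 by (intro sum_mono) auto
  also have "\<dots> = real T * (\<Sum>i<9. lam i)" by (simp add: sum_distrib_left)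
  also have "\<dots> \<le> real T" using lam1 by (simp add: mult_left_le)
  finally have psum: "(\<Sum>i<9. p i) \<le> T" by (simp only: of_nat_le_iff)
  have main: "R j = 0 \<or> (1 - d) * R j * T < (\<Sum>i<9. real (p i) * w i j)" if j: "j \<in> {1..5}" for j
  proof (cases "R j > 0")
    case False
    have "0 \<le> R j" using R0 j by blast
    thus ?thesis using False by auto
  next
    case True
    have Qj: "27 / (d * R j) \<le> Q" unfolding Q_def
    proof -
      have "27 / (d * R j) = (if R j > 0 then 27 / (d * R j) else 0)" using True by simp
      also have "\<dots> \<le> (\<Sum>j\<in>{1..5::nat}. if R j > 0 then 27 / (d * R j) else 0)"
        using j d by (intro member_le_sum) auto
      finally show "27 / (d * R j) \<le> (\<Sum>j\<in>{1..5::nat}. if R j > 0 then 27 / (d * R j) else 0)" .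
    qed
    have dR: "d * R j > 0" using d True by simp
    have "27 / (d * R j) < real T" using Qj TQ by linarith
    hence "27 < real T * (d * R j)" using dR by (simp add: divide_less_eq)
    have s1: "(\<Sum>i<9. real (p i) * w i j) \<ge> (\<Sum>i<9. (real T * lam i - 1) * w i j)"
      using p2 w by (intro sum_mono mult_right_mono) auto
    have s2: "(\<Sum>i<9. (real T * lam i - 1) * w i j) = real T * (\<Sum>i<9. lam i * w i j) - (\<Sum>i<9. w i j)"
      by (simp add: algebra_simps sum_subtractf sum_distrib_left)
    have s3: "(\<Sum>i<9. w i j) \<le> 27"
    proof -
      have "(\<Sum>i<9. w i j) \<le> (\<Sum>i<(9::nat). 3)" using w by (intro sum_mono) auto
      thus ?thesis by simp
    qed
    have s4: "real T * R j \<le> real T * (\<Sum>i<9. lam i * w i j)" using Rw j by (intro mult_left_mono) auto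
    have "(1 - d) * R j * T = real T * R j - real T * (d * R j)" by (simp add: algebra_simps)
    thus ?thesis using s1 s2 s3 s4 \<open>27 < real T * (d * R j)\<close> by linarith
  qed
  show ?thesis by (rule that[OF Tpos psum ballI[OF main]])
qed

lemma ach_delta:
  fixes R :: "nat \<Rightarrow> real" and d :: real
  assumes Sa: "S 1 = {1,2,3}" "S 2 = {2,3,4}" "S 3 = {1,2,4,5}"
    and Aa: "A 1 = {4,5}" "A 2 = {1,3,5}" "A 3 = {1,2}" "A 4 = {2,3,5}" "A 5 = {3}"
    and Cn: "\<forall>k\<in>{1..3}. C k = 1"
    and Rnn: "\<forall>j\<in>{1..5}. R j \<ge> 0"
    and ineq: "R 3 \<le> 2" "R 5 \<le> 1" "R 1 + R 3 \<le> 3" "R 1 + R 5 \<le> 2" "R 4 + R 5 \<le> 2"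
        "R 1 + R 2 + R 5 \<le> 3" "R 1 + R 4 + R 5 \<le> 3" "R 2 + R 4 + R 5 \<le> 3" "R 3 + R 4 + R 5 \<le> 3"
    and d: "0 < d" "d \<le> 1"
  shows "achievable 5 3 S A C (\<lambda>j. if j \<in> {1..5} then (1 - d) * R j else R j)"
proof -
  have SS: "\<forall>k\<in>{1..3}. S k \<subseteq> {1..5}"
  proof
    fix k :: nat assume "k \<in> {1..3}" hence "k = 1 \<or> k = 2 \<or> k = 3" by auto
    thus "S k \<subseteq> {1..5}" using Sa by auto
  qed
  have AA: "\<forall>j\<in>{1..5}. A j \<subseteq> {1..5}"
  proof
    fix k :: nat assume "k \<in> {1..5}" hence "k = 1 \<or> k = 2 \<or> k = 3 \<or> k = 4 \<or> k = 5" by auto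
    thus "A k \<subseteq> {1..5}" using Aa by auto
  qed
  have nn: "0 \<le> R 1" "0 \<le> R 2" "0 \<le> R 3" "0 \<le> R 4" "0 \<le> R 5" using Rnn by auto
  obtain l0 l1 l2 l3 l4 l5 l6 l7 l8 where L0: "0 \<le> l0 \<and> 0 \<le> l1 \<and> 0 \<le> l2 \<and> 0 \<le> l3 \<and> 0 \<le> l4 \<and> 0 \<le> l5 \<and> 0 \<le> l6 \<and> 0 \<le> l7 \<and> 0 \<le> l8 \<and> l0 + l1 + l2 + l3 + l4 + l5 + l6 + l7 + l8 \<le> 1 \<and> R 1 \<le> 0 * l0 + 0 * l1 + 1 * l2 + 1 * l3 + 1 * l4 + 1 * l5 + (3 / 2) * l6 + (3 / 2) * l7 + 2 * l8 \<and> R 2 \<le> 2 * l0 + 3 * l1 + 1 * l2 + 1 * l3 + 1 * l4 + 2 * l5 + 1 * l6 + (3 / 2) * l7 + 1 * l8 \<and> R 3 \<le> 2 * l0 + 2 * l1 + 1 * l2 + 1 * l3 + 2 * l4 + 2 * l5 + (3 / 2) * l6 + (3 / 2) * l7 + 1 * l8 \<and> R 4 \<le> 0 * l0 + 0 * l1 + 1 * l2 + 2 * l3 + 0 * l4 + 1 * l5 + 1 * l6 + (3 / 2) * l7 + 1 * l8 \<and> R 5 \<le> 1 * l0 + 0 * l1 + 1 * l2 + 0 * l3 + 1 * l4 + 0 * l5 + (1 / 2) * l6 + 0 * l7 + 0 * l8"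
    using fm_decomp[OF nn ineq(6) ineq(3) ineq(7) ineq(4) ineq(9) ineq(8) ineq(1) ineq(2) ineq(5)]
    by (elim exE) (erule that)
  have L: "0 \<le> l0" "0 \<le> l1" "0 \<le> l2" "0 \<le> l3" "0 \<le> l4" "0 \<le> l5" "0 \<le> l6" "0 \<le> l7" "0 \<le> l8" "l0 + l1 + l2 + l3 + l4 + l5 + l6 + l7 + l8 \<le> 1" "R 1 \<le> 0 * l0 + 0 * l1 + 1 * l2 + 1 * l3 + 1 * l4 + 1 * l5 + (3 / 2) * l6 + (3 / 2) * l7 + 2 * l8" "R 2 \<le> 2 * l0 + 3 * l1 + 1 * l2 + 1 * l3 + 1 * l4 + 2 * l5 + 1 * l6 + (3 / 2) * l7 + 1 * l8" "R 3 \<le> 2 * l0 + 2 * l1 + 1 * l2 + 1 * l3 + 2 * l4 + 2 * l5 + (3 / 2) * l6 + (3 / 2) * l7 + 1 * l8" "R 4 \<le> 0 * l0 + 0 * l1 + 1 * l2 + 2 * l3 + 0 * l4 + 1 * l5 + 1 * l6 + (3 / 2) * l7 + 1 * l8" "R 5 \<le> 1 * l0 + 0 * l1 + 1 * l2 + 0 * l3 + 1 * l4 + 0 * l5 + (1 / 2) * l6 + 0 * l7 + 0 * l8" using L0 by blast+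
  define lam where "lam = (\<lambda>i::nat. if i = 0 then l0 else if i = 1 then l1 else if i = 2 then l2 else if i = 3 then l3
     else if i = 4 then l4 else if i = 5 then l5 else if i = 6 then l6 else if i = 7 then l7 else if i = 8 then l8 else 0)"
  define w where "w = (\<lambda>i j. real (rho i j) / 2)"
  have lam0: "0 \<le> lam i" for i unfolding lam_def using L(1-9) by simp
  have "(\<Sum>i<9. lam i) = l0 + l1 + l2 + l3 + l4 + l5 + l6 + l7 + l8"
    by (simp add: lam_def lessThan_nat_numeral)
  hence lam1: "(\<Sum>i<9. lam i) \<le> 1" using L(10) by simp
  have w0: "0 \<le> w i j" for i j unfolding w_def by simp
  have w3: "w i j \<le> 3" for i j
  proof -
    have "rho i j \<le> 6" unfolding rho_def vec5_def by auto
    thus ?thesis unfolding w_def by simp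
  qed
  have sw1: "(\<Sum>i<9. lam i * w i 1) = 0 * l0 + 0 * l1 + 1 * l2 + 1 * l3 + 1 * l4 + 1 * l5 + (3 / 2) * l6 + (3 / 2) * l7 + 2 * l8"
    by (simp add: lam_def w_def rho_def vec5_def lessThan_nat_numeral)
  have sw2: "(\<Sum>i<9. lam i * w i 2) = 2 * l0 + 3 * l1 + 1 * l2 + 1 * l3 + 1 * l4 + 2 * l5 + 1 * l6 + (3 / 2) * l7 + 1 * l8"
    by (simp add: lam_def w_def rho_def vec5_def lessThan_nat_numeral)
  have sw3: "(\<Sum>i<9. lam i * w i 3) = 2 * l0 + 2 * l1 + 1 * l2 + 1 * l3 + 2 * l4 + 2 * l5 + (3 / 2) * l6 + (3 / 2) * l7 + 1 * l8"
    by (simp add: lam_def w_def rho_def vec5_def lessThan_nat_numeral)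
  have sw4: "(\<Sum>i<9. lam i * w i 4) = 0 * l0 + 0 * l1 + 1 * l2 + 2 * l3 + 0 * l4 + 1 * l5 + 1 * l6 + (3 / 2) * l7 + 1 * l8"
    by (simp add: lam_def w_def rho_def vec5_def lessThan_nat_numeral)
  have sw5: "(\<Sum>i<9. lam i * w i 5) = 1 * l0 + 0 * l1 + 1 * l2 + 0 * l3 + 1 * l4 + 0 * l5 + (1 / 2) * l6 + 0 * l7 + 0 * l8"
    by (simp add: lam_def w_def rho_def vec5_def lessThan_nat_numeral)
  have Rw: "\<forall>j\<in>{1..5}. R j \<le> (\<Sum>i<9. lam i * w i j)"
  proof
    fix j :: nat assume "j \<in> {1..5}" hence "j = 1 \<or> j = 2 \<or> j = 3 \<or> j = 4 \<or> j = 5" by auto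
    thus "R j \<le> (\<Sum>i<9. lam i * w i j)"
      using L(11-15) sw1 sw2 sw3 sw4 sw5 by (elim disjE) simp_all
  qed
  obtain T :: nat and p :: "nat \<Rightarrow> nat" where T: "T > 0" and pT: "(\<Sum>i<9. p i) \<le> T"
    and pR: "\<forall>j\<in>{1..5}. R j = 0 \<or> (1 - d) * R j * T < (\<Sum>i<9. real (p i) * w i j)"
    by (rule approx[OF lam0 lam1 w0 w3 Rnn Rw d(1)])
  have code: "zcode S A (\<lambda>j. \<Sum>i<9. p i * rho i j) (\<lambda>k. \<Sum>i<9. p i * (\<lambda>i k. 2) i k)"
    by (rule zcode_sum_upto[OF SS AA rho_code[OF Sa Aa]])
  show ?thesis
  proof (rule achievable_from_code[OF SS AA Cn code, of "2 * T"])
    show "0 < 2 * T" using T by simp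
    show "\<forall>k\<in>{1..3}. (\<Sum>i<9. p i * (\<lambda>i k. 2) i k) \<le> 2 * T"
      using pT by (simp add: sum_distrib_right[symmetric])
    show "\<forall>j\<in>{1..5}. 0 \<le> (if j \<in> {1..5} then (1 - d) * R j else R j)"
      using Rnn d by auto
    show "\<forall>j\<in>{1..5}. (if j \<in> {1..5} then (1 - d) * R j else R j) = 0 \<or>
        (if j \<in> {1..5} then (1 - d) * R j else R j) * real (2 * T) < real (\<Sum>i<9. p i * rho i j)"
    proof
      fix j :: nat assume j: "j \<in> {1..5}"
      have e: "real (\<Sum>i<9. p i * rho i j) = 2 * (\<Sum>i<9. real (p i) * w i j)"
        unfolding w_def by (simp add: sum_distrib_left)
      from pR j show "(if j \<in> {1..5} then (1 - d) * R j else R j) = 0 \<or>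
        (if j \<in> {1..5} then (1 - d) * R j else R j) * real (2 * T) < real (\<Sum>i<9. p i * rho i j)"
        unfolding e using j by auto
    qed
  qed
qed


lemma in_closure:
  fixes R :: "nat \<Rightarrow> real"
  assumes Sa: "S 1 = {1,2,3}" "S 2 = {2,3,4}" "S 3 = {1,2,4,5}"
    and Aa: "A 1 = {4,5}" "A 2 = {1,3,5}" "A 3 = {1,2}" "A 4 = {2,3,5}" "A 5 = {3}"
    and Cn: "\<forall>k\<in>{1..3}. C k = 1"
    and Rnn: "\<forall>j\<in>{1..5}. R j \<ge> 0"
    and ineq: "R 3 \<le> 2" "R 5 \<le> 1" "R 1 + R 3 \<le> 3" "R 1 + R 5 \<le> 2" "R 4 + R 5 \<le> 2"
        "R 1 + R 2 + R 5 \<le> 3" "R 1 + R 4 + R 5 \<le> 3" "R 2 + R 4 + R 5 \<le> 3" "R 3 + R 4 + R 5 \<le> 3"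
  shows "R \<in> closure {R. achievable 5 3 S A C R}"
proof -
  define phi where "phi = (\<lambda>d::real. (\<lambda>j. if j \<in> {1..5} then (1 - d) * R j else R j))"
  define x where "x = (\<lambda>n. phi (inverse (real (Suc n))))"
  have xa: "\<forall>n. x n \<in> {R. achievable 5 3 S A C R}"
  proof
    fix n :: nat
    have "0 < inverse (real (Suc n))" by simp
    moreover have "inverse (real (Suc n)) \<le> 1" by (simp add: inverse_le_1_iff)
    ultimately show "x n \<in> {R. achievable 5 3 S A C R}"
      unfolding x_def phi_def using ach_delta[OF Sa Aa Cn Rnn ineq] by blast
  qed
  have cont: "continuous_on UNIV phi"
    unfolding phi_def
  proof (intro continuous_on_coordinatewise_then_product)
    fix i :: nat
    show "continuous_on UNIV (\<lambda>d::real. if i \<in> {1..5} then (1 - d) * R i else R i)"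
    proof (cases "i \<in> {1..5}")
      case True show ?thesis unfolding if_P[OF True] by (intro continuous_intros)
    next
      case False show ?thesis unfolding if_not_P[OF False] by (intro continuous_intros)
    qed
  qed
  have "(x \<longlongrightarrow> phi 0) sequentially"
    unfolding x_def by (rule continuous_on_tendsto_compose[OF cont LIMSEQ_inverse_real_of_nat]) auto
  moreover have "phi 0 = R" unfolding phi_def by auto
  ultimately show ?thesis unfolding closure_sequential using xa by blast
qed

lemma ach_in_P:
  fixes R :: "nat \<Rightarrow> real"
  assumes Sa: "S 1 = {1,2,3}" "S 2 = {2,3,4}" "S 3 = {1,2,4,5}"
    and Aa: "A 1 = {4,5}" "A 2 = {1,3,5}" "A 3 = {1,2}" "A 4 = {2,3,5}" "A 5 = {3}"
    and Cn: "\<forall>k\<in>{1..3}. C k = 1" and ach: "achievable 5 3 S A C R"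
  shows "(\<forall>j\<in>{1..5}. R j \<ge> 0) \<and>
        R 3 \<le> 2 \<and> R 5 \<le> 1 \<and> R 1 + R 3 \<le> 3 \<and> R 1 + R 5 \<le> 2 \<and> R 4 + R 5 \<le> 2 \<and>
        R 1 + R 2 + R 5 \<le> 3 \<and> R 1 + R 4 + R 5 \<le> 3 \<and> R 2 + R 4 + R 5 \<le> 3 \<and>
        R 3 + R 4 + R 5 \<le> 3"
  using ach[unfolded achievable_def] conv0[OF Sa Aa Cn ach] conv1[OF Sa Aa Cn ach] conv2[OF Sa Aa Cn ach]
    conv3[OF Sa Aa Cn ach] conv4[OF Sa Aa Cn ach] conv5[OF Sa Aa Cn ach] conv6[OF Sa Aa Cn ach]
    conv7[OF Sa Aa Cn ach] conv8[OF Sa Aa Cn ach]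
  by blast

lemma P_closed:
  "closed {R :: nat \<Rightarrow> real. (\<forall>j\<in>{1..5}. R j \<ge> 0) \<and>
        R 3 \<le> 2 \<and> R 5 \<le> 1 \<and> R 1 + R 3 \<le> 3 \<and> R 1 + R 5 \<le> 2 \<and> R 4 + R 5 \<le> 2 \<and>
        R 1 + R 2 + R 5 \<le> 3 \<and> R 1 + R 4 + R 5 \<le> 3 \<and> R 2 + R 4 + R 5 \<le> 3 \<and>
        R 3 + R 4 + R 5 \<le> 3}"
proof -
  have c: "continuous_on UNIV (\<lambda>R::nat \<Rightarrow> real. R i)" for i by simp
  have nn: "closed {R :: nat \<Rightarrow> real. \<forall>j\<in>{1..5}. R j \<ge> 0}"
  proof -
    have "{R :: nat \<Rightarrow> real. \<forall>j\<in>{1..5}. R j \<ge> 0} = (\<Inter>j\<in>{1..5}. {R. 0 \<le> R j})" by auto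
    moreover have "closed (\<Inter>j\<in>{1..5::nat}. {R :: nat \<Rightarrow> real. 0 \<le> R j})"
      by (intro closed_INT ballI closed_Collect_le continuous_on_const c)
    ultimately show ?thesis by simp
  qed
  show ?thesis
    by (intro closed_Collect_conj nn closed_Collect_le continuous_on_add continuous_on_const c)
qed

theorem mainTheorem7:
  fixes S A :: "nat \<Rightarrow> nat set" and C :: "nat \<Rightarrow> real"
  assumes "S 1 = {1,2,3}" "S 2 = {2,3,4}" "S 3 = {1,2,4,5}"
    and "C 1 = 1" "C 2 = 1" "C 3 = 1"
    and "A 1 = {4,5}" "A 2 = {1,3,5}" "A 3 = {1,2}" "A 4 = {2,3,5}" "A 5 = {3}"
  shows "capacity_region 5 3 S A C =
    {R. (\<forall>j\<in>{1..5}. R j \<ge> 0) \<and>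
        R 3 \<le> 2 \<and> R 5 \<le> 1 \<and> R 1 + R 3 \<le> 3 \<and> R 1 + R 5 \<le> 2 \<and> R 4 + R 5 \<le> 2 \<and>
        R 1 + R 2 + R 5 \<le> 3 \<and> R 1 + R 4 + R 5 \<le> 3 \<and> R 2 + R 4 + R 5 \<le> 3 \<and>
        R 3 + R 4 + R 5 \<le> 3}"
proof -
  note Sa = assms(1-3) and Aa = assms(7-11)
  have Cn: "\<forall>k\<in>{1..3}. C k = 1"
  proof
    fix k :: nat assume "k \<in> {1..3}" hence "k = 1 \<or> k = 2 \<or> k = 3" by auto
    thus "C k = 1" using assms(4-6) by auto
  qed
  show ?thesis unfolding capacity_region_def
  proof
    show "closure {R. achievable 5 3 S A C R} \<subseteq> {R. (\<forall>j\<in>{1..5}. R j \<ge> 0) \<and>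
        R 3 \<le> 2 \<and> R 5 \<le> 1 \<and> R 1 + R 3 \<le> 3 \<and> R 1 + R 5 \<le> 2 \<and> R 4 + R 5 \<le> 2 \<and>
        R 1 + R 2 + R 5 \<le> 3 \<and> R 1 + R 4 + R 5 \<le> 3 \<and> R 2 + R 4 + R 5 \<le> 3 \<and>
        R 3 + R 4 + R 5 \<le> 3}"
      by (rule closure_minimal[OF _ P_closed]) (use ach_in_P[OF Sa Aa Cn] in blast)
    show "{R. (\<forall>j\<in>{1..5}. R j \<ge> 0) \<and>
        R 3 \<le> 2 \<and> R 5 \<le> 1 \<and> R 1 + R 3 \<le> 3 \<and> R 1 + R 5 \<le> 2 \<and> R 4 + R 5 \<le> 2 \<and>
        R 1 + R 2 + R 5 \<le> 3 \<and> R 1 + R 4 + R 5 \<le> 3 \<and> R 2 + R 4 + R 5 \<le> 3 \<and>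
        R 3 + R 4 + R 5 \<le> 3} \<subseteq> closure {R. achievable 5 3 S A C R}"
    proof
      fix R :: "nat \<Rightarrow> real"
      assume "R \<in> {R. (\<forall>j\<in>{1..5}. R j \<ge> 0) \<and>
        R 3 \<le> 2 \<and> R 5 \<le> 1 \<and> R 1 + R 3 \<le> 3 \<and> R 1 + R 5 \<le> 2 \<and> R 4 + R 5 \<le> 2 \<and>
        R 1 + R 2 + R 5 \<le> 3 \<and> R 1 + R 4 + R 5 \<le> 3 \<and> R 2 + R 4 + R 5 \<le> 3 \<and>
        R 3 + R 4 + R 5 \<le> 3}"
      hence h: "(\<forall>j\<in>{1..5}. R j \<ge> 0)" "R 3 \<le> 2" "R 5 \<le> 1" "R 1 + R 3 \<le> 3" "R 1 + R 5 \<le> 2" "R 4 + R 5 \<le> 2"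
        "R 1 + R 2 + R 5 \<le> 3" "R 1 + R 4 + R 5 \<le> 3" "R 2 + R 4 + R 5 \<le> 3" "R 3 + R 4 + R 5 \<le> 3" by auto
      show "R \<in> closure {R. achievable 5 3 S A C R}" by (rule in_closure[OF Sa Aa Cn h])
    qed
  qed
qed

end
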